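(* For every nonzero $\omega$, the generating functions satisfy $\mathsf Q(t,\omega^2+\omega^{-2})=\mathsf C(t,\omega)$.
   Context: $\mathsf Q(t,\gamma)$ is the generating function of rooted planar maps with all vertices of degree 4 equipped with an Eulerian orientation (each vertex has two incoming and two outgoing edges), counted by vertices ($t$) with weight $\gamma$ per alternating vertex (a vertex whose two outgoing edges are opposite in the cyclic order around it). $\mathsf C(t,\omega)$ is the generating function of rooted planar maps with all vertices of degree 3 equipped with a partial orientation in which every vertex is incident to exactly one incoming edge, one outgoing edge and one undirected edge. Such vertices come in two types according to the cyclic order (clockwise versus counterclockwise) of (incoming, outgoing, undirected) around the vertex, called right-turn and left-turn vertices. Each right-turn vertex has weight $\omega^{-1}$, each left-turn vertex weight $\omega$, and each undirected edge weight $t$. The root is a directed root edge together with its incident root vertex, the root edge being oriented away from the root vertex. *)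

theory Defs
  imports "HOL-Combinatorics.Permutations" "HOL-Computational_Algebra.Formal_Power_Series"
begin

(* Combinatorial maps: darts {..<N}; sigma = rotation around vertices (counterclockwise),
   alpha = fixed-point-free involution pairing the two darts of each edge.
   Vertices = sigma-orbits, edges = alpha-orbits, faces = (sigma o alpha)-orbits.
   The root is the dart 0 (root vertex = its vertex, root edge = its edge). *)

definition orbit :: "(nat \<Rightarrow> nat) \<Rightarrow> nat \<Rightarrow> nat set" where
  "orbit f x = {(f ^^ k) x | k. True}"

definition orbits :: "(nat \<Rightarrow> nat) \<Rightarrow> nat \<Rightarrow> nat set set" where
  "orbits f N = {orbit f d | d. d < N}"

definition is_map :: "nat \<Rightarrow> (nat \<Rightarrow> nat) \<Rightarrow> (nat \<Rightarrow> nat) \<Rightarrow> bool" where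
  "is_map N \<sigma> \<alpha> \<longleftrightarrow>
     \<sigma> permutes {..<N} \<and> \<alpha> permutes {..<N} \<and>
     (\<forall>d<N. \<alpha> d \<noteq> d \<and> \<alpha> (\<alpha> d) = d) \<and>
     (\<forall>x<N. \<forall>y<N. (x, y) \<in> ({(a, \<sigma> a) | a. a < N} \<union> {(a, \<alpha> a) | a. a < N})\<^sup>*)"

(* planar = genus 0, via Euler's formula V - E + F = 2 *)
definition is_planar_map :: "nat \<Rightarrow> (nat \<Rightarrow> nat) \<Rightarrow> (nat \<Rightarrow> nat) \<Rightarrow> bool" where
  "is_planar_map N \<sigma> \<alpha> \<longleftrightarrow> is_map N \<sigma> \<alpha> \<and>
     card (orbits \<sigma> N) + card (orbits (\<sigma> \<circ> \<alpha>) N) = card (orbits \<alpha> N) + 2"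

(* Out = set of darts that are tails of their edge (outgoing at their vertex).
   The root edge is oriented away from the root vertex: 0 \<in> Out. *)
definition quartic_EO :: "nat \<Rightarrow> ((nat \<Rightarrow> nat) \<times> (nat \<Rightarrow> nat) \<times> nat set) set" where
  "quartic_EO n = {(\<sigma>, \<alpha>, Out). is_planar_map (4 * n) \<sigma> \<alpha> \<and>
      (\<forall>d < 4 * n. card (orbit \<sigma> d) = 4) \<and>
      Out \<subseteq> {..< 4 * n} \<and>
      (\<forall>d < 4 * n. d \<in> Out \<longleftrightarrow> \<alpha> d \<notin> Out) \<and>
      (\<forall>d < 4 * n. card (orbit \<sigma> d \<inter> Out) = 2) \<and>
      0 \<in> Out}"

definition iso_Q :: "nat \<Rightarrow> (((nat \<Rightarrow> nat) \<times> (nat \<Rightarrow> nat) \<times> nat set) \<times>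
                               ((nat \<Rightarrow> nat) \<times> (nat \<Rightarrow> nat) \<times> nat set)) set" where
  "iso_Q N = {((\<sigma>, \<alpha>, Out), (\<sigma>', \<alpha>', Out')). \<exists>\<pi>. \<pi> permutes {..<N} \<and> \<pi> 0 = 0 \<and>
      \<sigma>' = \<pi> \<circ> \<sigma> \<circ> inv \<pi> \<and> \<alpha>' = \<pi> \<circ> \<alpha> \<circ> inv \<pi> \<and> Out' = \<pi> ` Out}"

(* alternating vertex: the two outgoing darts are opposite in the cyclic order *)
definition num_alternating :: "nat \<Rightarrow> (nat \<Rightarrow> nat) \<Rightarrow> nat set \<Rightarrow> nat" where
  "num_alternating N \<sigma> Out = card {v \<in> orbits \<sigma> N. \<forall>d\<in>v. d \<in> Out \<longrightarrow> \<sigma> (\<sigma> d) \<in> Out}"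

definition Q_coeff :: "nat \<Rightarrow> complex \<Rightarrow> complex" where
  "Q_coeff n \<gamma> = (\<Sum>c \<in> quartic_EO n // iso_Q (4 * n).
      (case (SOME x. x \<in> c) of (\<sigma>, \<alpha>, Out) \<Rightarrow> \<gamma> ^ num_alternating (4 * n) \<sigma> Out))"

(* Q(t,gamma) as a formal power series in t (t counts vertices) *)
definition Q_gf :: "complex \<Rightarrow> complex fps" where
  "Q_gf \<gamma> = Abs_fps (\<lambda>n. Q_coeff n \<gamma>)"

(* U = darts of undirected edges; Out = darts that are tails of directed edges (outgoing);
   the remaining darts are heads (incoming). n = number of undirected edges
   (so 2n vertices, 3n edges, 6n darts). *)
definition cubic_PO :: "nat \<Rightarrow> ((nat \<Rightarrow> nat) \<times> (nat \<Rightarrow> nat) \<times> nat set \<times> nat set) set" where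
  "cubic_PO n = {(\<sigma>, \<alpha>, U, Out). is_planar_map (6 * n) \<sigma> \<alpha> \<and>
      (\<forall>d < 6 * n. card (orbit \<sigma> d) = 3) \<and>
      U \<subseteq> {..< 6 * n} \<and> Out \<subseteq> {..< 6 * n} \<and> U \<inter> Out = {} \<and>
      (\<forall>d < 6 * n. d \<in> U \<longleftrightarrow> \<alpha> d \<in> U) \<and>
      (\<forall>d < 6 * n. d \<notin> U \<longrightarrow> (d \<in> Out \<longleftrightarrow> \<alpha> d \<notin> Out)) \<and>
      (\<forall>d < 6 * n. card (orbit \<sigma> d \<inter> U) = 1 \<and> card (orbit \<sigma> d \<inter> Out) = 1) \<and>
      card U = 2 * n \<and>
      0 \<in> Out}"

definition iso_C :: "nat \<Rightarrow> (((nat \<Rightarrow> nat) \<times> (nat \<Rightarrow> nat) \<times> nat set \<times> nat set) \<times>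
                               ((nat \<Rightarrow> nat) \<times> (nat \<Rightarrow> nat) \<times> nat set \<times> nat set)) set" where
  "iso_C N = {((\<sigma>, \<alpha>, U, Out), (\<sigma>', \<alpha>', U', Out')). \<exists>\<pi>. \<pi> permutes {..<N} \<and> \<pi> 0 = 0 \<and>
      \<sigma>' = \<pi> \<circ> \<sigma> \<circ> inv \<pi> \<and> \<alpha>' = \<pi> \<circ> \<alpha> \<circ> inv \<pi> \<and> U' = \<pi> ` U \<and> Out' = \<pi> ` Out}"

(* sigma is the counterclockwise rotation. Right-turn: (incoming, outgoing, undirected)
   in clockwise order, i.e. sigma maps the outgoing dart to the incoming one.
   Left-turn: counterclockwise order, i.e. sigma maps the incoming dart to the outgoing one. *)
definition num_right_turn :: "nat \<Rightarrow> (nat \<Rightarrow> nat) \<Rightarrow> nat set \<Rightarrow> nat set \<Rightarrow> nat" where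
  "num_right_turn N \<sigma> U Out = card {v \<in> orbits \<sigma> N. \<exists>d\<in>v. d \<in> Out \<and> \<sigma> d \<notin> U \<and> \<sigma> d \<notin> Out}"

definition num_left_turn :: "nat \<Rightarrow> (nat \<Rightarrow> nat) \<Rightarrow> nat set \<Rightarrow> nat set \<Rightarrow> nat" where
  "num_left_turn N \<sigma> U Out = card {v \<in> orbits \<sigma> N. \<exists>d\<in>v. d \<notin> U \<and> d \<notin> Out \<and> \<sigma> d \<in> Out}"

definition C_coeff :: "nat \<Rightarrow> complex \<Rightarrow> complex" where
  "C_coeff n \<omega> = (\<Sum>c \<in> cubic_PO n // iso_C (6 * n).
      (case (SOME x. x \<in> c) of (\<sigma>, \<alpha>, U, Out) \<Rightarrow>
         \<omega> powi (int (num_left_turn (6 * n) \<sigma> U Out) - int (num_right_turn (6 * n) \<sigma> U Out))))"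

(* C(t,omega) as a formal power series in t (t counts undirected edges) *)
definition C_gf :: "complex \<Rightarrow> complex fps" where
  "C_gf \<omega> = Abs_fps (\<lambda>n. C_coeff n \<omega>)"

end

theory Submission
  imports Defs
begin


lemma funpow_add_apply: "(f ^^ a) ((f ^^ b) x) = (f ^^ (a + b)) x"
  by (simp add: funpow_add)

lemma funpow_in_perm: "f permutes S \<Longrightarrow> x \<in> S \<Longrightarrow> (f ^^ k) x \<in> S"
  by (induction k) (auto simp: permutes_in_image)

lemma funpow_notin_perm: "f permutes S \<Longrightarrow> x \<notin> S \<Longrightarrow> (f ^^ k) x = x"
  by (induction k) (auto simp: permutes_not_in)

lemma inj_funpow_perm: "f permutes S \<Longrightarrow> inj (f ^^ k)"
  using permutes_inj inj_fn by blast

lemma funpow_period_exists: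
  assumes "f permutes S" "finite S"
  shows "\<exists>m>0. (f ^^ m) x = x"
proof (cases "x \<in> S")
  case False then show ?thesis using funpow_notin_perm[OF assms(1) False, of 1] by auto
next
  case True
  have "\<not> inj (\<lambda>k::nat. (f ^^ k) x)"
  proof
    assume i: "inj (\<lambda>k::nat. (f ^^ k) x)"
    have "range (\<lambda>k::nat. (f ^^ k) x) \<subseteq> S" using funpow_in_perm[OF assms(1) True] by auto
    hence "finite (range (\<lambda>k::nat. (f ^^ k) x))" using assms(2) finite_subset by blast
    hence "finite (UNIV::nat set)" using finite_imageD[OF _ i] by blast
    thus False by simp
  qed
  then obtain i j where ij: "i \<noteq> j" "(f ^^ i) x = (f ^^ j) x" unfolding inj_def by blast
  { fix i j assume ij: "i < j" "(f ^^ i) x = (f ^^ j) x"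
    have "(f ^^ i) ((f ^^ (j - i)) x) = (f ^^ i) x"
      using ij by (simp add: funpow_add_apply)
    hence "(f ^^ (j - i)) x = x" using inj_funpow_perm[OF assms(1), of i] by (auto dest: injD)
    hence "\<exists>m>0. (f ^^ m) x = x" using ij by (intro exI[of _ "j - i"]) auto }
  with ij show ?thesis by (cases "i < j") (auto, metis linorder_neqE_nat)
qed

lemma funpow_period_mult: "(f ^^ m) x = x \<Longrightarrow> (f ^^ (m * q)) x = x"
proof (induction q)
  case 0 then show ?case by simp
next
  case (Suc q)
  have "(f ^^ (m * Suc q)) x = (f ^^ m) ((f ^^ (m * q)) x)"
    by (simp add: funpow_add_apply)
  then show ?case using Suc by simp
qed

lemma funpow_period_mod: "(f ^^ m) x = x \<Longrightarrow> (f ^^ k) x = (f ^^ (k mod m)) x"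
proof -
  assume a: "(f ^^ m) x = x"
  have k: "k = k mod m + m * (k div m)" by simp
  have "(f ^^ k) x = (f ^^ (k mod m + m * (k div m))) x" using k by metis
  also have "\<dots> = (f ^^ (k mod m)) ((f ^^ (m * (k div m))) x)"
    by (simp only: funpow_add_apply)
  finally show ?thesis using funpow_period_mult[OF a] by simp
qed

lemma orbit_period:
  assumes "(f ^^ m) x = x" "m > 0"
  shows "orbit f x = (\<lambda>i. (f ^^ i) x) ` {..<m}"
proof
  show "orbit f x \<subseteq> (\<lambda>i. (f ^^ i) x) ` {..<m}"
  proof
    fix y assume "y \<in> orbit f x"
    then obtain k where "y = (f ^^ k) x" unfolding orbit_def by auto
    then have "y = (f ^^ (k mod m)) x" using funpow_period_mod[OF assms(1)] by simp
    then show "y \<in> (\<lambda>i. (f ^^ i) x) ` {..<m}" using assms(2) by auto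
  qed
  show "(\<lambda>i. (f ^^ i) x) ` {..<m} \<subseteq> orbit f x" unfolding orbit_def by auto
qed

lemma self_in_orbit: "x \<in> orbit f x"
  unfolding orbit_def by (auto intro: exI[of _ 0])

lemma funpow_in_orbit: "(f ^^ k) x \<in> orbit f x"
  unfolding orbit_def by auto

lemma orbit_finite: "f permutes S \<Longrightarrow> finite S \<Longrightarrow> finite (orbit f x)"
proof -
  assume a: "f permutes S" "finite S"
  obtain m where "m > 0" "(f ^^ m) x = x" using funpow_period_exists[OF a] by blast
  then show ?thesis using orbit_period[where f=f and m=m and x=x] by simp
qed

lemma orbit_subset: "f permutes S \<Longrightarrow> x \<in> S \<Longrightarrow> orbit f x \<subseteq> S"
  unfolding orbit_def using funpow_in_perm[of f S x] by auto

lemma orbit_trans0: "y \<in> orbit f x \<Longrightarrow> z \<in> orbit f y \<Longrightarrow> z \<in> orbit f x"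
proof -
  assume "y \<in> orbit f x" "z \<in> orbit f y"
  then obtain a b where "y = (f ^^ a) x" "z = (f ^^ b) y" unfolding orbit_def by auto
  then have "z = (f ^^ (b + a)) x" by (simp add: funpow_add_apply)
  then show "z \<in> orbit f x" unfolding orbit_def by auto
qed

lemma orbit_trans: "y \<in> orbit f x \<Longrightarrow> orbit f y \<subseteq> orbit f x"
  using orbit_trans0 by blast

lemma orbit_sym:
  assumes "f permutes S" "finite S" "y \<in> orbit f x"
  shows "x \<in> orbit f y"
proof -
  obtain m where m: "m > 0" "(f ^^ m) x = x" using funpow_period_exists[OF assms(1,2)] by blast
  obtain j where j: "y = (f ^^ j) x" using assms(3) unfolding orbit_def by auto
  have "(f ^^ (m - j mod m)) y = (f ^^ (m - j mod m + j mod m)) x"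
    using j funpow_period_mod[OF m(2), of j] by (simp add: funpow_add)
  also have "\<dots> = x" using m by simp
  finally show ?thesis using funpow_in_orbit by metis
qed

lemma orbit_eq:
  assumes "f permutes S" "finite S" "y \<in> orbit f x"
  shows "orbit f y = orbit f x"
  using orbit_trans orbit_sym[OF assms] assms(3) by blast

lemma orbit_step: "f permutes S \<Longrightarrow> finite S \<Longrightarrow> orbit f (f x) = orbit f x"
  using orbit_eq funpow_in_orbit[where k=1 and f=f and x=x] by simp

lemma orbit_disj:
  assumes "f permutes S" "finite S" "orbit f x \<inter> orbit f y \<noteq> {}"
  shows "orbit f x = orbit f y"
  using assms orbit_eq by blast

lemma funpow_inj_least:
  assumes "f permutes S" "finite S"
  shows "(LEAST m. m > 0 \<and> (f ^^ m) x = x) > 0" "(f ^^ (LEAST m. m > 0 \<and> (f ^^ m) x = x)) x = x"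
     "inj_on (\<lambda>i. (f ^^ i) x) {..<(LEAST m. m > 0 \<and> (f ^^ m) x = x)}"
proof -
  define m where "m = (LEAST m. m > 0 \<and> (f ^^ m) x = x)"
  obtain k where k: "k > 0" "(f ^^ k) x = x" using funpow_period_exists[OF assms(1,2)] by blast
  show m: "(LEAST m. m > 0 \<and> (f ^^ m) x = x) > 0" "(f ^^ (LEAST m. m > 0 \<and> (f ^^ m) x = x)) x = x" using LeastI[of "\<lambda>m. m > 0 \<and> (f ^^ m) x = x", OF conjI[OF k]]
    unfolding m_def by auto
  show "inj_on (\<lambda>i. (f ^^ i) x) {..<(LEAST m. m > 0 \<and> (f ^^ m) x = x)}"
    unfolding m_def[symmetric]
  proof (rule inj_onI, rule ccontr)
    fix i j assume ij: "i \<in> {..<m}" "j \<in> {..<m}" "(f ^^ i) x = (f ^^ j) x" "i \<noteq> j"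
    { fix i j assume ij: "i < m" "j < m" "(f ^^ i) x = (f ^^ j) x" "i < j"
      have "(f ^^ i) ((f ^^ (j - i)) x) = (f ^^ i) x"
        using ij by (simp add: funpow_add_apply)
      hence "(f ^^ (j - i)) x = x" using inj_funpow_perm[OF assms(1), of i] by (auto dest: injD)
      hence "m \<le> j - i" unfolding m_def using ij by (intro Least_le) auto
      hence False using ij by auto }
    with ij show False by (metis lessThan_iff linorder_neqE_nat)
  qed
qed

lemma card_orbit_iff:
  assumes "f permutes S" "finite S" "k > 0"
  shows "card (orbit f x) = k \<longleftrightarrow> (f ^^ k) x = x \<and> inj_on (\<lambda>i. (f ^^ i) x) {..<k}"
proof
  define m where "m = (LEAST m. m > 0 \<and> (f ^^ m) x = x)"
  note L = funpow_inj_least[OF assms(1,2), of x, folded m_def]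
  have cm: "card (orbit f x) = m" using orbit_period[OF L(2,1)] card_image[OF L(3)] by simp
  assume "card (orbit f x) = k"
  then show "(f ^^ k) x = x \<and> inj_on (\<lambda>i. (f ^^ i) x) {..<k}" using cm L by simp
next
  assume "(f ^^ k) x = x \<and> inj_on (\<lambda>i. (f ^^ i) x) {..<k}"
  then have "orbit f x = (\<lambda>i. (f ^^ i) x) ` {..<k}" "inj_on (\<lambda>i. (f ^^ i) x) {..<k}"
    using orbit_period[where f=f and m=k and x=x] assms(3) by auto
  then show "card (orbit f x) = k" using card_image by fastforce
qed


lemma orbits_partition_card:
  assumes "f permutes {..<N}" "\<And>d. d < N \<Longrightarrow> card (orbit f d) = k"
  shows "k * card (orbits f N) = N"
proof -
  let ?C = "orbits f N"
  have C: "?C = (\<lambda>d. orbit f d) ` {..<N}" unfolding orbits_def by auto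
  have fin: "finite ?C" unfolding C by simp
  have U: "\<Union>?C = {..<N}"
  proof
    show "\<Union>?C \<subseteq> {..<N}" unfolding C using orbit_subset[OF assms(1)] by blast
    show "{..<N} \<subseteq> \<Union>?C" unfolding C using self_in_orbit by blast
  qed
  have "k * card ?C = card (\<Union>?C)"
  proof (rule card_partition)
    show "finite ?C" by fact
    show "finite (\<Union>?C)" unfolding U by simp
    show "\<And>c. c \<in> ?C \<Longrightarrow> card c = k" unfolding C using assms(2) by auto
    show "\<And>c1 c2. c1 \<in> ?C \<Longrightarrow> c2 \<in> ?C \<Longrightarrow> c1 \<noteq> c2 \<Longrightarrow> c1 \<inter> c2 = {}"
      unfolding C using orbit_disj[OF assms(1)] by auto
  qed
  then show ?thesis unfolding U by simp
qed

lemma first_return_orbit: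
  assumes f: "f permutes {..<M}" and NM: "N \<le> M"
    and out: "\<And>a. N \<le> a \<Longrightarrow> a < M \<Longrightarrow> f a < N"
    and g: "\<And>b. b < N \<Longrightarrow> g b = (if f b < N then f b else f (f b))"
    and b: "b < N"
  shows "orbit g b = orbit f b \<inter> {..<N}"
proof
  have fM: "\<And>a. a < M \<Longrightarrow> f a < M" using permutes_in_image[OF f] by auto
  have "\<And>k. (g ^^ k) b \<in> orbit f b \<inter> {..<N}"
  proof -
    fix k show "(g ^^ k) b \<in> orbit f b \<inter> {..<N}"
    proof (induction k)
      case 0 then show ?case using b self_in_orbit by auto
    next
      case (Suc k)
      let ?c = "(g ^^ k) b"
      have c: "?c \<in> orbit f b" "?c < N" using Suc by auto
      have "g ?c \<in> orbit f b \<and> g ?c < N"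
      proof (cases "f ?c < N")
        case True then show ?thesis using g[OF c(2)] orbit_trans0[OF c(1), of "f ?c"]
            funpow_in_orbit[where k=1 and f=f and x="?c"] by auto
      next
        case False
        have "f ?c < M" using fM c(2) NM by auto
        then have "f (f ?c) < N" using out False by auto
        moreover have "f (f ?c) \<in> orbit f b" using orbit_trans0[OF c(1), of "f (f ?c)"]
            funpow_in_orbit[where k=2 and f=f and x="?c"] by (auto simp: numeral_2_eq_2)
        ultimately show ?thesis using g[OF c(2)] False by auto
      qed
      then show ?case by simp
    qed
  qed
  then show "orbit g b \<subseteq> orbit f b \<inter> {..<N}" unfolding orbit_def by auto
  have key: "\<And>k. \<exists>j. (g ^^ j) b = (f ^^ k) b \<or>
      ((f ^^ k) b \<ge> N \<and> (g ^^ j) b < N \<and> f ((g ^^ j) b) = (f ^^ k) b)"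
  proof -
    fix k show "\<exists>j. (g ^^ j) b = (f ^^ k) b \<or>
      ((f ^^ k) b \<ge> N \<and> (g ^^ j) b < N \<and> f ((g ^^ j) b) = (f ^^ k) b)"
    proof (induction k)
      case 0 then show ?case by (intro exI[of _ 0]) auto
    next
      case (Suc k)
      then obtain j where j: "(g ^^ j) b = (f ^^ k) b \<or>
      ((f ^^ k) b \<ge> N \<and> (g ^^ j) b < N \<and> f ((g ^^ j) b) = (f ^^ k) b)" by blast
      have gN: "\<And>j. (g ^^ j) b < N" using \<open>orbit g b \<subseteq> orbit f b \<inter> {..<N}\<close>
          funpow_in_orbit[where f=g] by blast
      have fs: "(f ^^ Suc k) b = f ((f ^^ k) b)" by simp
      show ?case
      proof (cases "(g ^^ j) b = (f ^^ k) b")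
        case True
        show ?thesis
        proof (cases "f ((f ^^ k) b) < N")
          case True2: True
          then have "(g ^^ Suc j) b = (f ^^ Suc k) b" using True g[OF gN[of j]] by simp
          then show ?thesis by blast
        next
          case False
          then show ?thesis using True gN[of j] fs by (intro exI[of _ j]) auto
        qed
      next
        case False
        then have j2: "(f ^^ k) b \<ge> N" "(g ^^ j) b < N" "f ((g ^^ j) b) = (f ^^ k) b" using j by auto
        have "(g ^^ Suc j) b = f (f ((g ^^ j) b))" using g[OF j2(2)] j2 by simp
        then show ?thesis using j2 fs by (intro exI[of _ "Suc j"]) simp
      qed
    qed
  qed
  show "orbit f b \<inter> {..<N} \<subseteq> orbit g b"
  proof
    fix y assume y: "y \<in> orbit f b \<inter> {..<N}"
    then obtain k where k: "y = (f ^^ k) b" unfolding orbit_def by auto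
    obtain j where "(g ^^ j) b = (f ^^ k) b \<or>
      ((f ^^ k) b \<ge> N \<and> (g ^^ j) b < N \<and> f ((g ^^ j) b) = (f ^^ k) b)" using key by blast
    then have "(g ^^ j) b = y" using k y by auto
    then show "y \<in> orbit g b" using funpow_in_orbit by metis
  qed
qed

lemma first_return_card:
  assumes f: "f permutes {..<M}" and NM: "N \<le> M"
    and out: "\<And>a. N \<le> a \<Longrightarrow> a < M \<Longrightarrow> f a < N"
    and g: "\<And>b. b < N \<Longrightarrow> g b = (if f b < N then f b else f (f b))"
  shows "card (orbits f M) = card (orbits g N)"
proof -
  let ?\<Phi> = "\<lambda>Ob. Ob \<inter> {..<N}"
  have fM: "\<And>a. a < M \<Longrightarrow> f a < M" using permutes_in_image[OF f] by auto
  have FR: "\<And>b. b < N \<Longrightarrow> orbit g b = orbit f b \<inter> {..<N}"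
    using first_return_orbit[OF assms] by blast
  have rep: "\<exists>b<N. orbit f a = orbit f b" if "a < M" for a
  proof (cases "a < N")
    case True then show ?thesis by auto
  next
    case False
    then have "f a < N" using out that by auto
    then show ?thesis using orbit_step[OF f] by (intro exI[of _ "f a"]) auto
  qed
  have "bij_betw ?\<Phi> (orbits f M) (orbits g N)"
  proof (rule bij_betw_imageI)
    show "inj_on ?\<Phi> (orbits f M)"
    proof (rule inj_onI)
      fix Ob1 Ob2 assume O: "Ob1 \<in> orbits f M" "Ob2 \<in> orbits f M" "?\<Phi> Ob1 = ?\<Phi> Ob2"
      obtain a1 a2 where a: "a1 < M" "a2 < M" "Ob1 = orbit f a1" "Ob2 = orbit f a2"
        using O(1,2) unfolding orbits_def by auto
      obtain b1 where b1: "b1 < N" "Ob1 = orbit f b1" using rep[OF a(1)] a(3) by auto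
      have "b1 \<in> ?\<Phi> Ob2" using O(3) b1 self_in_orbit by blast
      then have "Ob1 \<inter> Ob2 \<noteq> {}" using b1 self_in_orbit by blast
      then show "Ob1 = Ob2" using orbit_disj[OF f] a by auto
    qed
    show "?\<Phi> ` orbits f M = orbits g N"
    proof
      show "?\<Phi> ` orbits f M \<subseteq> orbits g N"
      proof
        fix X assume "X \<in> ?\<Phi> ` orbits f M"
        then obtain a where a: "a < M" "X = ?\<Phi> (orbit f a)" unfolding orbits_def by auto
        obtain b where "b < N" "orbit f a = orbit f b" using rep[OF a(1)] by auto
        then show "X \<in> orbits g N" using a FR unfolding orbits_def by auto
      qed
      show "orbits g N \<subseteq> ?\<Phi> ` orbits f M"
      proof
        fix X assume "X \<in> orbits g N"
        then obtain b where b: "b < N" "X = orbit g b" unfolding orbits_def by auto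
        then have "X = ?\<Phi> (orbit f b)" using FR by auto
        moreover have "orbit f b \<in> orbits f M" using b NM unfolding orbits_def by auto
        ultimately show "X \<in> ?\<Phi> ` orbits f M" by blast
      qed
    qed
  qed
  then show ?thesis using bij_betw_same_card by blast
qed

lemma funpow_conj:
  assumes "bij \<pi>"
  shows "((\<pi> \<circ> f \<circ> inv \<pi>) ^^ k) (\<pi> x) = \<pi> ((f ^^ k) x)"
  by (induction k) (auto simp: bij_inv_eq_iff[OF assms] inv_f_f[OF bij_is_inj[OF assms]])

lemma orbit_conj:
  assumes "bij \<pi>"
  shows "orbit (\<pi> \<circ> f \<circ> inv \<pi>) (\<pi> x) = \<pi> ` orbit f x"
  unfolding orbit_def using funpow_conj[OF assms] by auto

lemma orbit_conj':
  assumes "bij \<pi>"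
  shows "orbit (\<pi> \<circ> f \<circ> inv \<pi>) y = \<pi> ` orbit f (inv \<pi> y)"
  using orbit_conj[OF assms, of f "inv \<pi> y"] by (simp add: surj_f_inv_f[OF bij_is_surj[OF assms]])

lemma card_orbit_conj:
  assumes "bij \<pi>"
  shows "card (orbit (\<pi> \<circ> f \<circ> inv \<pi>) (\<pi> x)) = card (orbit f x)"
  unfolding orbit_conj[OF assms] using card_image bij_is_inj[OF assms] inj_on_subset by blast

lemma orbits_conj:
  assumes "\<pi> permutes {..<N}"
  shows "orbits (\<pi> \<circ> f \<circ> inv \<pi>) N = (\<lambda>Ob. \<pi> ` Ob) ` orbits f N"
proof -
  have b: "bij \<pi>" using permutes_bij[OF assms] .
  have "orbits (\<pi> \<circ> f \<circ> inv \<pi>) N = (\<lambda>d. orbit (\<pi> \<circ> f \<circ> inv \<pi>) (\<pi> d)) ` {..<N}"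
  proof -
    have "{..<N} = \<pi> ` {..<N}" using permutes_image[OF assms] by simp
    have "orbits (\<pi> \<circ> f \<circ> inv \<pi>) N = (\<lambda>d. orbit (\<pi> \<circ> f \<circ> inv \<pi>) d) ` {..<N}"
      unfolding orbits_def by auto
    also have "\<dots> = (\<lambda>d. orbit (\<pi> \<circ> f \<circ> inv \<pi>) d) ` (\<pi> ` {..<N})"
      using \<open>{..<N} = \<pi> ` {..<N}\<close> by simp
    finally show ?thesis by (simp add: image_image)
  qed
  also have "\<dots> = (\<lambda>d. \<pi> ` orbit f d) ` {..<N}" using orbit_conj[OF b] by simp
  also have "\<dots> = (\<lambda>Ob. \<pi> ` Ob) ` orbits f N" unfolding orbits_def by auto
  finally show ?thesis .
qed

lemma card_orbits_conj:
  assumes "\<pi> permutes {..<N}"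
  shows "card (orbits (\<pi> \<circ> f \<circ> inv \<pi>) N) = card (orbits f N)"
proof -
  have "inj (\<lambda>Ob. \<pi> ` Ob)" using permutes_inj[OF assms] by (simp add: inj_image_eq_iff inj_on_def)
  then show ?thesis unfolding orbits_conj[OF assms] by (simp add: card_image inj_on_subset)
qed


lemma classes_sum:
  fixes act :: "(nat \<Rightarrow> nat) \<Rightarrow> 'x \<Rightarrow> 'x" and w :: "'x \<Rightarrow> complex"
  assumes idG: "id \<in> G"
    and compG: "\<And>\<pi> \<pi>'. \<pi> \<in> G \<Longrightarrow> \<pi>' \<in> G \<Longrightarrow> \<pi> \<circ> \<pi>' \<in> G"
    and invG: "\<And>\<pi>. \<pi> \<in> G \<Longrightarrow> inv \<pi> \<in> G \<and> inv \<pi> \<circ> \<pi> = id \<and> \<pi> \<circ> inv \<pi> = id"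
    and act_id: "\<And>x. x \<in> X \<Longrightarrow> act id x = x"
    and act_comp: "\<And>\<pi> \<pi>' x. \<pi> \<in> G \<Longrightarrow> \<pi>' \<in> G \<Longrightarrow> x \<in> X \<Longrightarrow> act (\<pi> \<circ> \<pi>') x = act \<pi> (act \<pi>' x)"
    and closed: "\<And>\<pi> x. \<pi> \<in> G \<Longrightarrow> x \<in> X \<Longrightarrow> act \<pi> x \<in> X"
    and free: "\<And>\<pi> x. \<pi> \<in> G \<Longrightarrow> x \<in> X \<Longrightarrow> act \<pi> x = x \<Longrightarrow> \<pi> = id"
    and R: "\<And>x x'. (x, x') \<in> R \<longleftrightarrow> (\<exists>\<pi>\<in>G. x' = act \<pi> x)"
    and finX: "finite X"
    and winv: "\<And>\<pi> x. \<pi> \<in> G \<Longrightarrow> x \<in> X \<Longrightarrow> w (act \<pi> x) = w x"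
    and Y: "Y \<subseteq> X"
    and K: "\<And>x. x \<in> X \<Longrightarrow> card {\<pi>\<in>G. act \<pi> x \<in> Y} = K"
  shows "of_nat K * (\<Sum>c\<in>X // R. w (SOME x. x \<in> c)) = (\<Sum>y\<in>Y. w y)"
proof -
  define cl where "cl x = (\<lambda>\<pi>. act \<pi> x) ` G" for x
  have Rimg: "R `` {x} = cl x" for x unfolding cl_def using R by auto
  have quot: "X // R = cl ` X" unfolding quotient_def Rimg by auto
  have clX: "cl x \<subseteq> X" if "x \<in> X" for x unfolding cl_def using closed that by auto
  have selfcl: "x \<in> cl x" if "x \<in> X" for x unfolding cl_def using idG act_id[OF that] by force
  have inv_act: "act (inv \<pi>) (act \<pi> x) = x" if "\<pi> \<in> G" "x \<in> X" for \<pi> x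
    using act_comp[of "inv \<pi>" \<pi> x] invG[OF that(1)] that act_id by auto
  have cl_sub: "cl y \<subseteq> cl x" if yx: "y \<in> cl x" and xX: "x \<in> X" for x y
  proof
    fix z assume "z \<in> cl y"
    then obtain \<pi> where \<pi>: "\<pi> \<in> G" "z = act \<pi> y" unfolding cl_def by auto
    obtain \<pi>' where \<pi>': "\<pi>' \<in> G" "y = act \<pi>' x" using yx unfolding cl_def by blast
    have "z = act (\<pi> \<circ> \<pi>') x" using act_comp[OF \<pi>(1) \<pi>'(1) xX] \<pi> \<pi>' by simp
    then show "z \<in> cl x" unfolding cl_def using compG[OF \<pi>(1) \<pi>'(1)] by auto
  qed
  have cl_eq: "cl y = cl x" if yx: "y \<in> cl x" and xX: "x \<in> X" for x y
  proof -
    obtain \<pi>' where \<pi>': "\<pi>' \<in> G" "y = act \<pi>' x" using yx unfolding cl_def by auto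
    have "x = act (inv \<pi>') y" using inv_act[OF \<pi>'(1) xX] \<pi>' by simp
    then have "x \<in> cl y" unfolding cl_def using invG[OF \<pi>'(1)] by auto
    moreover have "y \<in> X" using clX yx xX by auto
    ultimately show ?thesis using cl_sub yx xX by blast
  qed
  have disj: "cl x = cl y \<or> cl x \<inter> cl y = {}" if "x \<in> X" "y \<in> X" for x y
  proof (cases "cl x \<inter> cl y = {}")
    case False
    then obtain z where "z \<in> cl x" "z \<in> cl y" by auto
    then show ?thesis using cl_eq that by metis
  qed simp
  have finC: "finite (X // R)" unfolding quot using finX by simp
  have fincl: "finite c" if "c \<in> X // R" for c using that clX finX unfolding quot
    by (auto intro: finite_subset)
  have inj: "inj_on (\<lambda>\<pi>. act \<pi> x) G" if "x \<in> X" for x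
  proof (rule inj_onI)
    fix \<pi> \<pi>' assume a: "\<pi> \<in> G" "\<pi>' \<in> G" "act \<pi> x = act \<pi>' x"
    have "act (inv \<pi>' \<circ> \<pi>) x = x" using act_comp[of "inv \<pi>'" \<pi> x] invG[OF a(2)] a that
        inv_act[OF a(2) that] by auto
    then have "inv \<pi>' \<circ> \<pi> = id" using free[OF compG[OF _ a(1)] that] invG[OF a(2)] by blast
    then have "\<pi>' \<circ> (inv \<pi>' \<circ> \<pi>) = \<pi>'" by simp
    moreover have "\<pi>' \<circ> (inv \<pi>' \<circ> \<pi>) = \<pi>" using invG[OF a(2)]
      by (metis comp_assoc comp_id fun.map_id)
    ultimately show "\<pi> = \<pi>'" by simp
  qed
  have cardc: "card (cl x \<inter> Y) = K" if "x \<in> X" for x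
  proof -
    have "cl x \<inter> Y = (\<lambda>\<pi>. act \<pi> x) ` {\<pi>\<in>G. act \<pi> x \<in> Y}" unfolding cl_def by auto
    then show ?thesis using K[OF that] inj[OF that] card_image inj_on_subset[of _ G]
      by (metis (no_types, lifting) mem_Collect_eq subsetI)
  qed
  have wc: "w y = w x" if "y \<in> cl x" "x \<in> X" for x y
    using that winv unfolding cl_def by auto
  have YU: "Y = (\<Union>c\<in>X // R. c \<inter> Y)" using Y selfcl unfolding quot by auto
  have "(\<Sum>y\<in>Y. w y) = (\<Sum>c\<in>X // R. \<Sum>y\<in>c \<inter> Y. w y)"
    apply (subst YU)
    apply (rule sum.UNION_disjoint)
    using finC fincl apply auto[2]
    using disj unfolding quot by blast
  also have "\<dots> = (\<Sum>c\<in>X // R. of_nat K * w (SOME x. x \<in> c))"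
  proof (rule sum.cong[OF refl])
    fix c assume c: "c \<in> X // R"
    then obtain x where x: "x \<in> X" "c = cl x" unfolding quot by auto
    have some: "(SOME x. x \<in> c) \<in> c" using selfcl[OF x(1)] x(2) by (metis someI)
    have "(\<Sum>y\<in>c \<inter> Y. w y) = (\<Sum>y\<in>c \<inter> Y. w x)" using wc x by (intro sum.cong) auto
    also have "\<dots> = of_nat K * w x" using cardc[OF x(1)] x by simp
    also have "w x = w (SOME x. x \<in> c)" using wc[of "SOME x. x \<in> c" x] some x by auto
    finally show "(\<Sum>y\<in>c \<inter> Y. w y) = of_nat K * w (SOME x. x \<in> c)" .
  qed
  finally show ?thesis by (simp add: sum_distrib_left)
qed


lemma permutes_fix_remove:
  assumes "\<pi> permutes S" "\<pi> a = a"
  shows "\<pi> permutes (S - {a})"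
proof -
  have "\<forall>x. x \<notin> S - {a} \<longrightarrow> \<pi> x = x" using assms unfolding permutes_def by auto
  moreover have "\<forall>y. \<exists>!x. \<pi> x = y" using assms(1) unfolding permutes_def by blast
  ultimately show ?thesis unfolding permutes_def by blast
qed

lemma permutes_fix_iff:
  assumes "a \<in> S"
  shows "(\<pi> permutes S \<and> \<pi> a = a) \<longleftrightarrow> \<pi> permutes (S - {a})"
  using permutes_fix_remove permutes_subset[of \<pi> "S - {a}" S] permutes_not_in[of \<pi> "S - {a}" a]
  by auto

lemma card_G:
  assumes "0 < N"
  shows "card {\<pi>. \<pi> permutes {..<N} \<and> \<pi> 0 = 0} = fact (N - 1)"
proof -
  have "{\<pi>. \<pi> permutes {..<N} \<and> \<pi> 0 = 0} = {\<pi>. \<pi> permutes ({..<N} - {0})}"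
    using permutes_fix_iff[of 0 "{..<N}"] assms by auto
  moreover have "card ({..<N} - {0::nat}) = N - 1" using assms by simp
  ultimately show ?thesis using card_permutations[of "{..<N} - {0}" "N - 1"] by simp
qed

lemma split_perm_card:
  assumes fin: "finite S" and AS: "A \<subseteq> S"
  shows "card {\<tau>. \<tau> permutes S \<and> \<tau> ` A = A} = fact (card A) * fact (card S - card A)"
proof -
  let ?P = "{\<tau>. \<tau> permutes S \<and> \<tau> ` A = A}"
  let ?Q = "{\<tau>. \<tau> permutes A} \<times> {\<tau>. \<tau> permutes (S - A)}"
  let ?h = "\<lambda>(\<tau>1, \<tau>2). \<tau>1 \<circ> \<tau>2"
  have "bij_betw ?h ?Q ?P"
  proof (rule bij_betwI[where g = "\<lambda>\<tau>. (\<lambda>x. if x \<in> A then \<tau> x else x, \<lambda>x. if x \<in> S - A then \<tau> x else x)"])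
    show "?h \<in> ?Q \<rightarrow> ?P"
    proof
      fix p assume "p \<in> ?Q"
      then obtain \<tau>1 \<tau>2 where p: "p = (\<tau>1, \<tau>2)" "\<tau>1 permutes A" "\<tau>2 permutes (S - A)" by auto
      have "\<tau>1 \<circ> \<tau>2 permutes S"
        using permutes_compose[OF permutes_subset[OF p(3)] permutes_subset[OF p(2) AS]] by auto
      moreover have "(\<tau>1 \<circ> \<tau>2) ` A = A"
      proof -
        have "\<tau>2 ` A = A" using p(3) permutes_not_in[OF p(3)] by force
        moreover have "(\<tau>1 \<circ> \<tau>2) ` A = \<tau>1 ` (\<tau>2 ` A)" by (rule image_comp[symmetric])
        ultimately show ?thesis using permutes_image[OF p(2)] by simp
      qed
      ultimately show "?h p \<in> ?P" using p by simp
    qed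
    show "(\<lambda>\<tau>. (\<lambda>x. if x \<in> A then \<tau> x else x, \<lambda>x. if x \<in> S - A then \<tau> x else x)) \<in> ?P \<rightarrow> ?Q"
    proof
      fix \<tau> assume "\<tau> \<in> ?P"
      then have t: "\<tau> permutes S" "\<tau> ` A = A" by auto
      have inj: "inj \<tau>" using permutes_inj[OF t(1)] .
      have "bij_betw \<tau> A A" using t(2) inj by (simp add: bij_betw_def inj_on_subset[OF inj])
      then have 1: "(\<lambda>x. if x \<in> A then \<tau> x else x) permutes A"
        by (intro bij_imp_permutes) (auto simp: bij_betw_def inj_on_def image_def)
      have "\<tau> ` (S - A) = S - A" using t permutes_image[OF t(1)] inj by (simp add: image_set_diff)
      then have "bij_betw \<tau> (S - A) (S - A)" using inj by (simp add: bij_betw_def inj_on_subset[OF inj])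
      then have 2: "(\<lambda>x. if x \<in> S - A then \<tau> x else x) permutes (S - A)"
        by (intro bij_imp_permutes) (auto simp: bij_betw_def inj_on_def image_def)
      show "(\<lambda>x. if x \<in> A then \<tau> x else x, \<lambda>x. if x \<in> S - A then \<tau> x else x) \<in> ?Q"
        using 1 2 by simp
    qed
    show "(\<lambda>\<tau>. (\<lambda>x. if x \<in> A then \<tau> x else x, \<lambda>x. if x \<in> S - A then \<tau> x else x)) (?h p) = p"
      if pQ: "p \<in> ?Q" for p
    proof -
      obtain \<tau>1 \<tau>2 where p: "p = (\<tau>1, \<tau>2)" "\<tau>1 permutes A" "\<tau>2 permutes (S - A)" using pQ by auto
      have a: "\<tau>2 x = x" if "x \<in> A" for x using permutes_not_in[OF p(3)] that by auto
      have b: "\<tau>1 (\<tau>2 x) = \<tau>2 x" if "x \<in> S - A" for x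
        using permutes_not_in[OF p(2)] permutes_in_image[OF p(3)] that by auto
      have c: "\<tau>1 x = x" if "x \<notin> A" for x using permutes_not_in[OF p(2)] that by auto
      have d: "\<tau>2 x = x" if "x \<notin> S - A" for x using permutes_not_in[OF p(3)] that by auto
      show ?thesis using p a b c d by (auto simp: fun_eq_iff)
    qed
    show "?h ((\<lambda>\<tau>. (\<lambda>x. if x \<in> A then \<tau> x else x, \<lambda>x. if x \<in> S - A then \<tau> x else x)) \<tau>) = \<tau>"
      if "\<tau> \<in> ?P" for \<tau>
    proof -
      have t: "\<tau> permutes S" "\<tau> ` A = A" using that by auto
      have "\<tau> x \<notin> A" if "x \<in> S - A" for x
        using t permutes_inj[OF t(1)] that by (metis DiffD2 image_iff injD)
      moreover have "\<tau> x = x" if "x \<notin> S" for x using permutes_not_in[OF t(1) that] .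
      ultimately show ?thesis by (auto simp: fun_eq_iff)
    qed
  qed
  then have "card ?P = card ?Q" using bij_betw_same_card[of ?h ?Q ?P] by simp
  also have "\<dots> = card {\<tau>. \<tau> permutes A} * card {\<tau>. \<tau> permutes (S - A)}"
    by (rule card_cartesian_product)
  also have "\<dots> = fact (card A) * fact (card (S - A))"
    using card_permutations[of A "card A"] card_permutations[of "S - A" "card (S - A)"] fin AS
    by (simp add: finite_subset)
  finally show ?thesis using card_Diff_subset[OF finite_subset[OF AS fin] AS] by simp
qed

lemma perm_map_card:
  assumes fin: "finite S" and AS: "A \<subseteq> S" and BS: "B \<subseteq> S" and c: "card A = card B"
  shows "card {\<pi>. \<pi> permutes S \<and> \<pi> ` A = B} = fact (card A) * fact (card S - card A)"
proof -
  have fA: "finite A" "finite B" "finite (S - A)" "finite (S - B)"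
    using fin AS BS finite_subset by auto
  obtain h1 where h1: "bij_betw h1 A B" using bij_betw_iff_card fA c by blast
  have "card (S - A) = card (S - B)" using c AS BS fin by (simp add: card_Diff_subset finite_subset)
  then obtain h2 where h2: "bij_betw h2 (S - A) (S - B)" using bij_betw_iff_card fA by blast
  define \<phi> where "\<phi> x = (if x \<in> A then h1 x else if x \<in> S - A then h2 x else x)" for x
  have "bij_betw \<phi> A B" using h1 by (rule bij_betw_cong[THEN iffD1, rotated]) (auto simp: \<phi>_def)
  moreover have "bij_betw \<phi> (S - A) (S - B)" using h2
    by (rule bij_betw_cong[THEN iffD1, rotated]) (auto simp: \<phi>_def)
  ultimately have "bij_betw \<phi> (A \<union> (S - A)) (B \<union> (S - B))" by (rule bij_betw_combine) auto
  then have "bij_betw \<phi> S S" using AS BS by (simp add: Un_Diff_cancel Un_absorb1)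
  then have phi: "\<phi> permutes S" by (rule bij_imp_permutes) (use AS in \<open>auto simp: \<phi>_def\<close>)
  have phiA: "\<phi> ` A = B" using \<open>bij_betw \<phi> A B\<close> by (simp add: bij_betw_def)
  let ?P = "{\<pi>. \<pi> permutes S \<and> \<pi> ` A = B}"
  let ?T = "{\<tau>. \<tau> permutes S \<and> \<tau> ` A = A}"
  have "bij_betw (\<lambda>\<pi>. inv \<phi> \<circ> \<pi>) ?P ?T"
  proof (rule bij_betwI[where g = "\<lambda>\<tau>. \<phi> \<circ> \<tau>"])
    have invphi: "inv \<phi> permutes S" using permutes_inv[OF phi] .
    have invB: "inv \<phi> ` B = A" using phiA permutes_inj[OF phi] by (metis image_inv_f_f)
    show "(\<lambda>\<pi>. inv \<phi> \<circ> \<pi>) \<in> ?P \<rightarrow> ?T"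
    proof
      fix \<pi> assume "\<pi> \<in> ?P"
      then have p: "\<pi> permutes S" "\<pi> ` A = B" by auto
      have "(inv \<phi> \<circ> \<pi>) ` A = inv \<phi> ` (\<pi> ` A)" by (rule image_comp[symmetric])
      then show "inv \<phi> \<circ> \<pi> \<in> ?T" using permutes_compose[OF p(1) invphi] invB p(2) by simp
    qed
    show "(\<lambda>\<tau>. \<phi> \<circ> \<tau>) \<in> ?T \<rightarrow> ?P"
    proof
      fix \<pi> assume "\<pi> \<in> ?T"
      then have p: "\<pi> permutes S" "\<pi> ` A = A" by auto
      have "(\<phi> \<circ> \<pi>) ` A = \<phi> ` (\<pi> ` A)" by (rule image_comp[symmetric])
      then show "\<phi> \<circ> \<pi> \<in> ?P" using permutes_compose[OF p(1) phi] phiA p(2) by simp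
    qed
    show "\<phi> \<circ> (inv \<phi> \<circ> \<pi>) = \<pi>" for \<pi>
      using permutes_inverses[OF phi] by (auto simp: fun_eq_iff)
    show "inv \<phi> \<circ> (\<phi> \<circ> \<tau>) = \<tau>" for \<tau>
      using permutes_inverses[OF phi] by (auto simp: fun_eq_iff)
  qed
  then have "card ?P = card ?T" using bij_betw_same_card[of "\<lambda>\<pi>. inv \<phi> \<circ> \<pi>" ?P ?T] by simp
  then show ?thesis using split_perm_card[OF fin AS] by simp
qed


definition conj :: "(nat \<Rightarrow> nat) \<Rightarrow> (nat \<Rightarrow> nat) \<Rightarrow> nat \<Rightarrow> nat" where
  "conj \<pi> f = \<pi> \<circ> f \<circ> inv \<pi>"

definition mrel :: "nat \<Rightarrow> (nat \<Rightarrow> nat) \<Rightarrow> (nat \<Rightarrow> nat) \<Rightarrow> (nat \<times> nat) set" where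
  "mrel N \<sigma> \<alpha> = {(a, \<sigma> a) | a. a < N} \<union> {(a, \<alpha> a) | a. a < N}"

lemma is_map_alt: "is_map N \<sigma> \<alpha> \<longleftrightarrow>
     \<sigma> permutes {..<N} \<and> \<alpha> permutes {..<N} \<and>
     (\<forall>d<N. \<alpha> d \<noteq> d \<and> \<alpha> (\<alpha> d) = d) \<and>
     (\<forall>x<N. \<forall>y<N. (x, y) \<in> (mrel N \<sigma> \<alpha>)\<^sup>*)"
  unfolding is_map_def mrel_def by simp

context
  fixes \<pi> :: "nat \<Rightarrow> nat" and N :: nat assumes \<pi>: "\<pi> permutes {..<N}"
begin

lemma pi_bij: "bij \<pi>" using permutes_bij[OF \<pi>] .
lemma pi_inv_pi[simp]: "inv \<pi> (\<pi> x) = x" using permutes_inverses(2)[OF \<pi>] .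
lemma pi_pi_inv[simp]: "\<pi> (inv \<pi> x) = x" using permutes_inverses(1)[OF \<pi>] .
lemma pi_lt[simp]: "\<pi> x < N \<longleftrightarrow> x < N" using permutes_in_image[OF \<pi>] by simp
lemma pi_inv_lt[simp]: "inv \<pi> x < N \<longleftrightarrow> x < N" using permutes_in_image[OF permutes_inv[OF \<pi>]] by simp
lemma pi_eq_iff[simp]: "\<pi> x = \<pi> y \<longleftrightarrow> x = y" using permutes_inj[OF \<pi>] by (auto dest: injD)
lemma mem_img: "x \<in> \<pi> ` S \<longleftrightarrow> inv \<pi> x \<in> S"
  by (metis image_iff pi_inv_pi pi_pi_inv)
lemma mem_img_pi[simp]: "\<pi> x \<in> \<pi> ` S \<longleftrightarrow> x \<in> S" by (simp add: mem_img)
lemma conj_apply[simp]: "conj \<pi> f (\<pi> x) = \<pi> (f x)" unfolding conj_def by simp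
lemma conj_apply': "conj \<pi> f y = \<pi> (f (inv \<pi> y))" unfolding conj_def by simp
lemma conj_comp: "conj \<pi> f \<circ> conj \<pi> g = conj \<pi> (f \<circ> g)"
  unfolding conj_def by (auto simp: fun_eq_iff)
lemma conj_permutes: "f permutes {..<N} \<Longrightarrow> conj \<pi> f permutes {..<N}"
  unfolding conj_def by (intro permutes_compose permutes_inv \<pi>) auto

lemma orbit_conj_pi: "orbit (conj \<pi> f) y = \<pi> ` orbit f (inv \<pi> y)"
  unfolding conj_def using orbit_conj'[OF pi_bij] by simp

lemma card_img: "card (\<pi> ` S) = card S"
  using card_image permutes_inj[OF \<pi>] inj_on_subset by blast

lemma img_Int: "\<pi> ` A \<inter> \<pi> ` B = \<pi> ` (A \<inter> B)"
  using permutes_inj[OF \<pi>] by (simp add: image_Int)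

lemma card_orbit_conj_pi: "card (orbit (conj \<pi> f) y) = card (orbit f (inv \<pi> y))"
  unfolding orbit_conj_pi card_img ..

lemma card_orbit_conj_Int: "card (orbit (conj \<pi> f) y \<inter> \<pi> ` S) = card (orbit f (inv \<pi> y) \<inter> S)"
  unfolding orbit_conj_pi img_Int card_img ..

lemma card_orbits_conj_pi: "card (orbits (conj \<pi> f) N) = card (orbits f N)"
  unfolding conj_def using card_orbits_conj[OF \<pi>] .

lemma mrel_conj: "(x, y) \<in> (mrel N \<sigma> \<alpha>)\<^sup>* \<Longrightarrow> (\<pi> x, \<pi> y) \<in> (mrel N (conj \<pi> \<sigma>) (conj \<pi> \<alpha>))\<^sup>*"
proof (induction rule: rtrancl_induct)
  case base then show ?case by simp
next
  case (step y z)
  have "(\<pi> y, \<pi> z) \<in> mrel N (conj \<pi> \<sigma>) (conj \<pi> \<alpha>)"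
    using step(2) unfolding mrel_def by auto
  then show ?case using step(3) by simp
qed

lemma is_map_conj: "is_map N \<sigma> \<alpha> \<Longrightarrow> is_map N (conj \<pi> \<sigma>) (conj \<pi> \<alpha>)"
  unfolding is_map_alt
proof (intro conjI allI impI)
  assume m: "\<sigma> permutes {..<N} \<and> \<alpha> permutes {..<N} \<and> (\<forall>d<N. \<alpha> d \<noteq> d \<and> \<alpha> (\<alpha> d) = d) \<and>
    (\<forall>x<N. \<forall>y<N. (x, y) \<in> (mrel N \<sigma> \<alpha>)\<^sup>*)"
  show "conj \<pi> \<sigma> permutes {..<N}" "conj \<pi> \<alpha> permutes {..<N}" using m conj_permutes by auto
  fix d assume d: "d < N"
  have h: "\<alpha> (inv \<pi> d) \<noteq> inv \<pi> d" using m d by simp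
  show "conj \<pi> \<alpha> d \<noteq> d" unfolding conj_apply'
  proof
    assume "\<pi> (\<alpha> (inv \<pi> d)) = d"
    then have "inv \<pi> (\<pi> (\<alpha> (inv \<pi> d))) = inv \<pi> d" by simp
    with h show False by simp
  qed
  show "conj \<pi> \<alpha> (conj \<pi> \<alpha> d) = d" using m d by (simp add: conj_apply')
next
  fix x y assume m: "\<sigma> permutes {..<N} \<and> \<alpha> permutes {..<N} \<and> (\<forall>d<N. \<alpha> d \<noteq> d \<and> \<alpha> (\<alpha> d) = d) \<and>
    (\<forall>x<N. \<forall>y<N. (x, y) \<in> (mrel N \<sigma> \<alpha>)\<^sup>*)" and xy: "x < N" "y < N"
  then have "(inv \<pi> x, inv \<pi> y) \<in> (mrel N \<sigma> \<alpha>)\<^sup>*" by simp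
  from mrel_conj[OF this] show "(x, y) \<in> (mrel N (conj \<pi> \<sigma>) (conj \<pi> \<alpha>))\<^sup>*" by simp
qed

lemma is_planar_map_conj: "is_planar_map N \<sigma> \<alpha> \<Longrightarrow> is_planar_map N (conj \<pi> \<sigma>) (conj \<pi> \<alpha>)"
  unfolding is_planar_map_def using is_map_conj
  by (simp add: conj_comp card_orbits_conj_pi)

lemma conj_free:
  assumes m: "is_map N \<sigma> \<alpha>" and N: "0 < N" and p0: "\<pi> 0 = 0"
    and s: "conj \<pi> \<sigma> = \<sigma>" and a: "conj \<pi> \<alpha> = \<alpha>"
  shows "\<pi> = id"
proof -
  have cs: "\<pi> (\<sigma> x) = \<sigma> (\<pi> x)" for x using conj_apply[of \<sigma> x] s by simp
  have ca: "\<pi> (\<alpha> x) = \<alpha> (\<pi> x)" for x using conj_apply[of \<alpha> x] a by simp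
  have "(0, y) \<in> (mrel N \<sigma> \<alpha>)\<^sup>* \<Longrightarrow> \<pi> y = y" for y
  proof (induction rule: rtrancl_induct)
    case base then show ?case using p0 .
  next
    case (step y z) then show ?case unfolding mrel_def using cs ca by auto
  qed
  moreover have "\<pi> y = y" if "\<not> y < N" for y using permutes_not_in[OF \<pi>] that by auto
  moreover have "(0, y) \<in> (mrel N \<sigma> \<alpha>)\<^sup>*" if "y < N" for y using m N that unfolding is_map_alt by blast
  ultimately show ?thesis by (metis eq_id_iff)
qed

end


definition Gr :: "nat \<Rightarrow> (nat \<Rightarrow> nat) set" where
  "Gr N = {\<pi>. \<pi> permutes {..<N} \<and> \<pi> 0 = 0}"

lemma Gr_id: "id \<in> Gr N" unfolding Gr_def by simp
lemma Gr_comp: "\<pi> \<in> Gr N \<Longrightarrow> \<pi>' \<in> Gr N \<Longrightarrow> \<pi> \<circ> \<pi>' \<in> Gr N"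
  unfolding Gr_def using permutes_compose by auto
lemma Gr_inv: "\<pi> \<in> Gr N \<Longrightarrow> inv \<pi> \<in> Gr N \<and> inv \<pi> \<circ> \<pi> = id \<and> \<pi> \<circ> inv \<pi> = id"
  unfolding Gr_def using permutes_inv permutes_inv_eq permutes_inv_o by fastforce
lemma conj_id: "conj id f = f" unfolding conj_def by simp
lemma conj_compose: "\<pi> \<in> Gr N \<Longrightarrow> \<pi>' \<in> Gr N \<Longrightarrow> conj (\<pi> \<circ> \<pi>') f = conj \<pi> (conj \<pi>' f)"
proof -
  assume a: "\<pi> \<in> Gr N" "\<pi>' \<in> Gr N"
  have "inv (\<pi> \<circ> \<pi>') = inv \<pi>' \<circ> inv \<pi>"
    using a unfolding Gr_def by (intro o_inv_distrib permutes_bij) auto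
  then show ?thesis unfolding conj_def by (simp add: comp_assoc)
qed

lemma card_Gr: "0 < N \<Longrightarrow> card (Gr N) = fact (N - 1)"
  unfolding Gr_def using card_G by simp

definition actQ :: "(nat \<Rightarrow> nat) \<Rightarrow> ((nat \<Rightarrow> nat) \<times> (nat \<Rightarrow> nat) \<times> nat set) \<Rightarrow> ((nat \<Rightarrow> nat) \<times> (nat \<Rightarrow> nat) \<times> nat set)" where
  "actQ \<pi> x = (case x of (\<sigma>, \<alpha>, Out) \<Rightarrow> (conj \<pi> \<sigma>, conj \<pi> \<alpha>, \<pi> ` Out))"

definition wQ :: "complex \<Rightarrow> nat \<Rightarrow> ((nat \<Rightarrow> nat) \<times> (nat \<Rightarrow> nat) \<times> nat set) \<Rightarrow> complex" where
  "wQ \<gamma> N x = (case x of (\<sigma>, \<alpha>, Out) \<Rightarrow> \<gamma> ^ num_alternating N \<sigma> Out)"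

lemma iso_Q_iff: "(x, x') \<in> iso_Q N \<longleftrightarrow> (\<exists>\<pi>\<in>Gr N. x' = actQ \<pi> x)"
  by (cases x; cases x') (auto simp: iso_Q_def actQ_def Gr_def conj_def)

lemma quartic_closed:
  assumes x: "x \<in> quartic_EO n" and p: "\<pi> \<in> Gr (4 * n)"
  shows "actQ \<pi> x \<in> quartic_EO n"
proof -
  obtain \<sigma> \<alpha> Out where xe: "x = (\<sigma>, \<alpha>, Out)" by (cases x)
  have \<pi>: "\<pi> permutes {..<4 * n}" "\<pi> 0 = 0" using p unfolding Gr_def by auto
  note x' = x[unfolded xe quartic_EO_def, simplified]
  have "is_planar_map (4 * n) (conj \<pi> \<sigma>) (conj \<pi> \<alpha>)" using is_planar_map_conj[OF \<pi>(1)] x' by auto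
  moreover have "\<forall>d<4 * n. card (orbit (conj \<pi> \<sigma>) d) = 4"
    using x' card_orbit_conj_pi[OF \<pi>(1)] pi_inv_lt[OF \<pi>(1)] by auto
  moreover have "\<pi> ` Out \<subseteq> {..<4 * n}" using x' pi_lt[OF \<pi>(1)] by auto
  moreover have "\<forall>d<4 * n. d \<in> \<pi> ` Out \<longleftrightarrow> conj \<pi> \<alpha> d \<notin> \<pi> ` Out"
    using x' mem_img[OF \<pi>(1)] conj_apply'[OF \<pi>(1)] pi_inv_lt[OF \<pi>(1)] pi_inv_pi[OF \<pi>(1)] by auto
  moreover have "\<forall>d<4 * n. card (orbit (conj \<pi> \<sigma>) d \<inter> \<pi> ` Out) = 2"
    using x' card_orbit_conj_Int[OF \<pi>(1)] pi_inv_lt[OF \<pi>(1)] by auto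
  moreover have "0 \<in> \<pi> ` Out" using x' \<pi>(2) by (metis image_eqI)
  ultimately show ?thesis unfolding xe actQ_def quartic_EO_def by simp
qed

lemma card_filter_img:
  assumes "inj_on f A"
  shows "card {v \<in> f ` A. P v} = card {w \<in> A. P (f w)}"
proof -
  have "{v \<in> f ` A. P v} = f ` {w \<in> A. P (f w)}" by auto
  then show ?thesis using card_image inj_on_subset[OF assms] by (metis (no_types, lifting) mem_Collect_eq subsetI)
qed

lemma inj_img_pi: "\<pi> permutes S \<Longrightarrow> inj (\<lambda>Ob. \<pi> ` Ob)"
  using permutes_inj inj_image_eq_iff by (metis injI)

lemma num_alternating_conj:
  assumes \<pi>: "\<pi> permutes {..<N}"
  shows "num_alternating N (conj \<pi> \<sigma>) (\<pi> ` Out) = num_alternating N \<sigma> Out"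
proof -
  have o: "orbits (conj \<pi> \<sigma>) N = (\<lambda>Ob. \<pi> ` Ob) ` orbits \<sigma> N"
    unfolding conj_def using orbits_conj[OF \<pi>] .
  have "(\<forall>d\<in>\<pi> ` w. d \<in> \<pi> ` Out \<longrightarrow> conj \<pi> \<sigma> (conj \<pi> \<sigma> d) \<in> \<pi> ` Out) \<longleftrightarrow>
        (\<forall>e\<in>w. e \<in> Out \<longrightarrow> \<sigma> (\<sigma> e) \<in> Out)" for w
    using conj_apply[OF \<pi>] mem_img_pi[OF \<pi>] by auto
  then show ?thesis unfolding num_alternating_def o
    using card_filter_img[OF inj_on_subset[OF inj_img_pi[OF \<pi>] subset_UNIV]] by simp
qed

lemma finite_quartic: "finite (quartic_EO n)"
proof -
  have "quartic_EO n \<subseteq> {\<sigma>. \<sigma> permutes {..<4*n}} \<times> {\<alpha>. \<alpha> permutes {..<4*n}} \<times> Pow {..<4*n}"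
    unfolding quartic_EO_def is_planar_map_def is_map_def by auto
  moreover have "finite ({\<sigma>. \<sigma> permutes {..<4*n}} \<times> {\<alpha>. \<alpha> permutes {..<4*n}} \<times> Pow {..<4*n})"
    using finite_permutations[of "{..<4*n}"] by simp
  ultimately show ?thesis using finite_subset by blast
qed

lemma Q_coeff_sum:
  assumes n: "0 < n"
  shows "of_nat (fact (4 * n - 1)) * Q_coeff n \<gamma> = (\<Sum>x\<in>quartic_EO n. wQ \<gamma> (4 * n) x)"
proof -
  let ?N = "4 * n"
  have N: "0 < ?N" using n by simp
  have Qc: "Q_coeff n \<gamma> = (\<Sum>c\<in>quartic_EO n // iso_Q ?N. wQ \<gamma> ?N (SOME x. x \<in> c))"
    unfolding Q_coeff_def wQ_def ..
  have "of_nat (fact (?N - 1)) * (\<Sum>c\<in>quartic_EO n // iso_Q ?N. wQ \<gamma> ?N (SOME x. x \<in> c))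
        = (\<Sum>y\<in>quartic_EO n. wQ \<gamma> ?N y)"
  proof (rule classes_sum[where G = "Gr ?N" and act = actQ])
    show "id \<in> Gr ?N" by (rule Gr_id)
    show "\<And>\<pi> \<pi>'. \<pi> \<in> Gr ?N \<Longrightarrow> \<pi>' \<in> Gr ?N \<Longrightarrow> \<pi> \<circ> \<pi>' \<in> Gr ?N" by (rule Gr_comp)
    show "\<And>\<pi>. \<pi> \<in> Gr ?N \<Longrightarrow> inv \<pi> \<in> Gr ?N \<and> inv \<pi> \<circ> \<pi> = id \<and> \<pi> \<circ> inv \<pi> = id" by (rule Gr_inv)
    show "\<And>x. actQ id x = x" by (auto simp: actQ_def conj_id split: prod.splits)
    show "\<And>\<pi> \<pi>' x. \<pi> \<in> Gr ?N \<Longrightarrow> \<pi>' \<in> Gr ?N \<Longrightarrow> actQ (\<pi> \<circ> \<pi>') x = actQ \<pi> (actQ \<pi>' x)"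
      by (auto simp: actQ_def conj_compose image_comp split: prod.splits)
    show "\<And>\<pi> x. \<pi> \<in> Gr ?N \<Longrightarrow> x \<in> quartic_EO n \<Longrightarrow> actQ \<pi> x \<in> quartic_EO n"
      by (rule quartic_closed)
    show "\<pi> = id" if "\<pi> \<in> Gr ?N" "x \<in> quartic_EO n" "actQ \<pi> x = x" for \<pi> x
    proof -
      obtain \<sigma> \<alpha> Out where xe: "x = (\<sigma>, \<alpha>, Out)" by (cases x)
      have "is_map ?N \<sigma> \<alpha>" using that(2) unfolding xe quartic_EO_def is_planar_map_def by auto
      moreover have "conj \<pi> \<sigma> = \<sigma>" "conj \<pi> \<alpha> = \<alpha>" using that(3) unfolding xe actQ_def by auto
      ultimately show ?thesis using conj_free[of \<pi> ?N \<sigma> \<alpha>] that(1) N unfolding Gr_def by auto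
    qed
    show "\<And>x x'. (x, x') \<in> iso_Q ?N \<longleftrightarrow> (\<exists>\<pi>\<in>Gr ?N. x' = actQ \<pi> x)" by (rule iso_Q_iff)
    show "finite (quartic_EO n)" by (rule finite_quartic)
    show "\<And>\<pi> x. \<pi> \<in> Gr ?N \<Longrightarrow> x \<in> quartic_EO n \<Longrightarrow> wQ \<gamma> ?N (actQ \<pi> x) = wQ \<gamma> ?N x"
      by (auto simp: wQ_def actQ_def Gr_def num_alternating_conj split: prod.splits)
    show "quartic_EO n \<subseteq> quartic_EO n" by simp
    show "\<And>x. x \<in> quartic_EO n \<Longrightarrow> card {\<pi> \<in> Gr ?N. actQ \<pi> x \<in> quartic_EO n} = fact (?N - 1)"
      using quartic_closed card_Gr[OF N] by (metis (no_types, lifting) Collect_cong Collect_mem_eq)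
  qed
  then show ?thesis using Qc by simp
qed


definition actC :: "(nat \<Rightarrow> nat) \<Rightarrow> ((nat \<Rightarrow> nat) \<times> (nat \<Rightarrow> nat) \<times> nat set \<times> nat set) \<Rightarrow> ((nat \<Rightarrow> nat) \<times> (nat \<Rightarrow> nat) \<times> nat set \<times> nat set)" where
  "actC \<pi> x = (case x of (\<sigma>, \<alpha>, U, Out) \<Rightarrow> (conj \<pi> \<sigma>, conj \<pi> \<alpha>, \<pi> ` U, \<pi> ` Out))"

definition wC :: "complex \<Rightarrow> nat \<Rightarrow> ((nat \<Rightarrow> nat) \<times> (nat \<Rightarrow> nat) \<times> nat set \<times> nat set) \<Rightarrow> complex" where
  "wC \<omega> N x = (case x of (\<sigma>, \<alpha>, U, Out) \<Rightarrow>
     \<omega> powi (int (num_left_turn N \<sigma> U Out) - int (num_right_turn N \<sigma> U Out)))"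

lemma iso_C_iff: "(x, x') \<in> iso_C N \<longleftrightarrow> (\<exists>\<pi>\<in>Gr N. x' = actC \<pi> x)"
  by (cases x; cases x') (auto simp: iso_C_def actC_def Gr_def conj_def)

lemma cubic_closed:
  assumes x: "x \<in> cubic_PO n" and p: "\<pi> \<in> Gr (6 * n)"
  shows "actC \<pi> x \<in> cubic_PO n"
proof -
  obtain \<sigma> \<alpha> U Out where xe: "x = (\<sigma>, \<alpha>, U, Out)" by (cases x)
  have \<pi>: "\<pi> permutes {..<6 * n}" "\<pi> 0 = 0" using p unfolding Gr_def by auto
  note x' = x[unfolded xe cubic_PO_def, simplified]
  have "is_planar_map (6 * n) (conj \<pi> \<sigma>) (conj \<pi> \<alpha>)" using is_planar_map_conj[OF \<pi>(1)] x' by auto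
  moreover have "\<forall>d<6 * n. card (orbit (conj \<pi> \<sigma>) d) = 3"
    using x' card_orbit_conj_pi[OF \<pi>(1)] pi_inv_lt[OF \<pi>(1)] by auto
  moreover have "\<pi> ` Out \<subseteq> {..<6 * n}" "\<pi> ` U \<subseteq> {..<6 * n}" using x' pi_lt[OF \<pi>(1)] by auto
  moreover have "\<pi> ` U \<inter> \<pi> ` Out = {}" using x' img_Int[OF \<pi>(1)] by auto
  moreover have "\<forall>d<6 * n. d \<in> \<pi> ` U \<longleftrightarrow> conj \<pi> \<alpha> d \<in> \<pi> ` U"
    using x' mem_img[OF \<pi>(1)] conj_apply'[OF \<pi>(1)] pi_inv_lt[OF \<pi>(1)] pi_inv_pi[OF \<pi>(1)] by auto
  moreover have "\<forall>d<6 * n. d \<notin> \<pi> ` U \<longrightarrow> (d \<in> \<pi> ` Out \<longleftrightarrow> conj \<pi> \<alpha> d \<notin> \<pi> ` Out)"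
    using x' mem_img[OF \<pi>(1)] conj_apply'[OF \<pi>(1)] pi_inv_lt[OF \<pi>(1)] pi_inv_pi[OF \<pi>(1)] by auto
  moreover have "\<forall>d<6 * n. card (orbit (conj \<pi> \<sigma>) d \<inter> \<pi> ` U) = 1 \<and> card (orbit (conj \<pi> \<sigma>) d \<inter> \<pi> ` Out) = 1"
    using x' card_orbit_conj_Int[OF \<pi>(1)] pi_inv_lt[OF \<pi>(1)] by auto
  moreover have "card (\<pi> ` U) = 2 * n" using x' card_img[OF \<pi>(1)] by auto
  moreover have "0 \<in> \<pi> ` Out" using x' \<pi>(2) by (metis image_eqI)
  ultimately show ?thesis unfolding xe actC_def cubic_PO_def by simp
qed

lemma num_turn_conj:
  assumes \<pi>: "\<pi> permutes {..<N}"
  shows "num_left_turn N (conj \<pi> \<sigma>) (\<pi> ` U) (\<pi> ` Out) = num_left_turn N \<sigma> U Out"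
        "num_right_turn N (conj \<pi> \<sigma>) (\<pi> ` U) (\<pi> ` Out) = num_right_turn N \<sigma> U Out"
proof -
  have o: "orbits (conj \<pi> \<sigma>) N = (\<lambda>Ob. \<pi> ` Ob) ` orbits \<sigma> N"
    unfolding conj_def using orbits_conj[OF \<pi>] .
  have "(\<exists>d\<in>\<pi> ` w. d \<notin> \<pi> ` U \<and> d \<notin> \<pi> ` Out \<and> conj \<pi> \<sigma> d \<in> \<pi> ` Out) \<longleftrightarrow>
        (\<exists>e\<in>w. e \<notin> U \<and> e \<notin> Out \<and> \<sigma> e \<in> Out)" for w
    using conj_apply[OF \<pi>] mem_img_pi[OF \<pi>] by auto
  then show "num_left_turn N (conj \<pi> \<sigma>) (\<pi> ` U) (\<pi> ` Out) = num_left_turn N \<sigma> U Out"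
    unfolding num_left_turn_def o
    using card_filter_img[OF inj_on_subset[OF inj_img_pi[OF \<pi>] subset_UNIV]] by simp
  have "(\<exists>d\<in>\<pi> ` w. d \<in> \<pi> ` Out \<and> conj \<pi> \<sigma> d \<notin> \<pi> ` U \<and> conj \<pi> \<sigma> d \<notin> \<pi> ` Out) \<longleftrightarrow>
        (\<exists>e\<in>w. e \<in> Out \<and> \<sigma> e \<notin> U \<and> \<sigma> e \<notin> Out)" for w
    using conj_apply[OF \<pi>] mem_img_pi[OF \<pi>] by auto
  then show "num_right_turn N (conj \<pi> \<sigma>) (\<pi> ` U) (\<pi> ` Out) = num_right_turn N \<sigma> U Out"
    unfolding num_right_turn_def o
    using card_filter_img[OF inj_on_subset[OF inj_img_pi[OF \<pi>] subset_UNIV]] by simp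
qed

lemma finite_cubic: "finite (cubic_PO n)"
proof -
  have "cubic_PO n \<subseteq> {\<sigma>. \<sigma> permutes {..<6*n}} \<times> {\<alpha>. \<alpha> permutes {..<6*n}} \<times> Pow {..<6*n} \<times> Pow {..<6*n}"
    unfolding cubic_PO_def is_planar_map_def is_map_def by auto
  moreover have "finite ({\<sigma>. \<sigma> permutes {..<6*n}} \<times> {\<alpha>. \<alpha> permutes {..<6*n}} \<times> Pow {..<6*n} \<times> Pow {..<6*n})"
    using finite_permutations[of "{..<6*n}"] by simp
  ultimately show ?thesis using finite_subset by blast
qed

definition Ustar :: "nat \<Rightarrow> nat set" where "Ustar n = {4 * n..<6 * n}"

definition Ycub :: "nat \<Rightarrow> ((nat \<Rightarrow> nat) \<times> (nat \<Rightarrow> nat) \<times> nat set \<times> nat set) set" where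
  "Ycub n = {y \<in> cubic_PO n. fst (snd (snd y)) = Ustar n}"

lemma C_coeff_sum:
  assumes n: "0 < n"
  shows "of_nat (fact (2 * n) * fact (4 * n - 1)) * C_coeff n \<omega> = (\<Sum>y\<in>Ycub n. wC \<omega> (6 * n) y)"
proof -
  let ?N = "6 * n"
  have N: "0 < ?N" using n by simp
  have Cc: "C_coeff n \<omega> = (\<Sum>c\<in>cubic_PO n // iso_C ?N. wC \<omega> ?N (SOME x. x \<in> c))"
    unfolding C_coeff_def wC_def ..
  have "of_nat (fact (2 * n) * fact (4 * n - 1)) * (\<Sum>c\<in>cubic_PO n // iso_C ?N. wC \<omega> ?N (SOME x. x \<in> c))
        = (\<Sum>y\<in>Ycub n. wC \<omega> ?N y)"
  proof (rule classes_sum[where G = "Gr ?N" and act = actC])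
    show "id \<in> Gr ?N" by (rule Gr_id)
    show "\<And>\<pi> \<pi>'. \<pi> \<in> Gr ?N \<Longrightarrow> \<pi>' \<in> Gr ?N \<Longrightarrow> \<pi> \<circ> \<pi>' \<in> Gr ?N" by (rule Gr_comp)
    show "\<And>\<pi>. \<pi> \<in> Gr ?N \<Longrightarrow> inv \<pi> \<in> Gr ?N \<and> inv \<pi> \<circ> \<pi> = id \<and> \<pi> \<circ> inv \<pi> = id" by (rule Gr_inv)
    show "\<And>x. actC id x = x" by (auto simp: actC_def conj_id split: prod.splits)
    show "\<And>\<pi> \<pi>' x. \<pi> \<in> Gr ?N \<Longrightarrow> \<pi>' \<in> Gr ?N \<Longrightarrow> actC (\<pi> \<circ> \<pi>') x = actC \<pi> (actC \<pi>' x)"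
      by (auto simp: actC_def conj_compose image_comp split: prod.splits)
    show "\<And>\<pi> x. \<pi> \<in> Gr ?N \<Longrightarrow> x \<in> cubic_PO n \<Longrightarrow> actC \<pi> x \<in> cubic_PO n"
      by (rule cubic_closed)
    show "\<pi> = id" if "\<pi> \<in> Gr ?N" "x \<in> cubic_PO n" "actC \<pi> x = x" for \<pi> x
    proof -
      obtain \<sigma> \<alpha> U Out where xe: "x = (\<sigma>, \<alpha>, U, Out)" by (cases x)
      have "is_map ?N \<sigma> \<alpha>" using that(2) unfolding xe cubic_PO_def is_planar_map_def by auto
      moreover have "conj \<pi> \<sigma> = \<sigma>" "conj \<pi> \<alpha> = \<alpha>" using that(3) unfolding xe actC_def by auto
      ultimately show ?thesis using conj_free[of \<pi> ?N \<sigma> \<alpha>] that(1) N unfolding Gr_def by auto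
    qed
    show "\<And>x x'. (x, x') \<in> iso_C ?N \<longleftrightarrow> (\<exists>\<pi>\<in>Gr ?N. x' = actC \<pi> x)" by (rule iso_C_iff)
    show "finite (cubic_PO n)" by (rule finite_cubic)
    show "\<And>\<pi> x. \<pi> \<in> Gr ?N \<Longrightarrow> x \<in> cubic_PO n \<Longrightarrow> wC \<omega> ?N (actC \<pi> x) = wC \<omega> ?N x"
      by (auto simp: wC_def actC_def Gr_def num_turn_conj split: prod.splits)
    show "Ycub n \<subseteq> cubic_PO n" unfolding Ycub_def by auto
    show "card {\<pi> \<in> Gr ?N. actC \<pi> x \<in> Ycub n} = fact (2 * n) * fact (4 * n - 1)"
      if x: "x \<in> cubic_PO n" for x
    proof -
      obtain \<sigma> \<alpha> U Out where xe: "x = (\<sigma>, \<alpha>, U, Out)" by (cases x)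
      note x' = x[unfolded xe cubic_PO_def, simplified]
      let ?S = "{..<?N} - {0}"
      have "{\<pi> \<in> Gr ?N. actC \<pi> x \<in> Ycub n} = {\<pi>. \<pi> permutes ?S \<and> \<pi> ` U = Ustar n}"
        using cubic_closed[OF x] permutes_fix_iff[of 0 "{..<?N}"] N
        unfolding Ycub_def Gr_def xe actC_def by auto
      also have "card \<dots> = fact (card U) * fact (card ?S - card U)"
      proof (rule perm_map_card)
        show "finite ?S" by simp
        show "U \<subseteq> ?S" using x' by auto
        show "Ustar n \<subseteq> ?S" using n unfolding Ustar_def by auto
        show "card U = card (Ustar n)" using x' unfolding Ustar_def by simp
      qed
      also have "\<dots> = fact (2 * n) * fact (4 * n - 1)" using x' N by simp
      finally show ?thesis .
    qed
  qed
  then show ?thesis using Cc by simp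
qed


lemma lt3: "{..<3::nat} = {0,1,2}" by auto
lemma lt4: "{..<4::nat} = {0,1,2,3}" by auto
lemma lt2: "{..<2::nat} = {0,1}" by auto
lemma fp2: "(f ^^ 2) d = f (f d)" by (simp add: numeral_2_eq_2)
lemma fp3: "(f ^^ 3) d = f (f (f d))" by (simp add: numeral_3_eq_3)
lemma fp4: "(f ^^ 4) d = f (f (f (f d)))" by (simp add: eval_nat_numeral)

lemma orbit3_iff:
  assumes "f permutes S" "finite S"
  shows "card (orbit f d) = 3 \<longleftrightarrow> f (f (f d)) = d \<and> f d \<noteq> d \<and> f (f d) \<noteq> d \<and> f (f d) \<noteq> f d"
  using card_orbit_iff[OF assms, of 3 d] unfolding lt3 fp3 by (auto simp: fp2)

lemma orbit4_iff:
  assumes "f permutes S" "finite S"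
  shows "card (orbit f d) = 4 \<longleftrightarrow> f (f (f (f d))) = d \<and> f d \<noteq> d \<and> f (f d) \<noteq> d \<and> f (f (f d)) \<noteq> d
     \<and> f (f d) \<noteq> f d \<and> f (f (f d)) \<noteq> f d \<and> f (f (f d)) \<noteq> f (f d)"
  using card_orbit_iff[OF assms, of 4 d] unfolding lt4 fp4 by (auto simp: fp2 fp3)

lemma orbit2_iff:
  assumes "f permutes S" "finite S"
  shows "card (orbit f d) = 2 \<longleftrightarrow> f (f d) = d \<and> f d \<noteq> d"
  using card_orbit_iff[OF assms, of 2 d] unfolding lt2 fp2 by auto

lemma orbit3_set: "f (f (f d)) = d \<Longrightarrow> orbit f d = {d, f d, f (f d)}"
  using orbit_period[where f=f and m=3 and x=d] unfolding lt3 fp3 by (auto simp: fp2)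

lemma orbit4_set: "f (f (f (f d))) = d \<Longrightarrow> orbit f d = {d, f d, f (f d), f (f (f d))}"
  using orbit_period[where f=f and m=4 and x=d] unfolding lt4 fp4 by (auto simp: fp2 fp3)


definition sc :: "nat \<Rightarrow> (nat \<Rightarrow> nat) \<Rightarrow> (nat \<Rightarrow> nat) \<Rightarrow> nat \<Rightarrow> nat" where
  "sc N \<sigma> \<alpha> d = (if d < N then (if \<sigma> d < N then \<sigma> d else \<sigma> (\<alpha> (\<sigma> d))) else d)"

definition ac :: "nat \<Rightarrow> (nat \<Rightarrow> nat) \<Rightarrow> nat \<Rightarrow> nat" where
  "ac N \<alpha> d = (if d < N then \<alpha> d else d)"

definition LC :: "nat \<Rightarrow> nat \<Rightarrow> (nat \<Rightarrow> nat) \<Rightarrow> (nat \<Rightarrow> nat) \<Rightarrow> nat set \<Rightarrow> bool" where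
  "LC N M \<sigma> \<alpha> Out \<longleftrightarrow> N \<le> M \<and>
     \<sigma> permutes {..<M} \<and> \<alpha> permutes {..<M} \<and> (\<forall>d<M. \<alpha> d \<noteq> d \<and> \<alpha> (\<alpha> d) = d) \<and>
     (\<forall>d<M. \<sigma> (\<sigma> (\<sigma> d)) = d \<and> \<sigma> d \<noteq> d) \<and>
     (\<forall>u. N \<le> u \<and> u < M \<longrightarrow> \<sigma> u < N \<and> \<sigma> (\<sigma> u) < N \<and> N \<le> \<alpha> u) \<and>
     (\<forall>d<N. N \<le> \<sigma> d \<or> N \<le> \<sigma> (\<sigma> d)) \<and>
     (\<forall>d<N. \<alpha> d < N \<and> (d \<in> Out \<longleftrightarrow> \<alpha> d \<notin> Out)) \<and>
     (\<forall>u. N \<le> u \<and> u < M \<longrightarrow> (\<sigma> u \<in> Out \<longleftrightarrow> \<sigma> (\<sigma> u) \<notin> Out)) \<and>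
     Out \<subseteq> {..<N} \<and> 0 \<in> Out"

context
  fixes N M \<sigma> \<alpha> Out assumes lc: "LC N M \<sigma> \<alpha> Out"
begin

lemma lc_NM: "N \<le> M" using lc unfolding LC_def by auto
lemma lc_sp: "\<sigma> permutes {..<M}" using lc unfolding LC_def by auto
lemma lc_ap: "\<alpha> permutes {..<M}" using lc unfolding LC_def by auto
lemma lc_sM: "\<sigma> d < M \<longleftrightarrow> d < M" using permutes_in_image[OF lc_sp] by simp
lemma lc_aM: "\<alpha> d < M \<longleftrightarrow> d < M" using permutes_in_image[OF lc_ap] by simp
lemma lc_sinj: "\<sigma> a = \<sigma> b \<longleftrightarrow> a = b" using permutes_inj[OF lc_sp] by (auto dest: injD)
lemma lc_ainv: "d < M \<Longrightarrow> \<alpha> (\<alpha> d) = d" using lc unfolding LC_def by auto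
lemma lc_afp: "d < M \<Longrightarrow> \<alpha> d \<noteq> d" using lc unfolding LC_def by auto
lemma lc_s3: "d < M \<Longrightarrow> \<sigma> (\<sigma> (\<sigma> d)) = d" using lc unfolding LC_def by auto
lemma lc_sfp: "d < M \<Longrightarrow> \<sigma> d \<noteq> d" using lc unfolding LC_def by auto
lemma lc_U: "N \<le> u \<Longrightarrow> u < M \<Longrightarrow> \<sigma> u < N \<and> \<sigma> (\<sigma> u) < N \<and> N \<le> \<alpha> u \<and> \<alpha> u < M"
  using lc lc_aM unfolding LC_def by auto
lemma lc_nonU: "d < N \<Longrightarrow> N \<le> \<sigma> d \<or> N \<le> \<sigma> (\<sigma> d)" using lc unfolding LC_def by auto
lemma lc_anonU: "d < N \<Longrightarrow> \<alpha> d < N" using lc unfolding LC_def by auto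
lemma lc_aOut: "d < N \<Longrightarrow> d \<in> Out \<longleftrightarrow> \<alpha> d \<notin> Out" using lc unfolding LC_def by blast
lemma lc_UOut: "N \<le> u \<Longrightarrow> u < M \<Longrightarrow> \<sigma> u \<in> Out \<longleftrightarrow> \<sigma> (\<sigma> u) \<notin> Out" using lc unfolding LC_def by blast
lemma lc_Out: "Out \<subseteq> {..<N}" "0 \<in> Out" using lc unfolding LC_def by auto

lemma lc_rep: "d < N \<Longrightarrow> \<exists>u. N \<le> u \<and> u < M \<and> (d = \<sigma> u \<or> d = \<sigma> (\<sigma> u))"
proof -
  assume d: "d < N"
  then have dM: "d < M" using lc_NM by auto
  show ?thesis
  proof (cases "N \<le> \<sigma> d")
    case True
    then show ?thesis using lc_s3[OF dM] lc_sM dM by (intro exI[of _ "\<sigma> d"]) auto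
  next
    case False
    then have "N \<le> \<sigma> (\<sigma> d)" using lc_nonU[OF d] by auto
    then show ?thesis using lc_s3[OF dM] lc_sM dM by (intro exI[of _ "\<sigma> (\<sigma> d)"]) auto
  qed
qed

lemma sc_lt: "sc N \<sigma> \<alpha> d < N \<longleftrightarrow> d < N"
proof
  assume d: "d < N"
  show "sc N \<sigma> \<alpha> d < N"
  proof (cases "\<sigma> d < N")
    case False
    have "\<sigma> d < M" using d lc_NM lc_sM by auto
    then have "N \<le> \<alpha> (\<sigma> d)" "\<alpha> (\<sigma> d) < M" using lc_U[of "\<sigma> d"] False by auto
    then show ?thesis using d False lc_U by (auto simp: sc_def)
  qed (use d in \<open>auto simp: sc_def\<close>)
qed (auto simp: sc_def split: if_splits)

lemma sc_U1: "N \<le> u \<Longrightarrow> u < M \<Longrightarrow> sc N \<sigma> \<alpha> (\<sigma> u) = \<sigma> (\<sigma> u)"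
  using lc_U by (auto simp: sc_def)

lemma sc_U2: "N \<le> u \<Longrightarrow> u < M \<Longrightarrow> sc N \<sigma> \<alpha> (\<sigma> (\<sigma> u)) = \<sigma> (\<alpha> u)"
  using lc_U lc_s3 by (auto simp: sc_def)

lemma U_dist:
  assumes u: "N \<le> u" "u < M"
  shows "\<sigma> u \<noteq> \<sigma> (\<sigma> u)" "\<sigma> u \<noteq> \<sigma> (\<alpha> u)" "\<sigma> u \<noteq> \<sigma> (\<sigma> (\<alpha> u))"
        "\<sigma> (\<sigma> u) \<noteq> \<sigma> (\<alpha> u)" "\<sigma> (\<sigma> u) \<noteq> \<sigma> (\<sigma> (\<alpha> u))" "\<sigma> (\<alpha> u) \<noteq> \<sigma> (\<sigma> (\<alpha> u))"
proof -
  note U = lc_U[OF u] and Ua = lc_U[of "\<alpha> u"]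
  have au: "N \<le> \<alpha> u" "\<alpha> u < M" using U by auto
  show "\<sigma> u \<noteq> \<sigma> (\<sigma> u)" using lc_sfp[OF u(2)] lc_sinj by metis
  show "\<sigma> u \<noteq> \<sigma> (\<alpha> u)" using lc_afp[OF u(2)] lc_sinj by metis
  show "\<sigma> u \<noteq> \<sigma> (\<sigma> (\<alpha> u))" using lc_sinj Ua[OF au] u by (metis not_le)
  show "\<sigma> (\<sigma> u) \<noteq> \<sigma> (\<alpha> u)" using lc_sinj U au by (metis not_le)
  show "\<sigma> (\<sigma> u) \<noteq> \<sigma> (\<sigma> (\<alpha> u))" using lc_afp[OF u(2)] lc_sinj by metis
  show "\<sigma> (\<alpha> u) \<noteq> \<sigma> (\<sigma> (\<alpha> u))" using lc_sfp[OF au(2)] lc_sinj by metis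
qed

lemma ac_permutes: "ac N \<alpha> permutes {..<N}"
proof (rule bij_imp_permutes)
  show "bij_betw (ac N \<alpha>) {..<N} {..<N}"
  proof (rule bij_betwI[where g = "ac N \<alpha>"])
    show "ac N \<alpha> \<in> {..<N} \<rightarrow> {..<N}" using lc_anonU by (auto simp: ac_def)
    show "ac N \<alpha> \<in> {..<N} \<rightarrow> {..<N}" using lc_anonU by (auto simp: ac_def)
    show "ac N \<alpha> (ac N \<alpha> x) = x" if "x \<in> {..<N}" for x
      using that lc_anonU lc_ainv lc_NM by (auto simp: ac_def)
    show "ac N \<alpha> (ac N \<alpha> y) = y" if "y \<in> {..<N}" for y
      using that lc_anonU lc_ainv lc_NM by (auto simp: ac_def)
  qed
qed (auto simp: ac_def)

lemma sc_inj: "a < N \<Longrightarrow> b < N \<Longrightarrow> sc N \<sigma> \<alpha> a = sc N \<sigma> \<alpha> b \<Longrightarrow> a = b"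
proof -
  assume a: "a < N" and b: "b < N" and e: "sc N \<sigma> \<alpha> a = sc N \<sigma> \<alpha> b"
  have aM: "a < M" "b < M" using a b lc_NM by auto
  have x: "\<alpha> (\<sigma> x) \<ge> N" if "x < N" "\<not> \<sigma> x < N" for x
    using lc_U[of "\<sigma> x"] that lc_sM lc_NM by auto
  show "a = b"
  proof (cases "\<sigma> a < N"; cases "\<sigma> b < N")
    assume "\<sigma> a < N" "\<sigma> b < N" then show ?thesis using e a b lc_sinj by (auto simp: sc_def)
  next
    assume 1: "\<sigma> a < N" "\<not> \<sigma> b < N"
    then have "a = \<alpha> (\<sigma> b)" using e a b lc_sinj by (auto simp: sc_def)
    then show ?thesis using x[OF b 1(2)] a by auto
  next
    assume 1: "\<not> \<sigma> a < N" "\<sigma> b < N"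
    then have "b = \<alpha> (\<sigma> a)" using e a b lc_sinj by (auto simp: sc_def)
    then show ?thesis using x[OF a 1(1)] b by auto
  next
    assume 1: "\<not> \<sigma> a < N" "\<not> \<sigma> b < N"
    then have "\<alpha> (\<sigma> a) = \<alpha> (\<sigma> b)" using e a b lc_sinj by (auto simp: sc_def)
    then have "\<alpha> (\<alpha> (\<sigma> a)) = \<alpha> (\<alpha> (\<sigma> b))" by simp
    then have "\<sigma> a = \<sigma> b" using lc_ainv lc_sM aM by auto
    then show ?thesis using lc_sinj by auto
  qed
qed

lemma sc_permutes: "sc N \<sigma> \<alpha> permutes {..<N}"
proof (rule bij_imp_permutes)
  have inj: "inj_on (sc N \<sigma> \<alpha>) {..<N}" using sc_inj by (auto intro: inj_onI)
  have "sc N \<sigma> \<alpha> ` {..<N} \<subseteq> {..<N}" using sc_lt by auto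
  then have "sc N \<sigma> \<alpha> ` {..<N} = {..<N}" using endo_inj_surj[OF _ _ inj] by auto
  then show "bij_betw (sc N \<sigma> \<alpha>) {..<N} {..<N}" using inj by (simp add: bij_betw_def)
qed (auto simp: sc_def)

lemma sc_orbit4:
  assumes d: "d < N"
  shows "card (orbit (sc N \<sigma> \<alpha>) d) = 4"
proof -
  obtain u where u: "N \<le> u" "u < M" "d = \<sigma> u \<or> d = \<sigma> (\<sigma> u)" using lc_rep[OF d] by blast
  have au: "N \<le> \<alpha> u" "\<alpha> u < M" using lc_U[OF u(1,2)] by auto
  have aau: "\<alpha> (\<alpha> u) = u" using lc_ainv u by auto
  note D = U_dist[OF u(1,2)]
  let ?f = "sc N \<sigma> \<alpha>"
  have f1: "?f (\<sigma> u) = \<sigma> (\<sigma> u)" and f2: "?f (\<sigma> (\<sigma> u)) = \<sigma> (\<alpha> u)"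
    and f3: "?f (\<sigma> (\<alpha> u)) = \<sigma> (\<sigma> (\<alpha> u))" and f4: "?f (\<sigma> (\<sigma> (\<alpha> u))) = \<sigma> u"
    using sc_U1[OF u(1,2)] sc_U2[OF u(1,2)] sc_U1[OF au] sc_U2[OF au] aau by auto
  show ?thesis unfolding orbit4_iff[OF sc_permutes finite_lessThan]
    using u(3) f1 f2 f3 f4 D by (auto simp: eq_commute[of "\<sigma> _" "\<sigma> _"])
qed

lemma sc_orbit_set:
  assumes u: "N \<le> u" "u < M"
  shows "orbit (sc N \<sigma> \<alpha>) (\<sigma> u) = {\<sigma> u, \<sigma> (\<sigma> u), \<sigma> (\<alpha> u), \<sigma> (\<sigma> (\<alpha> u))}"
proof -
  have au: "N \<le> \<alpha> u" "\<alpha> u < M" using lc_U[OF u(1,2)] by auto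
  have aau: "\<alpha> (\<alpha> u) = u" using lc_ainv u by auto
  let ?f = "sc N \<sigma> \<alpha>"
  have f1: "?f (\<sigma> u) = \<sigma> (\<sigma> u)" and f2: "?f (\<sigma> (\<sigma> u)) = \<sigma> (\<alpha> u)"
    and f3: "?f (\<sigma> (\<alpha> u)) = \<sigma> (\<sigma> (\<alpha> u))" and f4: "?f (\<sigma> (\<sigma> (\<alpha> u))) = \<sigma> u"
    using sc_U1[OF u(1,2)] sc_U2[OF u(1,2)] sc_U1[OF au] sc_U2[OF au] aau by auto
  show ?thesis using orbit4_set[of ?f "\<sigma> u"] f1 f2 f3 f4 by simp
qed

lemma sc_orbit_Out:
  assumes d: "d < N"
  shows "card (orbit (sc N \<sigma> \<alpha>) d \<inter> Out) = 2"
proof -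
  obtain u where u: "N \<le> u" "u < M" "d = \<sigma> u \<or> d = \<sigma> (\<sigma> u)" using lc_rep[OF d] by blast
  have au: "N \<le> \<alpha> u" "\<alpha> u < M" using lc_U[OF u(1,2)] by auto
  have "orbit (sc N \<sigma> \<alpha>) d = orbit (sc N \<sigma> \<alpha>) (\<sigma> u)"
  proof (cases "d = \<sigma> u")
    case False
    then have "d = sc N \<sigma> \<alpha> (\<sigma> u)" using u sc_U1[OF u(1,2)] by auto
    then show ?thesis using orbit_step[OF sc_permutes finite_lessThan] by simp
  qed simp
  also have "\<dots> = {\<sigma> u, \<sigma> (\<sigma> u), \<sigma> (\<alpha> u), \<sigma> (\<sigma> (\<alpha> u))}" by (rule sc_orbit_set[OF u(1,2)])
  finally have o: "orbit (sc N \<sigma> \<alpha>) d = {\<sigma> u, \<sigma> (\<sigma> u), \<sigma> (\<alpha> u), \<sigma> (\<sigma> (\<alpha> u))}" .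
  note D = U_dist[OF u(1,2)]
  note O1 = lc_UOut[OF u(1,2)] and O2 = lc_UOut[OF au]
  show ?thesis unfolding o
  proof (cases "\<sigma> u \<in> Out"; cases "\<sigma> (\<alpha> u) \<in> Out")
    assume a: "\<sigma> u \<in> Out" "\<sigma> (\<alpha> u) \<in> Out"
    then have "{\<sigma> u, \<sigma> (\<sigma> u), \<sigma> (\<alpha> u), \<sigma> (\<sigma> (\<alpha> u))} \<inter> Out = {\<sigma> u, \<sigma> (\<alpha> u)}" using O1 O2 by auto
    then show "card ({\<sigma> u, \<sigma> (\<sigma> u), \<sigma> (\<alpha> u), \<sigma> (\<sigma> (\<alpha> u))} \<inter> Out) = 2" using D by simp
  next
    assume a: "\<sigma> u \<in> Out" "\<sigma> (\<alpha> u) \<notin> Out"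
    then have "{\<sigma> u, \<sigma> (\<sigma> u), \<sigma> (\<alpha> u), \<sigma> (\<sigma> (\<alpha> u))} \<inter> Out = {\<sigma> u, \<sigma> (\<sigma> (\<alpha> u))}" using O1 O2 by auto
    then show "card ({\<sigma> u, \<sigma> (\<sigma> u), \<sigma> (\<alpha> u), \<sigma> (\<sigma> (\<alpha> u))} \<inter> Out) = 2" using D by simp
  next
    assume a: "\<sigma> u \<notin> Out" "\<sigma> (\<alpha> u) \<in> Out"
    then have "{\<sigma> u, \<sigma> (\<sigma> u), \<sigma> (\<alpha> u), \<sigma> (\<sigma> (\<alpha> u))} \<inter> Out = {\<sigma> (\<sigma> u), \<sigma> (\<alpha> u)}" using O1 O2 by auto
    then show "card ({\<sigma> u, \<sigma> (\<sigma> u), \<sigma> (\<alpha> u), \<sigma> (\<sigma> (\<alpha> u))} \<inter> Out) = 2" using D by simp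
  next
    assume a: "\<sigma> u \<notin> Out" "\<sigma> (\<alpha> u) \<notin> Out"
    then have "{\<sigma> u, \<sigma> (\<sigma> u), \<sigma> (\<alpha> u), \<sigma> (\<sigma> (\<alpha> u))} \<inter> Out = {\<sigma> (\<sigma> u), \<sigma> (\<sigma> (\<alpha> u))}" using O1 O2 by auto
    then show "card ({\<sigma> u, \<sigma> (\<sigma> u), \<sigma> (\<alpha> u), \<sigma> (\<sigma> (\<alpha> u))} \<inter> Out) = 2" using D by simp
  qed
qed

end


definition conn :: "nat \<Rightarrow> (nat \<Rightarrow> nat) \<Rightarrow> (nat \<Rightarrow> nat) \<Rightarrow> bool" where
  "conn N \<sigma> \<alpha> \<longleftrightarrow> (\<forall>x<N. \<forall>y<N. (x, y) \<in> (mrel N \<sigma> \<alpha>)\<^sup>*)"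

lemma mrel_step_s: "a < N \<Longrightarrow> (a, \<sigma> a) \<in> mrel N \<sigma> \<alpha>" unfolding mrel_def by auto
lemma mrel_step_a: "a < N \<Longrightarrow> (a, \<alpha> a) \<in> mrel N \<sigma> \<alpha>" unfolding mrel_def by auto

context
  fixes N M \<sigma> \<alpha> Out assumes lc: "LC N M \<sigma> \<alpha> Out"
begin

abbreviation "scc \<equiv> sc N \<sigma> \<alpha>"
abbreviation "acc \<equiv> ac N \<alpha>"

lemma sc_steps: "(a, b) \<in> (mrel N scc acc)\<^sup>* \<Longrightarrow> b < N \<Longrightarrow> (b, scc b) \<in> mrel N scc acc"
  using mrel_step_s by blast

lemma conn_contract:
  assumes c: "conn M \<sigma> \<alpha>"
  shows "conn N scc acc"
proof -
  define r where "r d = (if d < N then d else \<sigma> d)" for d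
  have NM: "N \<le> M" using lc_NM[OF lc] .
  have rN: "r d < N" if "d < M" for d using that lc_U[OF lc] unfolding r_def by (cases "d < N") auto
  let ?R = "mrel N scc acc"
  have S: "(a, scc a) \<in> ?R\<^sup>*" if "a < N" for a using mrel_step_s[OF that] by blast
  have stp: "(r a, r b) \<in> ?R\<^sup>*" if ab: "(a, b) \<in> mrel M \<sigma> \<alpha>" for a b
  proof -
    have aM: "a < M" using ab unfolding mrel_def by auto
    show ?thesis
    proof (cases "b = \<sigma> a")
      case True
      show ?thesis
      proof (cases "a < N")
        case a: True
        show ?thesis
        proof (cases "\<sigma> a < N")
          case True
          then have "scc a = \<sigma> a" using a by (simp add: sc_def)
          then show ?thesis using S[OF a] True a \<open>b = \<sigma> a\<close> unfolding r_def by auto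
        next
          case False
          let ?u = "\<sigma> a"
          have u: "N \<le> ?u" "?u < M" using False lc_sM[OF lc] aM by auto
          have a2: "a = \<sigma> (\<sigma> ?u)" using lc_s3[OF lc aM] by simp
          have au: "N \<le> \<alpha> ?u" "\<alpha> ?u < M" using lc_U[OF lc u] by auto
          have aau: "\<alpha> (\<alpha> ?u) = ?u" using lc_ainv[OF lc u(2)] .
          have 1: "scc a = \<sigma> (\<alpha> ?u)" using sc_U2[OF lc u] a2 by simp
          have 2: "scc (\<sigma> (\<alpha> ?u)) = \<sigma> (\<sigma> (\<alpha> ?u))" using sc_U1[OF lc au] .
          have 3: "scc (\<sigma> (\<sigma> (\<alpha> ?u))) = \<sigma> ?u" using sc_U2[OF lc au] aau by simp
          have l: "\<sigma> (\<alpha> ?u) < N" "\<sigma> (\<sigma> (\<alpha> ?u)) < N" using lc_U[OF lc au] by auto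
          have "(a, \<sigma> ?u) \<in> ?R\<^sup>*"
            using S[OF a] S[OF l(1)] S[OF l(2)] 1 2 3 by (metis rtrancl_trans)
          then show ?thesis using True a False unfolding r_def by simp
        qed
      next
        case False
        then have "r a = \<sigma> a" "r b = \<sigma> a" using True lc_U[OF lc, of a] aM unfolding r_def by auto
        then show ?thesis by simp
      qed
    next
      case False
      then have b: "b = \<alpha> a" using ab unfolding mrel_def by auto
      show ?thesis
      proof (cases "a < N")
        case True
        then have "acc a = \<alpha> a" "\<alpha> a < N" using lc_anonU[OF lc] by (auto simp: ac_def)
        then show ?thesis using mrel_step_a[OF True, where \<sigma>=scc and \<alpha>=acc] True b unfolding r_def by auto
      next
        case False
        then have u: "N \<le> a" "a < M" using aM by auto
        have au: "N \<le> \<alpha> a" "\<alpha> a < M" using lc_U[OF lc u] by auto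
        have l: "\<sigma> a < N" "\<sigma> (\<sigma> a) < N" using lc_U[OF lc u] by auto
        have "(\<sigma> a, \<sigma> (\<alpha> a)) \<in> ?R\<^sup>*"
          using S[OF l(1)] S[OF l(2)] sc_U1[OF lc u] sc_U2[OF lc u] by (metis rtrancl_trans)
        then show ?thesis using b u au unfolding r_def by simp
      qed
    qed
  qed
  have "(r x, r y) \<in> ?R\<^sup>*" if "(x, y) \<in> (mrel M \<sigma> \<alpha>)\<^sup>*" for x y
    using that
  proof (induction rule: rtrancl_induct)
    case base then show ?case by simp
  next
    case (step y z) then show ?case using stp[OF step(2)] by (meson rtrancl_trans)
  qed
  note L = this
  show ?thesis unfolding conn_def
  proof (intro allI impI)
    fix x y assume xy: "x < N" "y < N"
    then have "(x, y) \<in> (mrel M \<sigma> \<alpha>)\<^sup>*" using c NM unfolding conn_def by auto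
    then have "(r x, r y) \<in> ?R\<^sup>*" by (rule L)
    then show "(x, y) \<in> ?R\<^sup>*" using xy unfolding r_def by simp
  qed
qed

lemma conn_expand:
  assumes c: "conn N scc acc"
  shows "conn M \<sigma> \<alpha>"
proof -
  define r where "r d = (if d < N then d else \<sigma> d)" for d
  have NM: "N \<le> M" using lc_NM[OF lc] .
  let ?R = "mrel M \<sigma> \<alpha>"
  have S: "(a, \<sigma> a) \<in> ?R\<^sup>*" if "a < M" for a using mrel_step_s[OF that] by blast
  have A: "(a, \<alpha> a) \<in> ?R\<^sup>*" if "a < M" for a using mrel_step_a[OF that] by blast
  have stp: "(a, b) \<in> ?R\<^sup>*" if ab: "(a, b) \<in> mrel N scc acc" for a b
  proof -
    have a: "a < N" using ab unfolding mrel_def by auto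
    then have aM: "a < M" using NM by auto
    show ?thesis
    proof (cases "b = scc a")
      case True
      show ?thesis
      proof (cases "\<sigma> a < N")
        case True
        then show ?thesis using \<open>b = scc a\<close> S[OF aM] a by (simp add: sc_def)
      next
        case False
        have 1: "\<sigma> a < M" using lc_sM[OF lc] aM by simp
        then have 2: "\<alpha> (\<sigma> a) < M" using lc_aM[OF lc] by simp
        have "(a, \<sigma> (\<alpha> (\<sigma> a))) \<in> ?R\<^sup>*" using S[OF aM] A[OF 1] S[OF 2] by (metis rtrancl_trans)
        then show ?thesis using \<open>b = scc a\<close> False a by (simp add: sc_def)
      qed
    next
      case False
      then have "b = acc a" using ab unfolding mrel_def by auto
      then show ?thesis using A[OF aM] a by (simp add: ac_def)
    qed
  qed
  have lift: "(x, y) \<in> ?R\<^sup>*" if "(x, y) \<in> (mrel N scc acc)\<^sup>*" for x y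
    using that
  proof (induction rule: rtrancl_induct)
    case base then show ?case by simp
  next
    case (step y z) then show ?case using stp[OF step(2)] by (meson rtrancl_trans)
  qed
  have to: "(x, r x) \<in> ?R\<^sup>*" "r x < N" if "x < M" for x
    using S[OF that] that lc_U[OF lc, of x] unfolding r_def by auto
  have frm: "(r y, y) \<in> ?R\<^sup>*" if "y < M" for y
  proof (cases "y < N")
    case False
    have 1: "\<sigma> y < M" "\<sigma> (\<sigma> y) < M" using lc_sM[OF lc] that by auto
    have "(\<sigma> y, \<sigma> (\<sigma> (\<sigma> y))) \<in> ?R\<^sup>*" using S[OF 1(1)] S[OF 1(2)] by (metis rtrancl_trans)
    then show ?thesis using lc_s3[OF lc that] False unfolding r_def by simp
  qed (simp add: r_def)
  show ?thesis unfolding conn_def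
  proof (intro allI impI)
    fix x y assume xy: "x < M" "y < M"
    have "(r x, r y) \<in> (mrel N scc acc)\<^sup>*" using c to xy unfolding conn_def by auto
    then show "(x, y) \<in> ?R\<^sup>*" using lift to(1)[OF xy(1)] frm[OF xy(2)] by (meson rtrancl_trans)
  qed
qed

lemma faces_eq: "card (orbits (\<sigma> \<circ> \<alpha>) M) = card (orbits (scc \<circ> acc) N)"
proof (rule first_return_card)
  show "\<sigma> \<circ> \<alpha> permutes {..<M}" using permutes_compose[OF lc_ap[OF lc] lc_sp[OF lc]] .
  show "N \<le> M" using lc_NM[OF lc] .
  show "(\<sigma> \<circ> \<alpha>) a < N" if "N \<le> a" "a < M" for a
    using lc_U[OF lc that] lc_U[OF lc, of "\<alpha> a"] by auto
  show "(scc \<circ> acc) b = (if (\<sigma> \<circ> \<alpha>) b < N then (\<sigma> \<circ> \<alpha>) b else (\<sigma> \<circ> \<alpha>) ((\<sigma> \<circ> \<alpha>) b))" if "b < N" for b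
    using that lc_anonU[OF lc, of b] by (simp add: sc_def ac_def)
qed

end


lemma card3_one:
  assumes "a \<noteq> b" "a \<noteq> c" "b \<noteq> c"
  shows "card ({a, b, c} \<inter> S) = 1 \<longleftrightarrow>
    (a \<in> S \<and> b \<notin> S \<and> c \<notin> S) \<or> (a \<notin> S \<and> b \<in> S \<and> c \<notin> S) \<or> (a \<notin> S \<and> b \<notin> S \<and> c \<in> S)"
  using assms by (cases "a \<in> S"; cases "b \<in> S"; cases "c \<in> S") (auto simp: Int_insert_left)

lemma card_orbits_k:
  assumes "f permutes {..<N}" "\<And>d. d < N \<Longrightarrow> card (orbit f d) = k" "0 < k"
  shows "card (orbits f N) = N div k"
  using orbits_partition_card[OF assms(1,2)] assms(3) by (metis nonzero_mult_div_cancel_left not_less0)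

lemma is_map_conn: "is_map N \<sigma> \<alpha> \<longleftrightarrow> \<sigma> permutes {..<N} \<and> \<alpha> permutes {..<N} \<and>
     (\<forall>d<N. \<alpha> d \<noteq> d \<and> \<alpha> (\<alpha> d) = d) \<and> conn N \<sigma> \<alpha>"
  unfolding is_map_alt conn_def ..

lemma cubic_PO_E:
  assumes "(\<sigma>, \<alpha>, U, Out) \<in> cubic_PO n"
  shows "is_planar_map (6 * n) \<sigma> \<alpha>" "\<forall>d < 6 * n. card (orbit \<sigma> d) = 3"
    "U \<subseteq> {..< 6 * n}" "Out \<subseteq> {..< 6 * n}" "U \<inter> Out = {}"
    "\<forall>d < 6 * n. d \<in> U \<longleftrightarrow> \<alpha> d \<in> U"
    "\<forall>d < 6 * n. d \<notin> U \<longrightarrow> (d \<in> Out \<longleftrightarrow> \<alpha> d \<notin> Out)"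
    "\<forall>d < 6 * n. card (orbit \<sigma> d \<inter> U) = 1 \<and> card (orbit \<sigma> d \<inter> Out) = 1"
    "card U = 2 * n" "0 \<in> Out"
  using assms unfolding cubic_PO_def by (simp_all only: mem_Collect_eq prod.case) (elim conjE, assumption)+

lemma quartic_EO_E:
  assumes "(\<sigma>, \<alpha>, Out) \<in> quartic_EO n"
  shows "is_planar_map (4 * n) \<sigma> \<alpha>" "\<forall>d < 4 * n. card (orbit \<sigma> d) = 4"
      "Out \<subseteq> {..< 4 * n}" "\<forall>d < 4 * n. d \<in> Out \<longleftrightarrow> \<alpha> d \<notin> Out"
      "\<forall>d < 4 * n. card (orbit \<sigma> d \<inter> Out) = 2" "0 \<in> Out"
  using assms unfolding quartic_EO_def by (simp_all only: mem_Collect_eq prod.case) (elim conjE, assumption)+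

lemma cubic_LC:
  assumes y: "(\<sigma>, \<alpha>, Ustar n, Out) \<in> cubic_PO n"
  shows "LC (4*n) (6*n) \<sigma> \<alpha> Out" "conn (6*n) \<sigma> \<alpha>" "card (orbits (\<sigma> \<circ> \<alpha>) (6*n)) = n + 2"
proof -
  note y' = cubic_PO_E[OF y[unfolded Ustar_def]]
  have sp: "\<sigma> permutes {..<6*n}" and ap: "\<alpha> permutes {..<6*n}"
    and af: "\<forall>d<6*n. \<alpha> d \<noteq> d \<and> \<alpha> (\<alpha> d) = d" and cn: "conn (6*n) \<sigma> \<alpha>"
    using y'(1) unfolding is_planar_map_def is_map_conn by auto
  show "conn (6*n) \<sigma> \<alpha>" by (rule cn)
  have o3: "\<sigma> (\<sigma> (\<sigma> d)) = d \<and> \<sigma> d \<noteq> d \<and> \<sigma> (\<sigma> d) \<noteq> d \<and> \<sigma> (\<sigma> d) \<noteq> \<sigma> d" if "d < 6*n" for d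
    using y'(2) that orbit3_iff[OF sp finite_lessThan] by auto
  have oset: "orbit \<sigma> d = {d, \<sigma> d, \<sigma> (\<sigma> d)}" if "d < 6*n" for d using orbit3_set o3[OF that] by auto
  have sM: "\<sigma> d < 6*n \<longleftrightarrow> d < 6*n" for d using permutes_in_image[OF sp] by simp
  have U1: "card ({d, \<sigma> d, \<sigma> (\<sigma> d)} \<inter> {4*n..<6*n}) = 1" if "d < 6*n" for d
    using y'(8) that oset[OF that] by auto
  have dist: "d \<noteq> \<sigma> d" "d \<noteq> \<sigma> (\<sigma> d)" "\<sigma> d \<noteq> \<sigma> (\<sigma> d)" if "d < 6*n" for d
    using o3[OF that] by auto
  have U1': "(d \<in> {4*n..<6*n} \<and> \<sigma> d \<notin> {4*n..<6*n} \<and> \<sigma> (\<sigma> d) \<notin> {4*n..<6*n}) \<or>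
    (d \<notin> {4*n..<6*n} \<and> \<sigma> d \<in> {4*n..<6*n} \<and> \<sigma> (\<sigma> d) \<notin> {4*n..<6*n}) \<or>
    (d \<notin> {4*n..<6*n} \<and> \<sigma> d \<notin> {4*n..<6*n} \<and> \<sigma> (\<sigma> d) \<in> {4*n..<6*n})" if "d < 6*n" for d
    using card3_one[OF dist[OF that]] U1[OF that] by blast
  have O1: "card ({d, \<sigma> d, \<sigma> (\<sigma> d)} \<inter> Out) = 1" if "d < 6*n" for d
    using y'(8) that oset[OF that] by auto
  have O1': "(d \<in> Out \<and> \<sigma> d \<notin> Out \<and> \<sigma> (\<sigma> d) \<notin> Out) \<or>
    (d \<notin> Out \<and> \<sigma> d \<in> Out \<and> \<sigma> (\<sigma> d) \<notin> Out) \<or>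
    (d \<notin> Out \<and> \<sigma> d \<notin> Out \<and> \<sigma> (\<sigma> d) \<in> Out)" if "d < 6*n" for d
    using card3_one[OF dist[OF that]] O1[OF that] by blast
  have Uc: "d \<in> {4*n..<6*n} \<longleftrightarrow> \<alpha> d \<in> {4*n..<6*n}" if "d < 6*n" for d
    using y'(6) that by (elim allE[of _ d]) (erule impE)
  have Oc: "d \<in> Out \<longleftrightarrow> \<alpha> d \<notin> Out" if "d < 4*n" for d
    using y'(7) that by (elim allE[of _ d]) auto
  have Osub: "Out \<subseteq> {..<4*n}"
  proof
    fix x assume x: "x \<in> Out"
    then have "x < 6*n" "x \<notin> {4*n..<6*n}" using y'(4,5) by auto
    then show "x \<in> {..<4*n}" by auto
  qed
  have aM: "\<alpha> d < 6*n \<longleftrightarrow> d < 6*n" for d using permutes_in_image[OF ap] by simp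
  show "LC (4*n) (6*n) \<sigma> \<alpha> Out"
    unfolding LC_def
  proof (intro conjI allI impI)
    show "4 * n \<le> 6 * n" by simp
    show "\<sigma> permutes {..<6*n}" "\<alpha> permutes {..<6*n}" by fact+
    fix d assume d: "d < 6*n"
    show "\<alpha> d \<noteq> d" "\<alpha> (\<alpha> d) = d" using af d by auto
    show "\<sigma> (\<sigma> (\<sigma> d)) = d" "\<sigma> d \<noteq> d" using o3[OF d] by auto
  next
    fix u assume u: "4*n \<le> u \<and> u < 6*n"
    have "u \<in> {4*n..<6*n}" using u by auto
    then have "\<sigma> u \<notin> {4*n..<6*n} \<and> \<sigma> (\<sigma> u) \<notin> {4*n..<6*n}"
      using U1'[of u] u by blast
    then show "\<sigma> u < 4*n" "\<sigma> (\<sigma> u) < 4*n" using u sM by auto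
    show "4*n \<le> \<alpha> u" using Uc[of u] u by auto
    have "u \<notin> Out" using Osub u by auto
    then show "\<sigma> u \<in> Out \<longleftrightarrow> \<sigma> (\<sigma> u) \<notin> Out"
      using O1'[of u] u by blast
  next
    fix d assume d: "d < 4*n"
    have "d \<notin> {4*n..<6*n}" using d by auto
    then have "\<sigma> d \<in> {4*n..<6*n} \<or> \<sigma> (\<sigma> d) \<in> {4*n..<6*n}"
      using U1'[of d] d by auto
    then show "4*n \<le> \<sigma> d \<or> 4*n \<le> \<sigma> (\<sigma> d)" by auto
    show "\<alpha> d < 4*n" using Uc[of d] d aM[of d] by auto
    show "d \<in> Out \<longleftrightarrow> \<alpha> d \<notin> Out" using Oc d by auto
  next
    show "Out \<subseteq> {..<4*n}" by fact
    show "0 \<in> Out" using y'(10) by auto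
  qed
  have cs: "card (orbits \<sigma> (6*n)) = 2*n"
    using card_orbits_k[OF sp, of 3] y'(2) by auto
  have ca: "card (orbits \<alpha> (6*n)) = 3*n"
    using card_orbits_k[OF ap, of 2] orbit2_iff[OF ap finite_lessThan] af by auto
  show "card (orbits (\<sigma> \<circ> \<alpha>) (6*n)) = n + 2" using y'(1) cs ca unfolding is_planar_map_def by auto
qed

lemma LC_cubic:
  assumes lc: "LC (4*n) (6*n) \<sigma> \<alpha> Out" and cn: "conn (6*n) \<sigma> \<alpha>"
    and F: "card (orbits (\<sigma> \<circ> \<alpha>) (6*n)) = n + 2"
  shows "(\<sigma>, \<alpha>, Ustar n, Out) \<in> cubic_PO n"
proof -
  note sp = lc_sp[OF lc] and ap = lc_ap[OF lc]
  have o3: "\<sigma> (\<sigma> (\<sigma> d)) = d \<and> \<sigma> d \<noteq> d \<and> \<sigma> (\<sigma> d) \<noteq> d \<and> \<sigma> (\<sigma> d) \<noteq> \<sigma> d" if "d < 6*n" for d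
  proof -
    have a: "\<sigma> (\<sigma> (\<sigma> d)) = d" "\<sigma> d \<noteq> d" using lc_s3[OF lc that] lc_sfp[OF lc that] by auto
    have "\<sigma> (\<sigma> d) \<noteq> d" using a lc_sinj[OF lc] by metis
    moreover have "\<sigma> (\<sigma> d) \<noteq> \<sigma> d" using a lc_sinj[OF lc] by metis
    ultimately show ?thesis using a by auto
  qed
  have c3: "card (orbit \<sigma> d) = 3" if "d < 6*n" for d using o3[OF that] orbit3_iff[OF sp finite_lessThan] by auto
  have af: "\<forall>d<6*n. \<alpha> d \<noteq> d \<and> \<alpha> (\<alpha> d) = d" using lc_ainv[OF lc] lc_afp[OF lc] by auto
  have ismap: "is_map (6*n) \<sigma> \<alpha>" unfolding is_map_conn using sp ap af cn by auto
  have cs: "card (orbits \<sigma> (6*n)) = 2*n" using card_orbits_k[OF sp c3] by auto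
  have ca: "card (orbits \<alpha> (6*n)) = 3*n"
    using card_orbits_k[OF ap, of 2] orbit2_iff[OF ap finite_lessThan] af by auto
  have Osub: "Out \<subseteq> {..<4*n}" "0 \<in> Out" using lc_Out[OF lc] by auto
  have rep: "\<exists>u. 4*n \<le> u \<and> u < 6*n \<and> orbit \<sigma> d = orbit \<sigma> u" if d: "d < 6*n" for d
  proof (cases "4*n \<le> d")
    case False
    then obtain u where u: "4*n \<le> u" "u < 6*n" "d = \<sigma> u \<or> d = \<sigma> (\<sigma> u)" using lc_rep[OF lc, of d] by auto
    have "orbit \<sigma> (\<sigma> u) = orbit \<sigma> u" "orbit \<sigma> (\<sigma> (\<sigma> u)) = orbit \<sigma> u"
      using orbit_step[OF sp finite_lessThan] by auto
    then show ?thesis using u by auto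
  qed (use d in auto)
  have cU: "card (orbit \<sigma> u \<inter> {4*n..<6*n}) = 1 \<and> card (orbit \<sigma> u \<inter> Out) = 1"
    if u: "4*n \<le> u" "u < 6*n" for u
  proof -
    have os: "orbit \<sigma> u = {u, \<sigma> u, \<sigma> (\<sigma> u)}" using orbit3_set o3[OF u(2)] by auto
    have l: "\<sigma> u < 4*n" "\<sigma> (\<sigma> u) < 4*n" using lc_U[OF lc u] by auto
    have "u \<notin> Out" using Osub u by auto
    moreover have "\<sigma> u \<in> Out \<longleftrightarrow> \<sigma> (\<sigma> u) \<notin> Out" using lc_UOut[OF lc u] .
    note uo = calculation this
    have ds: "u \<noteq> \<sigma> u" "u \<noteq> \<sigma> (\<sigma> u)" "\<sigma> u \<noteq> \<sigma> (\<sigma> u)" using o3[OF u(2)] by auto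
    have 1: "card ({u, \<sigma> u, \<sigma> (\<sigma> u)} \<inter> {4*n..<6*n}) = 1"
      by (rule card3_one[OF ds, THEN iffD2]) (use u l in auto)
    have 2: "card ({u, \<sigma> u, \<sigma> (\<sigma> u)} \<inter> Out) = 1"
    proof (rule card3_one[OF ds, THEN iffD2])
      show "(u \<in> Out \<and> \<sigma> u \<notin> Out \<and> \<sigma> (\<sigma> u) \<notin> Out) \<or>
        (u \<notin> Out \<and> \<sigma> u \<in> Out \<and> \<sigma> (\<sigma> u) \<notin> Out) \<or>
        (u \<notin> Out \<and> \<sigma> u \<notin> Out \<and> \<sigma> (\<sigma> u) \<in> Out)"
        using uo by (cases "\<sigma> u \<in> Out") blast+
    qed
    show ?thesis unfolding os using 1 2 by simp
  qed
  show ?thesis unfolding cubic_PO_def Ustar_def mem_Collect_eq prod.case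
  proof (intro conjI allI impI)
    show "is_planar_map (6 * n) \<sigma> \<alpha>" unfolding is_planar_map_def using ismap cs ca F by auto
    show "\<And>d. d < 6 * n \<Longrightarrow> card (orbit \<sigma> d) = 3" by (rule c3)
    show "Out \<subseteq> {..<6 * n}" using Osub by auto
    show "{4 * n..<6 * n} \<inter> Out = {}" using Osub by auto
    show "{4 * n..<6 * n} \<subseteq> {..<6 * n}" by auto
    show "card {4 * n..<6 * n} = 2 * n" by simp
    show "0 \<in> Out" using Osub by auto
  next
    fix d assume d: "d < 6*n"
    show "d \<in> {4 * n..<6 * n} \<longleftrightarrow> \<alpha> d \<in> {4 * n..<6 * n}"
      using lc_U[OF lc, of d] lc_anonU[OF lc, of d] d lc_aM[OF lc, of d] by (cases "4*n \<le> d") auto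
  next
    fix d assume d: "d < 6*n" "d \<notin> {4 * n..<6 * n}"
    then have "d < 4*n" by auto
    then show "d \<in> Out \<longleftrightarrow> \<alpha> d \<notin> Out" using lc_aOut[OF lc] by blast
  next
    fix d assume d: "d < 6*n"
    obtain u where u: "4*n \<le> u" "u < 6*n" "orbit \<sigma> d = orbit \<sigma> u" using rep[OF d] by auto
    show "card (orbit \<sigma> d \<inter> {4*n..<6*n}) = 1" using cU[OF u(1,2)] u(3) by simp
    show "card (orbit \<sigma> d \<inter> Out) = 1" using cU[OF u(1,2)] u(3) by simp
  qed
qed

lemma contract_quartic:
  assumes lc: "LC (4*n) (6*n) \<sigma> \<alpha> Out" and cn: "conn (6*n) \<sigma> \<alpha>"
    and F: "card (orbits (\<sigma> \<circ> \<alpha>) (6*n)) = n + 2"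
  shows "(sc (4*n) \<sigma> \<alpha>, ac (4*n) \<alpha>, Out) \<in> quartic_EO n"
proof -
  let ?s = "sc (4*n) \<sigma> \<alpha>" and ?a = "ac (4*n) \<alpha>"
  have sp: "?s permutes {..<4*n}" by (rule sc_permutes[OF lc])
  have ap: "?a permutes {..<4*n}" by (rule ac_permutes[OF lc])
  have af: "\<forall>d<4*n. ?a d \<noteq> d \<and> ?a (?a d) = d"
    using lc_afp[OF lc] lc_ainv[OF lc] lc_anonU[OF lc] by (auto simp: ac_def)
  have cn': "conn (4*n) ?s ?a" by (rule conn_contract[OF lc cn])
  have c4: "card (orbit ?s d) = 4" if "d < 4*n" for d by (rule sc_orbit4[OF lc that])
  have cs: "card (orbits ?s (4*n)) = n" using card_orbits_k[OF sp c4] by auto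
  have ca: "card (orbits ?a (4*n)) = 2*n"
    using card_orbits_k[OF ap, of 2] orbit2_iff[OF ap finite_lessThan] af by auto
  have F': "card (orbits (?s \<circ> ?a) (4*n)) = n + 2" using faces_eq[OF lc] F by simp
  have Osub: "Out \<subseteq> {..<4*n}" "0 \<in> Out" using lc_Out[OF lc] by auto
  show ?thesis unfolding quartic_EO_def
  proof (simp, intro conjI allI impI)
    show "is_planar_map (4 * n) ?s ?a" unfolding is_planar_map_def is_map_conn
      using sp ap af cn' cs ca F' by auto
    show "\<And>d. d < 4 * n \<Longrightarrow> card (orbit ?s d) = 4" by (rule c4)
    show "Out \<subseteq> {..<4 * n}" "0 \<in> Out" using Osub by auto
    fix d assume d: "d < 4*n"
    show "d \<in> Out \<longleftrightarrow> ?a d \<notin> Out" using lc_aOut[OF lc d] d by (simp add: ac_def)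
    show "card (orbit ?s d \<inter> Out) = 2" by (rule sc_orbit_Out[OF lc d])
  qed
qed

lemma quartic_props:
  assumes x: "(\<sigma>, \<alpha>, Out) \<in> quartic_EO n"
  shows "conn (4*n) \<sigma> \<alpha>" "card (orbits (\<sigma> \<circ> \<alpha>) (4*n)) = n + 2"
proof -
  note x' = quartic_EO_E[OF x]
  have sp: "\<sigma> permutes {..<4*n}" and ap: "\<alpha> permutes {..<4*n}"
    and af: "\<forall>d<4*n. \<alpha> d \<noteq> d \<and> \<alpha> (\<alpha> d) = d" and cn: "conn (4*n) \<sigma> \<alpha>"
    using x'(1) unfolding is_planar_map_def is_map_conn by auto
  show "conn (4*n) \<sigma> \<alpha>" by (rule cn)
  have cs: "card (orbits \<sigma> (4*n)) = n" using card_orbits_k[OF sp, of 4] x'(2) by auto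
  have ca: "card (orbits \<alpha> (4*n)) = 2*n"
    using card_orbits_k[OF ap, of 2] orbit2_iff[OF ap finite_lessThan] af by auto
  show "card (orbits (\<sigma> \<circ> \<alpha>) (4*n)) = n + 2" using x'(1) cs ca unfolding is_planar_map_def by auto
qed


definition expS :: "nat \<Rightarrow> (nat \<Rightarrow> nat) \<Rightarrow> (nat \<Rightarrow> nat) \<Rightarrow> nat \<Rightarrow> nat" where
  "expS n s p d = (if d \<in> Ustar n then s (s (s (p d)))
     else if d \<in> p ` Ustar n then inv_into (Ustar n) p d else s d)"

definition expA :: "nat \<Rightarrow> (nat \<Rightarrow> nat) \<Rightarrow> (nat \<Rightarrow> nat) \<Rightarrow> (nat \<Rightarrow> nat) \<Rightarrow> nat \<Rightarrow> nat" where
  "expA n s a p d = (if d \<in> Ustar n then inv_into (Ustar n) p (s (s (p d))) else a d)"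

definition Valid :: "nat \<Rightarrow> (nat \<Rightarrow> nat) \<Rightarrow> nat set \<Rightarrow> (nat \<Rightarrow> nat) set" where
  "Valid n s Out = {p \<in> Ustar n \<rightarrow>\<^sub>E {..<4*n}. inj_on p (Ustar n) \<and>
     (\<forall>d<4*n. d \<in> p ` Ustar n \<longleftrightarrow> s d \<notin> p ` Ustar n) \<and>
     (\<forall>u\<in>Ustar n. p u \<in> Out \<longleftrightarrow> s (s (s (p u))) \<notin> Out)}"

lemma Ustar_iff: "u \<in> Ustar n \<longleftrightarrow> 4*n \<le> u \<and> u < 6*n" unfolding Ustar_def by auto

context
  fixes n s a Out p
  assumes x: "(s, a, Out) \<in> quartic_EO n" and pv: "p \<in> Valid n s Out"
begin

lemma x_sp: "s permutes {..<4*n}" and x_ap: "a permutes {..<4*n}"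
  and x_af: "\<forall>d<4*n. a d \<noteq> d \<and> a (a d) = d"
  using quartic_EO_E(1)[OF x] unfolding is_planar_map_def is_map_conn by auto

lemma x_s4: "d < 4*n \<Longrightarrow> s (s (s (s d))) = d \<and> s d \<noteq> d \<and> s (s d) \<noteq> d \<and> s (s (s d)) \<noteq> d"
  using quartic_EO_E(2)[OF x] orbit4_iff[OF x_sp finite_lessThan] by blast

lemma x_slt: "s d < 4*n \<longleftrightarrow> d < 4*n" using permutes_in_image[OF x_sp] by simp
lemma x_alt: "a d < 4*n \<longleftrightarrow> d < 4*n" using permutes_in_image[OF x_ap] by simp
lemma x_sout: "\<not> d < 4*n \<Longrightarrow> s d = d" using permutes_not_in[OF x_sp] by simp
lemma x_aout: "\<not> d < 4*n \<Longrightarrow> a d = d" using permutes_not_in[OF x_ap] by simp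

lemma p_in: "u \<in> Ustar n \<Longrightarrow> p u < 4*n" using pv unfolding Valid_def by auto
lemma p_ext: "u \<notin> Ustar n \<Longrightarrow> p u = undefined" using pv unfolding Valid_def by auto
lemma p_inj: "inj_on p (Ustar n)" using pv unfolding Valid_def by auto
lemma p_alt: "d < 4*n \<Longrightarrow> d \<in> p ` Ustar n \<longleftrightarrow> s d \<notin> p ` Ustar n"
  using pv unfolding Valid_def by blast
lemma p_out: "u \<in> Ustar n \<Longrightarrow> p u \<in> Out \<longleftrightarrow> s (s (s (p u))) \<notin> Out"
  using pv unfolding Valid_def by blast

lemma q_p: "u \<in> Ustar n \<Longrightarrow> inv_into (Ustar n) p (p u) = u"
  using inv_into_f_f[OF p_inj] by simp
lemma p_q: "d \<in> p ` Ustar n \<Longrightarrow> p (inv_into (Ustar n) p d) = d \<and> inv_into (Ustar n) p d \<in> Ustar n"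
  using f_inv_into_f inv_into_into by metis

lemma P_lt: "d \<in> p ` Ustar n \<Longrightarrow> d < 4*n" using p_in by auto

lemma P_s2: "d \<in> p ` Ustar n \<Longrightarrow> s (s d) \<in> p ` Ustar n"
proof -
  assume d: "d \<in> p ` Ustar n"
  then have dl: "d < 4*n" by (rule P_lt)
  then have "s d \<notin> p ` Ustar n" using p_alt d by blast
  moreover have "s d < 4*n" using dl x_slt by simp
  ultimately show ?thesis using p_alt by blast
qed

lemma P_s3: "u \<in> Ustar n \<Longrightarrow> s (s (s (p u))) \<notin> p ` Ustar n"
proof -
  assume u: "u \<in> Ustar n"
  have l: "s (s (s (p u))) < 4*n" using p_in[OF u] x_slt by simp
  have "s (s (s (s (p u)))) = p u" using x_s4[OF p_in[OF u]] by simp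
  then have "s (s (s (s (p u)))) \<in> p ` Ustar n" using u by auto
  then show ?thesis using p_alt[OF l] by blast
qed

abbreviation "eS \<equiv> expS n s p"
abbreviation "eA \<equiv> expA n s a p"

lemma S_U: "u \<in> Ustar n \<Longrightarrow> eS u = s (s (s (p u)))" by (simp add: expS_def)
lemma S_P: "d \<in> p ` Ustar n \<Longrightarrow> d \<notin> Ustar n \<and> eS d = inv_into (Ustar n) p d"
  using P_lt Ustar_iff by (force simp: expS_def)
lemma S_o: "d \<notin> Ustar n \<Longrightarrow> d \<notin> p ` Ustar n \<Longrightarrow> eS d = s d" by (simp add: expS_def)

lemma S_pu: "u \<in> Ustar n \<Longrightarrow> eS (p u) = u" using S_P q_p by auto

lemma S_Su: "u \<in> Ustar n \<Longrightarrow> eS (eS u) = p u"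
proof -
  assume u: "u \<in> Ustar n"
  have 1: "eS u = s (s (s (p u)))" by (rule S_U[OF u])
  have l: "s (s (s (p u))) < 4*n" using p_in[OF u] x_slt by simp
  then have 2: "s (s (s (p u))) \<notin> Ustar n" using Ustar_iff by auto
  have 3: "s (s (s (p u))) \<notin> p ` Ustar n" by (rule P_s3[OF u])
  have "eS (eS u) = s (s (s (s (p u))))" unfolding 1 using S_o[OF 2 3] .
  then show ?thesis using x_s4[OF p_in[OF u]] by simp
qed

lemma S3: "d < 6*n \<Longrightarrow> eS (eS (eS d)) = d \<and> eS d \<noteq> d"
proof -
  assume dM: "d < 6*n"
  show ?thesis
  proof (cases "d \<in> Ustar n")
    case True
    have "eS d < 4*n" using S_U[OF True] p_in[OF True] x_slt by simp
    then show ?thesis using S_Su[OF True] S_pu[OF True] True Ustar_iff by auto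
  next
    case nU: False
    then have d4: "d < 4*n" using dM Ustar_iff by auto
    show ?thesis
    proof (cases "d \<in> p ` Ustar n")
      case True
      then obtain u where u: "u \<in> Ustar n" "d = p u" by auto
      then show ?thesis using S_pu[OF u(1)] S_Su[OF u(1)] nU by auto
    next
      case False
      then have "s d \<in> p ` Ustar n" using p_alt[OF d4] by blast
      then obtain u where u: "u \<in> Ustar n" "s d = p u" by auto
      have Sd: "eS d = s d" using S_o[OF nU False] .
      have "eS (eS (eS d)) = eS (eS (p u))" using Sd u by simp
      also have "\<dots> = eS u" using S_pu[OF u(1)] by simp
      also have "\<dots> = s (s (s (s d)))" using S_U[OF u(1)] u(2) by simp
      also have "\<dots> = d" using x_s4[OF d4] by simp
      finally show ?thesis using Sd x_s4[OF d4] by auto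
    qed
  qed
qed

lemma S_lt: "eS d < 6*n \<longleftrightarrow> d < 6*n"
proof
  assume d: "d < 6*n"
  show "eS d < 6*n"
  proof (cases "d \<in> Ustar n")
    case True
    have "s (s (s (p d))) < 4*n" using p_in[OF True] x_slt by simp
    then show ?thesis using S_U[OF True] by simp
  next
    case False
    then have d4: "d < 4*n" using d Ustar_iff by auto
    show ?thesis
    proof (cases "d \<in> p ` Ustar n")
      case True then show ?thesis using S_P p_q Ustar_iff by auto
    next
      case F: False
      have "s d < 4*n" using x_slt d4 by simp
      then show ?thesis using S_o[OF False F] by simp
    qed
  qed
next
  assume "eS d < 6*n"
  show "d < 6*n"
  proof (rule ccontr)
    assume d: "\<not> d < 6*n"
    have 1: "d \<notin> Ustar n" using d by (simp add: Ustar_iff)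
    have 2: "d \<notin> p ` Ustar n"
    proof
      assume "d \<in> p ` Ustar n"
      then have "d < 4*n" by (rule P_lt)
      with d show False by simp
    qed
    have "eS d = d" using S_o[OF 1 2] x_sout d by simp
    then show False using \<open>eS d < 6*n\<close> d by simp
  qed
qed

lemma S_out: "\<not> d < 6*n \<Longrightarrow> eS d = d"
proof -
  assume d: "\<not> d < 6*n"
  have 1: "d \<notin> Ustar n" using d by (simp add: Ustar_iff)
  have 2: "d \<notin> p ` Ustar n"
  proof
    assume "d \<in> p ` Ustar n"
    then have "d < 4*n" by (rule P_lt)
    with d show False by simp
  qed
  show "eS d = d" using S_o[OF 1 2] x_sout d by simp
qed

lemma S_permutes: "eS permutes {..<6*n}"
proof (rule bij_imp_permutes)
  show "bij_betw eS {..<6*n} {..<6*n}"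
    by (rule bij_betwI[where g = "\<lambda>d. eS (eS d)"]) (use S_lt S3 in auto)
qed (simp add: S_out)

lemma A_U: "u \<in> Ustar n \<Longrightarrow> eA u \<in> Ustar n \<and> p (eA u) = s (s (p u))"
proof -
  assume u: "u \<in> Ustar n"
  have "s (s (p u)) \<in> p ` Ustar n" using P_s2 u by auto
  then show ?thesis using p_q u by (simp add: expA_def)
qed

lemma A_AU: "u \<in> Ustar n \<Longrightarrow> eA (eA u) = u \<and> eA u \<noteq> u"
proof -
  assume u: "u \<in> Ustar n"
  note 1 = A_U[OF u]
  note 2 = A_U[OF 1[THEN conjunct1]]
  have "p (eA (eA u)) = s (s (s (s (p u))))" using 1 2 by simp
  also have "\<dots> = p u" using x_s4[OF p_in[OF u]] by simp
  finally have "eA (eA u) = u" using p_inj 1 2 u by (auto dest: inj_onD)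
  moreover have "eA u \<noteq> u"
  proof
    assume "eA u = u"
    then have "s (s (p u)) = p u" using 1 by simp
    then show False using x_s4[OF p_in[OF u]] by simp
  qed
  ultimately show ?thesis by simp
qed

lemma A_o: "u \<notin> Ustar n \<Longrightarrow> eA u = a u" by (simp add: expA_def)

lemma A_lt: "eA d < 6*n \<longleftrightarrow> d < 6*n"
proof (cases "d \<in> Ustar n")
  case True
  then have "eA d \<in> Ustar n" using A_U by auto
  then show ?thesis using True Ustar_iff by auto
next
  case False
  then have Ad: "eA d = a d" by (rule A_o)
  show ?thesis
  proof (cases "d < 4*n")
    case True
    then have "a d < 4*n" using x_alt by simp
    then show ?thesis using Ad True by simp
  next
    case F: False
    then have "a d = d" using x_aout by simp
    then show ?thesis using Ad by simp
  qed
qed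

lemma A_permutes: "eA permutes {..<6*n}"
proof (rule bij_imp_permutes)
  have inv: "eA (eA d) = d" if "d < 6*n" for d
  proof (cases "d \<in> Ustar n")
    case True then show ?thesis using A_AU by auto
  next
    case False
    then have d4: "d < 4*n" using that Ustar_iff by auto
    then have "a d < 4*n" using x_alt by simp
      then have "a d \<notin> Ustar n" using Ustar_iff by auto
    then show ?thesis using A_o False x_af d4 by auto
  qed
  show "bij_betw eA {..<6*n} {..<6*n}"
    by (rule bij_betwI[where g = eA]) (use A_lt inv in auto)
qed (use A_o x_aout Ustar_iff in auto)

lemma expand_LC: "LC (4*n) (6*n) eS eA Out"
  unfolding LC_def
proof (intro conjI allI impI)
  show "4*n \<le> 6*n" by simp
  show "eS permutes {..<6*n}" by (rule S_permutes)
  show "eA permutes {..<6*n}" by (rule A_permutes)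
  fix d assume d: "d < 6*n"
  show "eA d \<noteq> d" "eA (eA d) = d"
  proof -
    have "eA d \<noteq> d \<and> eA (eA d) = d"
    proof (cases "d \<in> Ustar n")
      case True then show ?thesis using A_AU by auto
    next
      case False
      then have d4: "d < 4*n" using d Ustar_iff by auto
      then have "a d < 4*n" using x_alt by simp
      then have "a d \<notin> Ustar n" using Ustar_iff by auto
      then show ?thesis using A_o False x_af d4 by auto
    qed
    then show "eA d \<noteq> d" "eA (eA d) = d" by auto
  qed
  show "eS (eS (eS d)) = d" "eS d \<noteq> d" using S3[OF d] by auto
next
  fix u assume u: "4*n \<le> u \<and> u < 6*n"
  then have uU: "u \<in> Ustar n" using Ustar_iff by auto
  show "eS u < 4*n" using S_U[OF uU] p_in[OF uU] x_slt by simp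
  show "eS (eS u) < 4*n" using S_Su[OF uU] p_in[OF uU] by simp
  show "4*n \<le> eA u" using A_U[OF uU] Ustar_iff by auto
  have "eS u \<in> Out \<longleftrightarrow> s (s (s (p u))) \<in> Out" using S_U[OF uU] by simp
  then show "eS u \<in> Out \<longleftrightarrow> eS (eS u) \<notin> Out" using S_Su[OF uU] p_out[OF uU] by simp
next
  fix d assume d: "d < 4*n"
  then have nU: "d \<notin> Ustar n" using Ustar_iff by auto
  show "4*n \<le> eS d \<or> 4*n \<le> eS (eS d)"
  proof (cases "d \<in> p ` Ustar n")
    case True
    then show ?thesis using S_P p_q Ustar_iff by auto
  next
    case False
    then have "s d \<in> p ` Ustar n" using p_alt[OF d] by blast
    moreover have "eS d = s d" using S_o[OF nU False] .
    ultimately show ?thesis using S_P p_q Ustar_iff by auto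
  qed
  show "eA d < 4*n" using A_o[OF nU] x_alt d by simp
  show "d \<in> Out \<longleftrightarrow> eA d \<notin> Out" using A_o[OF nU] quartic_EO_E(4)[OF x] d by auto
next
  show "Out \<subseteq> {..<4*n}" "0 \<in> Out" using quartic_EO_E(3,6)[OF x] by auto
qed

lemma contract_expand_s: "sc (4*n) eS eA = s"
proof
  fix d show "sc (4*n) eS eA d = s d"
  proof (cases "d < 4*n")
    case False then show ?thesis using x_sout by (simp add: sc_def)
  next
    case d: True
    then have nU: "d \<notin> Ustar n" using Ustar_iff by auto
    show ?thesis
    proof (cases "d \<in> p ` Ustar n")
      case False
      then have "eS d = s d" using S_o[OF nU] by simp
      then show ?thesis using d x_slt by (simp add: sc_def)
    next
      case True
      then obtain u where u: "u \<in> Ustar n" "d = p u" by auto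
      have Sd: "eS d = u" using S_pu[OF u(1)] u by simp
      have "\<not> u < 4*n" using u Ustar_iff by auto
      then have "sc (4*n) eS eA d = eS (eA u)" using d Sd by (simp add: sc_def)
      also have "\<dots> = s (s (s (p (eA u))))" using S_U A_U[OF u(1)] by simp
      also have "\<dots> = s (s (s (s (s (p u)))))" using A_U[OF u(1)] by simp
      also have "\<dots> = s d" using x_s4[OF p_in[OF u(1)]] u by simp
      finally show ?thesis .
    qed
  qed
qed

lemma contract_expand_a: "ac (4*n) eA = a"
proof
  fix d show "ac (4*n) eA d = a d"
    using A_o Ustar_iff x_aout by (cases "d < 4*n") (auto simp: ac_def)
qed

lemma pof_expand: "restrict (\<lambda>u. eS (eS u)) (Ustar n) = p"
proof
  fix u show "restrict (\<lambda>u. eS (eS u)) (Ustar n) u = p u"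
    using S_Su p_ext by (cases "u \<in> Ustar n") auto
qed

lemma expand_Ycub: "(eS, eA, Ustar n, Out) \<in> cubic_PO n"
proof (rule LC_cubic[OF expand_LC])
  have lc: "LC (4*n) (6*n) eS eA Out" by (rule expand_LC)
  have "conn (4*n) s a" using quartic_props(1)[OF x] .
  then show "conn (6*n) eS eA" using conn_expand[OF lc] contract_expand_s contract_expand_a by simp
  have "card (orbits (eS \<circ> eA) (6*n)) = card (orbits (sc (4*n) eS eA \<circ> ac (4*n) eA) (4*n))"
    by (rule faces_eq[OF lc])
  then show "card (orbits (eS \<circ> eA) (6*n)) = n + 2"
    using quartic_props(2)[OF x] contract_expand_s contract_expand_a by simp
qed

end


context
  fixes n \<sigma> \<alpha> Out
  assumes y: "(\<sigma>, \<alpha>, Ustar n, Out) \<in> cubic_PO n"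
begin

lemma y_LC: "LC (4*n) (6*n) \<sigma> \<alpha> Out" using cubic_LC(1)[OF y] .

abbreviation "cS \<equiv> sc (4*n) \<sigma> \<alpha>"
abbreviation "cA \<equiv> ac (4*n) \<alpha>"
abbreviation "cP \<equiv> restrict (\<lambda>u. \<sigma> (\<sigma> u)) (Ustar n)"

lemma contract_Q: "(cS, cA, Out) \<in> quartic_EO n"
  using contract_quartic[OF cubic_LC[OF y]] .

lemma yU: "u \<in> Ustar n \<Longrightarrow> \<sigma> u < 4*n \<and> \<sigma> (\<sigma> u) < 4*n \<and> \<alpha> u \<in> Ustar n \<and> \<alpha> (\<alpha> u) = u \<and> \<sigma> (\<sigma> (\<sigma> u)) = u"
  using lc_U[OF y_LC, of u] lc_ainv[OF y_LC, of u] lc_s3[OF y_LC, of u] Ustar_iff by auto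

lemma y_s3: "d < 6*n \<Longrightarrow> \<sigma> (\<sigma> (\<sigma> d)) = d" using lc_s3[OF y_LC] .
lemma y_sM: "\<sigma> d < 6*n \<longleftrightarrow> d < 6*n" using lc_sM[OF y_LC] .

lemma s3p: "u \<in> Ustar n \<Longrightarrow> cS (\<sigma> (\<sigma> u)) = \<sigma> (\<alpha> u) \<and> cS (\<sigma> (\<alpha> u)) = \<sigma> (\<sigma> (\<alpha> u))
    \<and> cS (\<sigma> (\<sigma> (\<alpha> u))) = \<sigma> u \<and> cS (\<sigma> u) = \<sigma> (\<sigma> u)"
proof -
  assume u: "u \<in> Ustar n"
  have u': "4*n \<le> u" "u < 6*n" using u Ustar_iff by auto
  have au: "4*n \<le> \<alpha> u" "\<alpha> u < 6*n" using yU[OF u] Ustar_iff by auto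
  show ?thesis using sc_U1[OF y_LC u'] sc_U2[OF y_LC u'] sc_U1[OF y_LC au] sc_U2[OF y_LC au] yU[OF u] by simp
qed

lemma P_char: "d < 4*n \<Longrightarrow> d \<in> cP ` Ustar n \<longleftrightarrow> 4*n \<le> \<sigma> d"
proof
  assume d: "d < 4*n" and "d \<in> cP ` Ustar n"
  then obtain u where u: "u \<in> Ustar n" "d = \<sigma> (\<sigma> u)" by auto
  then show "4*n \<le> \<sigma> d" using yU[OF u(1)] Ustar_iff by auto
next
  assume d: "d < 4*n" and cS: "4*n \<le> \<sigma> d"
  have dM: "d < 6*n" using d by simp
  have "\<sigma> d \<in> Ustar n" using cS y_sM dM Ustar_iff by auto
  moreover have "cP (\<sigma> d) = d" using calculation y_s3[OF dM] by simp
  ultimately show "d \<in> cP ` Ustar n" by (metis image_eqI)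
qed

lemma pof_Valid: "cP \<in> Valid n cS Out"
  unfolding Valid_def
proof (intro CollectI conjI ballI allI impI)
  show "cP \<in> Ustar n \<rightarrow>\<^sub>E {..<4*n}" using yU by auto
  show "inj_on cP (Ustar n)"
    using lc_sinj[OF y_LC] by (auto intro!: inj_onI)
next
  fix d assume d: "d < 4*n"
  have dM: "d < 6*n" using d by simp
  obtain u where u: "4*n \<le> u" "u < 6*n" "d = \<sigma> u \<or> d = \<sigma> (\<sigma> u)" using lc_rep[OF y_LC d] by blast
  have uU: "u \<in> Ustar n" using u Ustar_iff by auto
  note S = s3p[OF uU] and Y = yU[OF uU]
  have l1: "\<sigma> (\<sigma> (\<alpha> u)) < 4*n" using yU[of "\<alpha> u"] Y by auto
  have l2: "\<sigma> (\<alpha> u) < 4*n" using yU[of "\<alpha> u"] Y by auto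
  show "d \<in> cP ` Ustar n \<longleftrightarrow> cS d \<notin> cP ` Ustar n"
  proof (cases "d = \<sigma> u")
    case True
    have "d \<notin> cP ` Ustar n" using P_char[OF d] True Y by auto
    moreover have "cS d \<in> cP ` Ustar n" using P_char[of "\<sigma> (\<sigma> u)"] True S Y u by auto
    ultimately show ?thesis by simp
  next
    case False
    then have dd: "d = \<sigma> (\<sigma> u)" using u by auto
    have "d \<in> cP ` Ustar n" using P_char[OF d] dd Y u by auto
    moreover have "cS d \<notin> cP ` Ustar n" using P_char[OF l2] dd S l1 by auto
    ultimately show ?thesis by simp
  qed
next
  fix u assume u: "u \<in> Ustar n"
  note S = s3p[OF u]
  have "cS (cS (cS (cP u))) = \<sigma> u" using S u by simp
  then show "cP u \<in> Out \<longleftrightarrow> cS (cS (cS (cP u))) \<notin> Out"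
    using lc_UOut[OF y_LC, of u] u Ustar_iff by auto
qed

lemma expand_contract_s: "expS n cS cP = \<sigma>"
proof
  fix d show "expS n cS cP d = \<sigma> d"
  proof (cases "d \<in> Ustar n")
    case True
    then show ?thesis using s3p[OF True] by (simp add: expS_def)
  next
    case nU: False
    show ?thesis
    proof (cases "d \<in> cP ` Ustar n")
      case True
      then obtain u where u: "u \<in> Ustar n" "d = \<sigma> (\<sigma> u)" by auto
      have "\<sigma> d = u" using u yU by simp
      moreover have "inv_into (Ustar n) cP d = u"
        by (rule inv_into_f_eq) (use u lc_sinj[OF y_LC] in \<open>auto intro!: inj_onI\<close>)
      ultimately show ?thesis using nU True by (simp add: expS_def)
    next
      case False
      show ?thesis
      proof (cases "d < 4*n")
        case True
        then have "\<sigma> d < 4*n" using P_char False by auto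
        then show ?thesis using nU False True by (simp add: expS_def sc_def)
      next
        case F: False
        then have "\<not> d < 6*n" using nU Ustar_iff by auto
        then have "\<sigma> d = d" using permutes_not_in[OF lc_sp[OF y_LC]] by simp
        then show ?thesis using nU False F by (simp add: expS_def sc_def)
      qed
    qed
  qed
qed

lemma expand_contract_a: "expA n cS cA cP = \<alpha>"
proof
  fix d show "expA n cS cA cP d = \<alpha> d"
  proof (cases "d \<in> Ustar n")
    case True
    note Y = yU[OF True]
    have "cS (cS (cP d)) = \<sigma> (\<sigma> (\<alpha> d))" using s3p[OF True] True by simp
    also have "\<dots> = cP (\<alpha> d)" using Y by simp
    finally have "inv_into (Ustar n) cP (cS (cS (cP d))) = \<alpha> d"
      using inv_into_f_f[of cP "Ustar n" "\<alpha> d"] lc_sinj[OF y_LC] Y by (auto intro!: inj_onI)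
    then show ?thesis using True by (simp add: expA_def)
  next
    case False
    show ?thesis
    proof (cases "d < 4*n")
      case True then show ?thesis using False by (simp add: expA_def ac_def)
    next
      case F: False
      then have "\<not> d < 6*n" using False Ustar_iff by auto
      then have "\<alpha> d = d" using permutes_not_in[OF lc_ap[OF y_LC]] by simp
      then show ?thesis using False F by (simp add: expA_def ac_def)
    qed
  qed
qed


lemma orbit_u: "u \<in> Ustar n \<Longrightarrow> orbit \<sigma> u = {u, \<sigma> u, \<sigma> (\<sigma> u)}"
  using orbit3_set yU by auto

lemma orbits_U: "orbits \<sigma> (6*n) = (\<lambda>u. orbit \<sigma> u) ` Ustar n"
proof
  show "(\<lambda>u. orbit \<sigma> u) ` Ustar n \<subseteq> orbits \<sigma> (6*n)" unfolding orbits_def by (auto simp: Ustar_iff)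
  show "orbits \<sigma> (6*n) \<subseteq> (\<lambda>u. orbit \<sigma> u) ` Ustar n"
  proof
    fix v assume "v \<in> orbits \<sigma> (6*n)"
    then obtain d where d: "d < 6*n" "v = orbit \<sigma> d" unfolding orbits_def by auto
    have "\<exists>u\<in>Ustar n. orbit \<sigma> d = orbit \<sigma> u"
    proof (cases "4*n \<le> d")
      case True then show ?thesis using d Ustar_iff by auto
    next
      case False
      then obtain u where u: "4*n \<le> u" "u < 6*n" "d = \<sigma> u \<or> d = \<sigma> (\<sigma> u)"
        using lc_rep[OF y_LC, of d] by auto
      have "orbit \<sigma> (\<sigma> u) = orbit \<sigma> u" "orbit \<sigma> (\<sigma> (\<sigma> u)) = orbit \<sigma> u"
        using orbit_step[OF lc_sp[OF y_LC] finite_lessThan] by auto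
      then show ?thesis using u Ustar_iff by auto
    qed
    then show "v \<in> (\<lambda>u. orbit \<sigma> u) ` Ustar n" using d by auto
  qed
qed

lemma orbit_inj: "inj_on (\<lambda>u. orbit \<sigma> u) (Ustar n)"
proof (rule inj_onI)
  fix u u' assume u: "u \<in> Ustar n" "u' \<in> Ustar n" "orbit \<sigma> u = orbit \<sigma> u'"
  then have "u' \<in> {u, \<sigma> u, \<sigma> (\<sigma> u)}" using orbit_u self_in_orbit by metis
  then show "u = u'" using yU[OF u(1)] u(2) Ustar_iff by auto
qed

lemma num_left: "num_left_turn (6*n) \<sigma> (Ustar n) Out = card {u \<in> Ustar n. \<sigma> (\<sigma> u) \<in> Out}"
proof -
  have "num_left_turn (6*n) \<sigma> (Ustar n) Out =
     card {u \<in> Ustar n. \<exists>d\<in>orbit \<sigma> u. d \<notin> Ustar n \<and> d \<notin> Out \<and> \<sigma> d \<in> Out}"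
    unfolding num_left_turn_def orbits_U by (rule card_filter_img[OF orbit_inj])
  also have "{u \<in> Ustar n. \<exists>d\<in>orbit \<sigma> u. d \<notin> Ustar n \<and> d \<notin> Out \<and> \<sigma> d \<in> Out} =
      {u \<in> Ustar n. \<sigma> (\<sigma> u) \<in> Out}"
  proof -
    have "(\<exists>d\<in>orbit \<sigma> u. d \<notin> Ustar n \<and> d \<notin> Out \<and> \<sigma> d \<in> Out) \<longleftrightarrow> \<sigma> (\<sigma> u) \<in> Out"
      if u: "u \<in> Ustar n" for u
    proof -
      have Y: "\<sigma> u < 4*n" "\<sigma> (\<sigma> u) < 4*n" "\<sigma> (\<sigma> (\<sigma> u)) = u" using yU[OF u] by auto
      have uO: "u \<notin> Out" using lc_Out(1)[OF y_LC] u Ustar_iff by auto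
      have iff: "\<sigma> u \<in> Out \<longleftrightarrow> \<sigma> (\<sigma> u) \<notin> Out" using lc_UOut[OF y_LC, of u] u Ustar_iff by auto
      have nU: "\<sigma> u \<notin> Ustar n" using Y Ustar_iff by auto
      show ?thesis unfolding orbit_u[OF u] using Y uO iff nU u by auto
    qed
    then show ?thesis by auto
  qed
  finally show ?thesis .
qed

lemma num_right: "num_right_turn (6*n) \<sigma> (Ustar n) Out = card {u \<in> Ustar n. \<sigma> (\<sigma> u) \<notin> Out}"
proof -
  have "num_right_turn (6*n) \<sigma> (Ustar n) Out =
     card {u \<in> Ustar n. \<exists>d\<in>orbit \<sigma> u. d \<in> Out \<and> \<sigma> d \<notin> Ustar n \<and> \<sigma> d \<notin> Out}"
    unfolding num_right_turn_def orbits_U by (rule card_filter_img[OF orbit_inj])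
  also have "{u \<in> Ustar n. \<exists>d\<in>orbit \<sigma> u. d \<in> Out \<and> \<sigma> d \<notin> Ustar n \<and> \<sigma> d \<notin> Out} =
      {u \<in> Ustar n. \<sigma> (\<sigma> u) \<notin> Out}"
  proof -
    have "(\<exists>d\<in>orbit \<sigma> u. d \<in> Out \<and> \<sigma> d \<notin> Ustar n \<and> \<sigma> d \<notin> Out) \<longleftrightarrow> \<sigma> (\<sigma> u) \<notin> Out"
      if u: "u \<in> Ustar n" for u
    proof -
      have Y: "\<sigma> u < 4*n" "\<sigma> (\<sigma> u) < 4*n" "\<sigma> (\<sigma> (\<sigma> u)) = u" using yU[OF u] by auto
      have uO: "u \<notin> Out" using lc_Out(1)[OF y_LC] u Ustar_iff by auto
      have iff: "\<sigma> u \<in> Out \<longleftrightarrow> \<sigma> (\<sigma> u) \<notin> Out" using lc_UOut[OF y_LC, of u] u Ustar_iff by auto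
      have nU: "\<sigma> (\<sigma> u) \<notin> Ustar n" using Y Ustar_iff by auto
      show ?thesis unfolding orbit_u[OF u] using Y uO iff nU u by auto
    qed
    then show ?thesis by auto
  qed
  finally show ?thesis .
qed

lemma wC_prod:
  assumes w: "\<omega> \<noteq> 0"
  shows "wC \<omega> (6*n) (\<sigma>, \<alpha>, Ustar n, Out) = (\<Prod>u\<in>Ustar n. if \<sigma> (\<sigma> u) \<in> Out then \<omega> else inverse \<omega>)"
proof -
  let ?A = "{u \<in> Ustar n. \<sigma> (\<sigma> u) \<in> Out}" and ?B = "{u \<in> Ustar n. \<sigma> (\<sigma> u) \<notin> Out}"
  have "(\<Prod>u\<in>Ustar n. if \<sigma> (\<sigma> u) \<in> Out then \<omega> else inverse \<omega>) =
      (\<Prod>u\<in>?A. \<omega>) * (\<Prod>u\<in>?B. inverse \<omega>)"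
  proof -
    have e: "Ustar n \<inter> {x. \<sigma> (\<sigma> x) \<in> Out} = ?A" "Ustar n \<inter> - {x. \<sigma> (\<sigma> x) \<in> Out} = ?B" by auto
    have f: "finite (Ustar n)" unfolding Ustar_def by simp
    show ?thesis by (subst prod.If_cases[OF f]) (simp add: e)
  qed
  also have "\<dots> = \<omega> ^ card ?A * inverse \<omega> ^ card ?B" by simp
  also have "\<dots> = \<omega> powi (int (card ?A) - int (card ?B))"
    using w by (simp add: power_int_diff power_inverse field_simps)
  finally show ?thesis unfolding wC_def prod.case using num_left num_right by simp
qed

end


lemma finite_Valid: "finite (Valid n s Out)"
proof -
  have "Valid n s Out \<subseteq> Ustar n \<rightarrow>\<^sub>E {..<4*n}" unfolding Valid_def by auto
  moreover have "finite (Ustar n \<rightarrow>\<^sub>E {..<4*n})" by (rule finite_PiE) (auto simp: Ustar_def)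
  ultimately show ?thesis using finite_subset by blast
qed

lemma sum_Ycub:
  assumes w: "\<omega> \<noteq> 0"
  shows "(\<Sum>y\<in>Ycub n. wC \<omega> (6*n) y) =
    (\<Sum>x\<in>quartic_EO n. case x of (s, a, Out) \<Rightarrow>
       \<Sum>p\<in>Valid n s Out. \<Prod>u\<in>Ustar n. if p u \<in> Out then \<omega> else inverse \<omega>)"
proof -
  define T where "T = Sigma (quartic_EO n) (\<lambda>x. case x of (s, a, Out) \<Rightarrow> Valid n s Out)"
  define \<Phi> where "\<Phi> xp = (case xp of ((s, a, Out :: nat set), p) \<Rightarrow> (expS n s p, expA n s a p, Ustar n, Out))" for xp
  define \<Psi> where "\<Psi> y = (case y of (\<sigma>, \<alpha>, U :: nat set, Out :: nat set) \<Rightarrow>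
     ((sc (4*n) \<sigma> \<alpha>, ac (4*n) \<alpha>, Out), restrict (\<lambda>u. \<sigma> (\<sigma> u)) (Ustar n)))" for y
  have bij: "bij_betw \<Phi> T (Ycub n)"
  proof (rule bij_betwI[where g = \<Psi>])
    show "\<Phi> \<in> T \<rightarrow> Ycub n"
    proof
      fix xp assume "xp \<in> T"
      then obtain s a Out p where xp: "xp = ((s, a, Out), p)" "(s, a, Out) \<in> quartic_EO n" "p \<in> Valid n s Out"
        unfolding T_def by auto
      show "\<Phi> xp \<in> Ycub n" using expand_Ycub[OF xp(2,3)] xp(1) unfolding \<Phi>_def Ycub_def by simp
    qed
    show "\<Psi> \<in> Ycub n \<rightarrow> T"
    proof
      fix y assume "y \<in> Ycub n"
      then obtain \<sigma> \<alpha> Out where y: "y = (\<sigma>, \<alpha>, Ustar n, Out)" "(\<sigma>, \<alpha>, Ustar n, Out) \<in> cubic_PO n"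
        unfolding Ycub_def by (cases y) auto
      show "\<Psi> y \<in> T" using contract_Q[OF y(2)] pof_Valid[OF y(2)] y(1) unfolding \<Psi>_def T_def by simp
    qed
    show "\<Psi> (\<Phi> xp) = xp" if xT: "xp \<in> T" for xp
    proof -
      obtain s a Out p where xp: "xp = ((s, a, Out), p)" "(s, a, Out) \<in> quartic_EO n" "p \<in> Valid n s Out"
        using xT unfolding T_def by auto
      show ?thesis using contract_expand_s[OF xp(2,3)] contract_expand_a[OF xp(2,3)] pof_expand[OF xp(2,3)] xp(1)
        unfolding \<Phi>_def \<Psi>_def by simp
    qed
    show "\<Phi> (\<Psi> y) = y" if yY: "y \<in> Ycub n" for y
    proof -
      obtain \<sigma> \<alpha> Out where y: "y = (\<sigma>, \<alpha>, Ustar n, Out)" "(\<sigma>, \<alpha>, Ustar n, Out) \<in> cubic_PO n"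
        using yY unfolding Ycub_def by (cases y) auto
      show ?thesis using expand_contract_s[OF y(2)] expand_contract_a[OF y(2)] y(1)
        unfolding \<Phi>_def \<Psi>_def by simp
    qed
  qed
  have "(\<Sum>y\<in>Ycub n. wC \<omega> (6*n) y) = (\<Sum>xp\<in>T. wC \<omega> (6*n) (\<Phi> xp))"
    using sum.reindex_bij_betw[OF bij, of "wC \<omega> (6*n)"] by simp
  also have "\<dots> = (\<Sum>xp\<in>T. case xp of ((s, a, Out), p) \<Rightarrow> \<Prod>u\<in>Ustar n. if p u \<in> Out then \<omega> else inverse \<omega>)"
  proof (rule sum.cong[OF refl])
    fix xp assume "xp \<in> T"
    then obtain s a Out p where xp: "xp = ((s, a, Out), p)" "(s, a, Out) \<in> quartic_EO n" "p \<in> Valid n s Out"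
      unfolding T_def by auto
    have "wC \<omega> (6*n) (\<Phi> xp) = (\<Prod>u\<in>Ustar n. if expS n s p (expS n s p u) \<in> Out then \<omega> else inverse \<omega>)"
      using wC_prod[OF expand_Ycub[OF xp(2,3)] w] xp(1) unfolding \<Phi>_def by simp
    also have "\<dots> = (\<Prod>u\<in>Ustar n. if p u \<in> Out then \<omega> else inverse \<omega>)"
      using S_Su[OF xp(2,3)] by (intro prod.cong) auto
    finally show "wC \<omega> (6*n) (\<Phi> xp) = (case xp of ((s, a, Out), p) \<Rightarrow> \<Prod>u\<in>Ustar n. if p u \<in> Out then \<omega> else inverse \<omega>)"
      using xp(1) by simp
  qed
  also have "\<dots> = (\<Sum>x\<in>quartic_EO n. \<Sum>p\<in>(case x of (s, a, Out) \<Rightarrow> Valid n s Out).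
      case (x, p) of ((s, a, Out), p) \<Rightarrow> \<Prod>u\<in>Ustar n. if p u \<in> Out then \<omega> else inverse \<omega>)"
  proof -
    let ?F = "\<lambda>xp. case xp of ((s, a, Out :: nat set), p) \<Rightarrow> \<Prod>u\<in>Ustar n. if p u \<in> Out then \<omega> else inverse \<omega>"
    let ?B = "\<lambda>x. case x of (s, a, Out) \<Rightarrow> Valid n s Out"
    have "(\<Sum>x\<in>quartic_EO n. \<Sum>p\<in>?B x. ?F (x, p)) = (\<Sum>(x, p)\<in>Sigma (quartic_EO n) ?B. ?F (x, p))"
      by (rule sum.Sigma) (auto simp: finite_quartic finite_Valid split: prod.splits)
    then show ?thesis unfolding T_def case_prod_eta by simp
  qed
  also have "\<dots> = (\<Sum>x\<in>quartic_EO n. case x of (s, a, Out) \<Rightarrow>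
       \<Sum>p\<in>Valid n s Out. \<Prod>u\<in>Ustar n. if p u \<in> Out then \<omega> else inverse \<omega>)"
    by (intro sum.cong) (auto split: prod.splits)
  finally show ?thesis .
qed


definition VS :: "nat \<Rightarrow> (nat \<Rightarrow> nat) \<Rightarrow> nat set \<Rightarrow> nat set set" where
  "VS n s Out = {P. P \<subseteq> {..<4*n} \<and> (\<forall>d<4*n. d \<in> P \<longleftrightarrow> s d \<notin> P) \<and> (\<forall>d\<in>P. d \<in> Out \<longleftrightarrow> s (s (s d)) \<notin> Out)}"

definition Loc :: "(nat \<Rightarrow> nat) \<Rightarrow> nat set \<Rightarrow> nat set \<Rightarrow> nat set set" where
  "Loc s Out v = {B. B \<subseteq> v \<and> (\<forall>d\<in>v. d \<in> B \<longleftrightarrow> s d \<notin> B) \<and> (\<forall>d\<in>B. d \<in> Out \<longleftrightarrow> s (s (s d)) \<notin> Out)}"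

context
  fixes n s a Out assumes x: "(s, a, Out) \<in> quartic_EO n"
begin

lemma q_sp: "s permutes {..<4*n}"
  using quartic_EO_E(1)[OF x] unfolding is_planar_map_def is_map_conn by auto

lemma q_s4: "d < 4*n \<Longrightarrow> s (s (s (s d))) = d \<and> s d \<noteq> d \<and> s (s d) \<noteq> d \<and> s (s (s d)) \<noteq> d
     \<and> s (s d) \<noteq> s d \<and> s (s (s d)) \<noteq> s d \<and> s (s (s d)) \<noteq> s (s d)"
  using quartic_EO_E(2)[OF x] orbit4_iff[OF q_sp finite_lessThan] by blast

lemma q_slt: "s d < 4*n \<longleftrightarrow> d < 4*n" using permutes_in_image[OF q_sp] by simp

lemma q_orbit: "d < 4*n \<Longrightarrow> orbit s d = {d, s d, s (s d), s (s (s d))}"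
  using orbit4_set q_s4 by blast

lemma q_orbit_sub: "d < 4*n \<Longrightarrow> orbit s d \<subseteq> {..<4*n}"
  using orbit_subset[OF q_sp] by auto

lemma q_orbit_s: "d \<in> orbit s d0 \<Longrightarrow> s d \<in> orbit s d0"
  using orbit_trans0[of d s d0 "s d"] funpow_in_orbit[where f=s and k=1 and x=d] by auto

lemma q_Out_card: "d < 4*n \<Longrightarrow> card ({d, s d, s (s d), s (s (s d))} \<inter> Out) = 2"
  using quartic_EO_E(5)[OF x] q_orbit by auto

lemma local_sum:
  fixes \<omega> :: complex
  assumes w: "\<omega> \<noteq> 0" and d0: "d0 < 4*n"
  shows "(\<Sum>B\<in>Loc s Out (orbit s d0). \<Prod>d\<in>B. if d \<in> Out then \<omega> else inverse \<omega>) =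
     (if (\<forall>d\<in>orbit s d0. d \<in> Out \<longrightarrow> s (s d) \<in> Out) then \<omega>\<^sup>2 + inverse (\<omega>\<^sup>2) else 1)"
proof -
  define d1 where "d1 = s d0"
  define d2 where "d2 = s d1"
  define d3 where "d3 = s d2"
  have F: "s d3 = d0" "d0 \<noteq> d1" "d0 \<noteq> d2" "d0 \<noteq> d3" "d1 \<noteq> d2" "d1 \<noteq> d3" "d2 \<noteq> d3"
    using q_s4[OF d0] unfolding d1_def d2_def d3_def by auto
  have v: "orbit s d0 = {d0, d1, d2, d3}" using q_orbit[OF d0] unfolding d1_def d2_def d3_def by simp
  have cO: "card ({d0, d1, d2, d3} \<inter> Out) = 2"
    using q_Out_card[OF d0] unfolding d1_def d2_def d3_def by simp
  let ?g = "\<lambda>d. if d \<in> Out then \<omega> else inverse \<omega>"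
  define c02 where "c02 = ((d0 \<in> Out \<longleftrightarrow> d3 \<notin> Out) \<and> (d2 \<in> Out \<longleftrightarrow> d1 \<notin> Out))"
  define c13 where "c13 = ((d1 \<in> Out \<longleftrightarrow> d0 \<notin> Out) \<and> (d3 \<in> Out \<longleftrightarrow> d2 \<notin> Out))"
  have L: "Loc s Out (orbit s d0) = (if c02 then {{d0, d2}} else {}) \<union> (if c13 then {{d1, d3}} else {})"
  proof -
    have "B \<in> Loc s Out (orbit s d0) \<longleftrightarrow> (B = {d0, d2} \<and> c02) \<or> (B = {d1, d3} \<and> c13)" for B
    proof
      assume B: "B \<in> Loc s Out (orbit s d0)"
      then have sub: "B \<subseteq> {d0, d1, d2, d3}" and alt: "\<forall>d\<in>{d0, d1, d2, d3}. d \<in> B \<longleftrightarrow> s d \<notin> B"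
        and o: "\<forall>d\<in>B. d \<in> Out \<longleftrightarrow> s (s (s d)) \<notin> Out"
        unfolding Loc_def v by auto
      have a0: "d0 \<in> B \<longleftrightarrow> d1 \<notin> B" using alt d1_def by auto
      have a1: "d1 \<in> B \<longleftrightarrow> d2 \<notin> B" using alt d2_def by auto
      have a2: "d2 \<in> B \<longleftrightarrow> d3 \<notin> B" using alt d3_def by auto
      have s3: "s (s (s d0)) = d3" "s (s (s d1)) = d0" "s (s (s d2)) = d1" "s (s (s d3)) = d2"
        using F(1) d1_def d2_def d3_def by auto
      show "(B = {d0, d2} \<and> c02) \<or> (B = {d1, d3} \<and> c13)"
      proof (cases "d0 \<in> B")
        case True
        then have "B = {d0, d2}" using sub a0 a1 a2 by auto
        moreover have c02 using o True s3 \<open>B = {d0, d2}\<close> unfolding c02_def by auto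
        ultimately show ?thesis by simp
      next
        case False
        then have "B = {d1, d3}" using sub a0 a1 a2 by auto
        moreover have c13 using o s3 \<open>B = {d1, d3}\<close> unfolding c13_def by auto
        ultimately show ?thesis by simp
      qed
    next
      assume "(B = {d0, d2} \<and> c02) \<or> (B = {d1, d3} \<and> c13)"
      then show "B \<in> Loc s Out (orbit s d0)"
        unfolding Loc_def v c02_def c13_def using F d1_def d2_def d3_def by auto
    qed
    then show ?thesis by auto
  qed
  have ne: "{d0, d2} \<noteq> {d1, d3}" "{d1, d3} \<noteq> {d0, d2}" using F by auto
  have S: "(\<Sum>B\<in>Loc s Out (orbit s d0). \<Prod>d\<in>B. ?g d) =
      (if c02 then ?g d0 * ?g d2 else 0) + (if c13 then ?g d1 * ?g d3 else 0)"
  proof -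
    have p02: "(\<Prod>d\<in>{d0, d2}. ?g d) = ?g d0 * ?g d2" using F by simp
    have p13: "(\<Prod>d\<in>{d1, d3}. ?g d) = ?g d1 * ?g d3" using F by simp
    show ?thesis unfolding L by (cases c02; cases c13) (simp_all add: ne p02 p13 add.commute)
  qed
  have alt: "(\<forall>d\<in>orbit s d0. d \<in> Out \<longrightarrow> s (s d) \<in> Out) \<longleftrightarrow>
     ((d0 \<in> Out \<longleftrightarrow> d2 \<in> Out) \<and> (d1 \<in> Out \<longleftrightarrow> d3 \<in> Out))"
    unfolding v using F d1_def d2_def d3_def by auto
  have inv2: "inverse \<omega> * inverse \<omega> = inverse (\<omega>\<^sup>2)" by (simp add: power2_eq_square)
  have sq: "\<omega> * \<omega> = \<omega>\<^sup>2" by (simp add: power2_eq_square)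
  show ?thesis unfolding S alt
    using cO F w
    by (cases "d0 \<in> Out"; cases "d1 \<in> Out"; cases "d2 \<in> Out"; cases "d3 \<in> Out")
       (simp_all add: c02_def c13_def inv2 sq Int_insert_left card_insert_if)
qed


lemma Loc_card:
  assumes d0: "d0 < 4*n" and B: "B \<in> Loc s Out (orbit s d0)"
  shows "card B = 2"
proof -
  define d1 where "d1 = s d0"
  define d2 where "d2 = s d1"
  define d3 where "d3 = s d2"
  have F: "s d3 = d0" "d0 \<noteq> d1" "d0 \<noteq> d2" "d0 \<noteq> d3" "d1 \<noteq> d2" "d1 \<noteq> d3" "d2 \<noteq> d3"
    using q_s4[OF d0] unfolding d1_def d2_def d3_def by auto
  have v: "orbit s d0 = {d0, d1, d2, d3}" using q_orbit[OF d0] unfolding d1_def d2_def d3_def by simp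
  have sub: "B \<subseteq> {d0, d1, d2, d3}" and alt: "\<forall>d\<in>{d0, d1, d2, d3}. d \<in> B \<longleftrightarrow> s d \<notin> B"
    using B unfolding Loc_def v by auto
  have a0: "d0 \<in> B \<longleftrightarrow> d1 \<notin> B" using alt d1_def by auto
  have a1: "d1 \<in> B \<longleftrightarrow> d2 \<notin> B" using alt d2_def by auto
  have a2: "d2 \<in> B \<longleftrightarrow> d3 \<notin> B" using alt d3_def by auto
  have "B = {d0, d2} \<or> B = {d1, d3}"
    using sub a0 a1 a2 by (cases "d0 \<in> B") auto
  then show ?thesis using F by auto
qed

lemma V_facts:
  shows "finite (orbits s (4*n))"
    and "\<And>v. v \<in> orbits s (4*n) \<Longrightarrow> \<exists>d0<4*n. v = orbit s d0"
    and "\<And>v. v \<in> orbits s (4*n) \<Longrightarrow> v \<subseteq> {..<4*n}"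
    and "\<And>d. d < 4*n \<Longrightarrow> orbit s d \<in> orbits s (4*n)"
    and "\<And>v d. v \<in> orbits s (4*n) \<Longrightarrow> d \<in> v \<Longrightarrow> v = orbit s d"
    and "\<And>v d. v \<in> orbits s (4*n) \<Longrightarrow> d \<in> v \<Longrightarrow> s d \<in> v"
    and "card (orbits s (4*n)) = n"
proof -
  show "finite (orbits s (4*n))" unfolding orbits_def by simp
  show "\<And>v. v \<in> orbits s (4*n) \<Longrightarrow> \<exists>d0<4*n. v = orbit s d0" unfolding orbits_def by auto
  show "\<And>v. v \<in> orbits s (4*n) \<Longrightarrow> v \<subseteq> {..<4*n}" unfolding orbits_def using q_orbit_sub by auto
  show "\<And>d. d < 4*n \<Longrightarrow> orbit s d \<in> orbits s (4*n)" unfolding orbits_def by auto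
  show "\<And>v d. v \<in> orbits s (4*n) \<Longrightarrow> d \<in> v \<Longrightarrow> v = orbit s d"
    unfolding orbits_def using orbit_eq[OF q_sp finite_lessThan] by auto
  show "\<And>v d. v \<in> orbits s (4*n) \<Longrightarrow> d \<in> v \<Longrightarrow> s d \<in> v"
    unfolding orbits_def using q_orbit_s by auto
  show "card (orbits s (4*n)) = n"
    using card_orbits_k[OF q_sp, of 4] quartic_EO_E(2)[OF x] by auto
qed

lemma VS_sum:
  fixes \<omega> :: complex
  assumes w: "\<omega> \<noteq> 0"
  shows "(\<Sum>P\<in>VS n s Out. \<Prod>d\<in>P. if d \<in> Out then \<omega> else inverse \<omega>) =
    (\<omega>\<^sup>2 + inverse (\<omega>\<^sup>2)) ^ num_alternating (4*n) s Out"
proof -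
  let ?V = "orbits s (4*n)"
  let ?g = "\<lambda>d. if d \<in> Out then \<omega> else inverse \<omega>"
  let ?L = "Loc s Out"
  note VF = V_facts
  define \<Lambda> where "\<Lambda> h = \<Union>(h ` ?V)" for h :: "nat set \<Rightarrow> nat set"
  have claim: "e \<in> \<Lambda> h \<longleftrightarrow> e \<in> h v0" if h: "h \<in> PiE ?V ?L" and v0: "v0 \<in> ?V" and e: "e \<in> v0" for h v0 e
  proof
    assume "e \<in> \<Lambda> h"
    then obtain v where v: "v \<in> ?V" "e \<in> h v" unfolding \<Lambda>_def by auto
    then have "e \<in> v" using h unfolding Loc_def by auto
    then have "v = v0" using VF(5)[OF v(1)] VF(5)[OF v0 e] by simp
    then show "e \<in> h v0" using v by simp
  qed (use v0 in \<open>auto simp: \<Lambda>_def\<close>)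
  have bij: "bij_betw \<Lambda> (PiE ?V ?L) (VS n s Out)"
  proof (rule bij_betwI[where g = "\<lambda>P. restrict (\<lambda>v. P \<inter> v) ?V"])
    show "\<Lambda> \<in> PiE ?V ?L \<rightarrow> VS n s Out"
    proof
      fix h assume h: "h \<in> PiE ?V ?L"
      have hv: "h v \<in> ?L v" if "v \<in> ?V" for v using h that by auto
      show "\<Lambda> h \<in> VS n s Out" unfolding VS_def
      proof (intro CollectI conjI allI impI ballI)
        show "\<Lambda> h \<subseteq> {..<4*n}" using hv VF(3) unfolding \<Lambda>_def Loc_def by blast
      next
        fix d assume d: "d < 4*n"
        let ?v0 = "orbit s d"
        have v0: "?v0 \<in> ?V" using VF(4)[OF d] .
        have dv: "d \<in> ?v0" by (rule self_in_orbit)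
        have sdv: "s d \<in> ?v0" using VF(6)[OF v0 dv] .
        have "d \<in> h ?v0 \<longleftrightarrow> s d \<notin> h ?v0" using hv[OF v0] dv unfolding Loc_def by blast
        then show "d \<in> \<Lambda> h \<longleftrightarrow> s d \<notin> \<Lambda> h" using claim[OF h v0 dv] claim[OF h v0 sdv] by simp
      next
        fix d assume "d \<in> \<Lambda> h"
        then obtain v where v: "v \<in> ?V" "d \<in> h v" unfolding \<Lambda>_def by auto
        then show "d \<in> Out \<longleftrightarrow> s (s (s d)) \<notin> Out" using hv[OF v(1)] unfolding Loc_def by blast
      qed
    qed
    show "(\<lambda>P. restrict (\<lambda>v. P \<inter> v) ?V) \<in> VS n s Out \<rightarrow> PiE ?V ?L"
    proof
      fix P assume P: "P \<in> VS n s Out"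
      have "P \<inter> v \<in> ?L v" if v: "v \<in> ?V" for v
        unfolding Loc_def
      proof (intro CollectI conjI ballI)
        show "P \<inter> v \<subseteq> v" by auto
        fix d assume d: "d \<in> v"
        have d4: "d < 4*n" using VF(3)[OF v] d by auto
        have "s d \<in> v" using VF(6)[OF v d] .
        then show "d \<in> P \<inter> v \<longleftrightarrow> s d \<notin> P \<inter> v" using P d d4 unfolding VS_def by auto
      next
        fix d assume "d \<in> P \<inter> v"
        then show "d \<in> Out \<longleftrightarrow> s (s (s d)) \<notin> Out" using P unfolding VS_def by blast
      qed
      then show "restrict (\<lambda>v. P \<inter> v) ?V \<in> PiE ?V ?L" by auto
    qed
    show "restrict (\<lambda>v. \<Lambda> h \<inter> v) ?V = h" if h: "h \<in> PiE ?V ?L" for h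
    proof
      fix v show "restrict (\<lambda>v. \<Lambda> h \<inter> v) ?V v = h v"
      proof (cases "v \<in> ?V")
        case True
        have "h v \<subseteq> v" using h True unfolding Loc_def by auto
        then have "\<Lambda> h \<inter> v = h v" using claim[OF h True] by auto
        then show ?thesis using True by simp
      next
        case False then show ?thesis using h by auto
      qed
    qed
    show "\<Lambda> (restrict (\<lambda>v. P \<inter> v) ?V) = P" if P: "P \<in> VS n s Out" for P
    proof -
      have "\<Lambda> (restrict (\<lambda>v. P \<inter> v) ?V) = (\<Union>v\<in>?V. P \<inter> v)" unfolding \<Lambda>_def by auto
      also have "\<dots> = P"
      proof
        show "(\<Union>v\<in>?V. P \<inter> v) \<subseteq> P" by auto
        show "P \<subseteq> (\<Union>v\<in>?V. P \<inter> v)"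
        proof
          fix d assume "d \<in> P"
          then have "d < 4*n" using P unfolding VS_def by auto
          then show "d \<in> (\<Union>v\<in>?V. P \<inter> v)" using VF(4) self_in_orbit \<open>d \<in> P\<close> by blast
        qed
      qed
      finally show ?thesis .
    qed
  qed
  have finL: "finite (?L v)" if "v \<in> ?V" for v
  proof -
    have "?L v \<subseteq> Pow v" unfolding Loc_def by auto
    moreover have "finite v" using VF(3)[OF that] finite_subset by blast
    ultimately show ?thesis using finite_subset by blast
  qed
  have "(\<Sum>P\<in>VS n s Out. \<Prod>d\<in>P. ?g d) = (\<Sum>h\<in>PiE ?V ?L. \<Prod>d\<in>\<Lambda> h. ?g d)"
    using sum.reindex_bij_betw[OF bij, of "\<lambda>P. \<Prod>d\<in>P. ?g d"] by simp
  also have "\<dots> = (\<Sum>h\<in>PiE ?V ?L. \<Prod>v\<in>?V. \<Prod>d\<in>h v. ?g d)"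
  proof (rule sum.cong[OF refl])
    fix h assume h: "h \<in> PiE ?V ?L"
    have sub: "h v \<subseteq> v" if "v \<in> ?V" for v using h that unfolding Loc_def by auto
    show "(\<Prod>d\<in>\<Lambda> h. ?g d) = (\<Prod>v\<in>?V. \<Prod>d\<in>h v. ?g d)"
      unfolding \<Lambda>_def
    proof (rule prod.UNION_disjoint)
      show "finite ?V" by (rule VF(1))
      show "\<forall>v\<in>?V. finite (h v)" using sub VF(3) finite_subset by (metis finite_lessThan subset_trans)
      show "\<forall>v\<in>?V. \<forall>v'\<in>?V. v \<noteq> v' \<longrightarrow> h v \<inter> h v' = {}"
      proof (intro ballI impI)
        fix v v' assume vv: "v \<in> ?V" "v' \<in> ?V" "v \<noteq> v'"
        show "h v \<inter> h v' = {}"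
        proof (rule ccontr)
          assume "h v \<inter> h v' \<noteq> {}"
          then obtain d where "d \<in> h v" "d \<in> h v'" by auto
          then have "d \<in> v" "d \<in> v'" using sub vv by auto
          then show False using VF(5) vv by metis
        qed
      qed
    qed
  qed
  also have "\<dots> = (\<Prod>v\<in>?V. \<Sum>B\<in>?L v. \<Prod>d\<in>B. ?g d)"
    by (rule prod_sum_PiE[symmetric]) (use VF(1) finL in auto)
  also have "\<dots> = (\<Prod>v\<in>?V. if (\<forall>d\<in>v. d \<in> Out \<longrightarrow> s (s d) \<in> Out) then \<omega>\<^sup>2 + inverse (\<omega>\<^sup>2) else 1)"
  proof (rule prod.cong[OF refl])
    fix v assume v: "v \<in> ?V"
    then obtain d0 where d0: "d0 < 4*n" "v = orbit s d0" using VF(2) by blast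
    show "(\<Sum>B\<in>?L v. \<Prod>d\<in>B. ?g d) = (if (\<forall>d\<in>v. d \<in> Out \<longrightarrow> s (s d) \<in> Out) then \<omega>\<^sup>2 + inverse (\<omega>\<^sup>2) else 1)"
      using local_sum[OF w d0(1)] d0(2) by simp
  qed
  also have "\<dots> = (\<omega>\<^sup>2 + inverse (\<omega>\<^sup>2)) ^ card {v \<in> ?V. \<forall>d\<in>v. d \<in> Out \<longrightarrow> s (s d) \<in> Out}"
  proof -
    have e: "?V \<inter> {v. \<forall>d\<in>v. d \<in> Out \<longrightarrow> s (s d) \<in> Out} = {v \<in> ?V. \<forall>d\<in>v. d \<in> Out \<longrightarrow> s (s d) \<in> Out}" by auto
    show ?thesis by (subst prod.If_cases[OF VF(1)]) (simp add: e)
  qed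
  finally show ?thesis unfolding num_alternating_def .
qed

lemma VS_card: "P \<in> VS n s Out \<Longrightarrow> card P = 2 * n"
proof -
  assume P: "P \<in> VS n s Out"
  let ?V = "orbits s (4*n)"
  note VF = V_facts
  have PU: "P = (\<Union>v\<in>?V. P \<inter> v)"
  proof
    show "P \<subseteq> (\<Union>v\<in>?V. P \<inter> v)"
    proof
      fix d assume "d \<in> P"
      then have "d < 4*n" using P unfolding VS_def by auto
      then show "d \<in> (\<Union>v\<in>?V. P \<inter> v)" using VF(4) self_in_orbit \<open>d \<in> P\<close> by blast
    qed
  qed auto
  have loc: "P \<inter> v \<in> Loc s Out v" if v: "v \<in> ?V" for v
    unfolding Loc_def
  proof (intro CollectI conjI ballI)
    show "P \<inter> v \<subseteq> v" by auto
    fix d assume d: "d \<in> v"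
    have d4: "d < 4*n" using VF(3)[OF v] d by auto
    have "s d \<in> v" using VF(6)[OF v d] .
    then show "d \<in> P \<inter> v \<longleftrightarrow> s d \<notin> P \<inter> v" using P d d4 unfolding VS_def by auto
  next
    fix d assume "d \<in> P \<inter> v"
    then show "d \<in> Out \<longleftrightarrow> s (s (s d)) \<notin> Out" using P unfolding VS_def by blast
  qed
  have c2: "card (P \<inter> v) = 2" if v: "v \<in> ?V" for v
  proof -
    obtain d0 where d0: "d0 < 4*n" "v = orbit s d0" using VF(2)[OF v] by blast
    show ?thesis using Loc_card[OF d0(1)] loc[OF v] d0(2) by simp
  qed
  have "card P = (\<Sum>v\<in>?V. card (P \<inter> v))"
  proof -
    have "card (\<Union>v\<in>?V. P \<inter> v) = (\<Sum>v\<in>?V. card (P \<inter> v))"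
    proof (rule card_UN_disjoint)
      show "finite ?V" by (rule VF(1))
      show "\<forall>v\<in>?V. finite (P \<inter> v)" using VF(3) finite_subset by (metis finite_lessThan inf.coboundedI2)
      show "\<forall>v\<in>?V. \<forall>v'\<in>?V. v \<noteq> v' \<longrightarrow> (P \<inter> v) \<inter> (P \<inter> v') = {}"
      proof (intro ballI impI)
        fix v v' assume vv: "v \<in> ?V" "v' \<in> ?V" "v \<noteq> v'"
        show "(P \<inter> v) \<inter> (P \<inter> v') = {}"
        proof (rule ccontr)
          assume "(P \<inter> v) \<inter> (P \<inter> v') \<noteq> {}"
          then obtain d where "d \<in> v" "d \<in> v'" by auto
          then show False using VF(5) vv by metis
        qed
      qed
    qed
    then show ?thesis using PU by simp
  qed
  also have "\<dots> = 2 * n" using c2 VF(7) by simp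
  finally show ?thesis .
qed

end


lemma card_inj_funcset_fact:
  assumes "finite A" "finite B" "card A = card B"
  shows "card {f \<in> A \<rightarrow>\<^sub>E B. inj_on f A} = fact (card A)"
proof -
  have "card {f \<in> A \<rightarrow>\<^sub>E B. inj_on f A} = card B ^ (card A - card A) * prod ((-) (card B)) {0..<card A}"
    using card_inj_on_subset_funcset[OF assms(1,2) subset_refl] .
  also have "\<dots> = (\<Prod>i = 0..<card A. card A - i)" using assms(3) by simp
  also have "\<dots> = fact (card A)" using fact_prod_rev[of "card A", where 'a = nat] by simp
  finally show ?thesis .
qed

lemma Valid_sum:
  fixes \<omega> :: complex
  assumes x: "(s, a, Out) \<in> quartic_EO n" and w: "\<omega> \<noteq> 0"
  shows "(\<Sum>p\<in>Valid n s Out. \<Prod>u\<in>Ustar n. if p u \<in> Out then \<omega> else inverse \<omega>) =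
     of_nat (fact (2 * n)) * (\<omega>\<^sup>2 + inverse (\<omega>\<^sup>2)) ^ num_alternating (4*n) s Out"
proof -
  let ?U = "Ustar n"
  let ?g = "\<lambda>d. if d \<in> Out then \<omega> else inverse \<omega>"
  have finU: "finite ?U" and cU: "card ?U = 2 * n" unfolding Ustar_def by auto
  have finVS: "finite (VS n s Out)"
  proof -
    have "VS n s Out \<subseteq> Pow {..<4*n}" unfolding VS_def by auto
    then show ?thesis using finite_subset by blast
  qed
  have img: "(\<lambda>p. p ` ?U) ` Valid n s Out \<subseteq> VS n s Out"
  proof
    fix P assume "P \<in> (\<lambda>p. p ` ?U) ` Valid n s Out"
    then obtain p where p: "p \<in> Valid n s Out" "P = p ` ?U" by auto
    show "P \<in> VS n s Out" unfolding VS_def p(2)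
    proof (intro CollectI conjI allI impI ballI)
      show "p ` ?U \<subseteq> {..<4*n}" using p(1) unfolding Valid_def by auto
      fix d assume "d < 4*n"
      then show "d \<in> p ` ?U \<longleftrightarrow> s d \<notin> p ` ?U" using p(1) unfolding Valid_def by blast
    next
      fix d assume "d \<in> p ` ?U"
      then obtain u where "u \<in> ?U" "d = p u" by auto
      then show "d \<in> Out \<longleftrightarrow> s (s (s d)) \<notin> Out" using p(1) unfolding Valid_def by blast
    qed
  qed
  have fib: "{p \<in> Valid n s Out. p ` ?U = P} = {p \<in> ?U \<rightarrow>\<^sub>E P. inj_on p ?U}" if P: "P \<in> VS n s Out" for P
  proof
    show "{p \<in> Valid n s Out. p ` ?U = P} \<subseteq> {p \<in> ?U \<rightarrow>\<^sub>E P. inj_on p ?U}"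
      unfolding Valid_def by auto
    show "{p \<in> ?U \<rightarrow>\<^sub>E P. inj_on p ?U} \<subseteq> {p \<in> Valid n s Out. p ` ?U = P}"
    proof
      fix p assume "p \<in> {p \<in> ?U \<rightarrow>\<^sub>E P. inj_on p ?U}"
      then have p: "p \<in> ?U \<rightarrow>\<^sub>E P" "inj_on p ?U" by auto
      have sub: "p ` ?U \<subseteq> P" using p(1) by auto
      have "card (p ` ?U) = card P" using card_image[OF p(2)] cU VS_card[OF x P] by simp
      moreover have "finite P" using P finite_subset unfolding VS_def by auto
      ultimately have eq: "p ` ?U = P" using card_subset_eq[OF _ sub] by blast
      have PV: "P \<subseteq> {..<4*n}" "\<forall>d<4*n. d \<in> P \<longleftrightarrow> s d \<notin> P" "\<forall>d\<in>P. d \<in> Out \<longleftrightarrow> s (s (s d)) \<notin> Out"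
        using P unfolding VS_def by auto
      have "p \<in> Valid n s Out" unfolding Valid_def
      proof (intro CollectI conjI ballI allI impI)
        show "p \<in> ?U \<rightarrow>\<^sub>E {..<4*n}" using p(1) PV(1) by auto
        show "inj_on p ?U" by (rule p(2))
        fix d assume "d < 4*n" then show "d \<in> p ` ?U \<longleftrightarrow> s d \<notin> p ` ?U" using PV(2) eq by simp
      next
        fix u assume "u \<in> ?U"
        then have "p u \<in> P" using eq by auto
        then show "p u \<in> Out \<longleftrightarrow> s (s (s (p u))) \<notin> Out" using PV(3) by blast
      qed
      then show "p \<in> {p \<in> Valid n s Out. p ` ?U = P}" using eq by simp
    qed
  qed
  have "(\<Sum>p\<in>Valid n s Out. \<Prod>u\<in>?U. ?g (p u)) =
      (\<Sum>P\<in>VS n s Out. \<Sum>p\<in>{p \<in> Valid n s Out. p ` ?U = P}. \<Prod>u\<in>?U. ?g (p u))"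
    using sum.group[OF finite_Valid finVS img, of "\<lambda>p. \<Prod>u\<in>?U. ?g (p u)"] by simp
  also have "\<dots> = (\<Sum>P\<in>VS n s Out. of_nat (fact (2 * n)) * (\<Prod>d\<in>P. ?g d))"
  proof (rule sum.cong[OF refl])
    fix P assume P: "P \<in> VS n s Out"
    have finP: "finite P" using P finite_subset unfolding VS_def by auto
    have cP: "card P = 2 * n" using VS_card[OF x P] .
    have "(\<Sum>p\<in>{p \<in> Valid n s Out. p ` ?U = P}. \<Prod>u\<in>?U. ?g (p u)) =
        (\<Sum>p\<in>{p \<in> ?U \<rightarrow>\<^sub>E P. inj_on p ?U}. \<Prod>d\<in>P. ?g d)"
    proof (rule sum.cong)
      show "{p \<in> Valid n s Out. p ` ?U = P} = {p \<in> ?U \<rightarrow>\<^sub>E P. inj_on p ?U}" by (rule fib[OF P])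
      fix p assume "p \<in> {p \<in> ?U \<rightarrow>\<^sub>E P. inj_on p ?U}"
      then have p: "p ` ?U = P" "inj_on p ?U" using fib[OF P] by auto
      show "(\<Prod>u\<in>?U. ?g (p u)) = (\<Prod>d\<in>P. ?g d)"
        using prod.reindex[OF p(2), of ?g] p(1) by simp
    qed
    also have "\<dots> = of_nat (card {p \<in> ?U \<rightarrow>\<^sub>E P. inj_on p ?U}) * (\<Prod>d\<in>P. ?g d)" by simp
    also have "card {p \<in> ?U \<rightarrow>\<^sub>E P. inj_on p ?U} = fact (2 * n)"
      using card_inj_funcset_fact[OF finU finP] cU cP by simp
    finally show "(\<Sum>p\<in>{p \<in> Valid n s Out. p ` ?U = P}. \<Prod>u\<in>?U. ?g (p u)) =
        of_nat (fact (2 * n)) * (\<Prod>d\<in>P. ?g d)" by simp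
  qed
  also have "\<dots> = of_nat (fact (2 * n)) * (\<Sum>P\<in>VS n s Out. \<Prod>d\<in>P. ?g d)"
    by (simp add: sum_distrib_left)
  also have "\<dots> = of_nat (fact (2 * n)) * (\<omega>\<^sup>2 + inverse (\<omega>\<^sup>2)) ^ num_alternating (4*n) s Out"
    using VS_sum[OF x w] by simp
  finally show ?thesis .
qed

theorem coeff_eq:
  fixes \<omega> :: complex
  assumes w: "\<omega> \<noteq> 0"
  shows "Q_coeff n (\<omega>\<^sup>2 + inverse (\<omega>\<^sup>2)) = C_coeff n \<omega>"
proof (cases "n = 0")
  case True
  have "quartic_EO 0 = {}" unfolding quartic_EO_def by auto
  moreover have "cubic_PO 0 = {}" unfolding cubic_PO_def by auto
  ultimately show ?thesis using True unfolding Q_coeff_def C_coeff_def by simp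
next
  case False
  then have n: "0 < n" by simp
  let ?\<gamma> = "\<omega>\<^sup>2 + inverse (\<omega>\<^sup>2)"
  have "of_nat (fact (2 * n) * fact (4 * n - 1)) * C_coeff n \<omega> = (\<Sum>y\<in>Ycub n. wC \<omega> (6 * n) y)"
    by (rule C_coeff_sum[OF n])
  also have "\<dots> = (\<Sum>x\<in>quartic_EO n. case x of (s, a, Out) \<Rightarrow>
       \<Sum>p\<in>Valid n s Out. \<Prod>u\<in>Ustar n. if p u \<in> Out then \<omega> else inverse \<omega>)"
    by (rule sum_Ycub[OF w])
  also have "\<dots> = (\<Sum>x\<in>quartic_EO n. of_nat (fact (2 * n)) * wQ ?\<gamma> (4 * n) x)"
  proof (rule sum.cong[OF refl])
    fix x assume x: "x \<in> quartic_EO n"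
    obtain s a Out where xe: "x = (s, a, Out)" by (cases x)
    show "(case x of (s, a, Out) \<Rightarrow> \<Sum>p\<in>Valid n s Out. \<Prod>u\<in>Ustar n. if p u \<in> Out then \<omega> else inverse \<omega>) =
        of_nat (fact (2 * n)) * wQ ?\<gamma> (4 * n) x"
      using Valid_sum[OF x[unfolded xe] w] xe by (simp add: wQ_def)
  qed
  also have "\<dots> = of_nat (fact (2 * n)) * (of_nat (fact (4 * n - 1)) * Q_coeff n ?\<gamma>)"
    using Q_coeff_sum[OF n, of ?\<gamma>] by (simp add: sum_distrib_left)
  finally have "of_nat (fact (2 * n) * fact (4 * n - 1)) * C_coeff n \<omega> =
      of_nat (fact (2 * n) * fact (4 * n - 1)) * Q_coeff n ?\<gamma>" by (simp add: mult.assoc)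
  moreover have "of_nat (fact (2 * n) * fact (4 * n - 1)) \<noteq> (0::complex)"
    by (simp add: fact_nonzero)
  ultimately show ?thesis by simp
qed

theorem mainTheorem2:
  fixes \<omega> :: complex
  assumes "\<omega> \<noteq> 0"
  shows "Q_gf (\<omega>\<^sup>2 + inverse (\<omega>\<^sup>2)) = C_gf \<omega>"
  unfolding Q_gf_def C_gf_def using coeff_eq[OF assms] by simp


end
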